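(* Let $G$ be a finitely generated sofic group, $\mathcal A$ a finite set, and let $\mathcal P(\mathcal A^G)$ and $\mathcal P_e(\mathcal A^G)$ denote the sets of periodic, respectively periodic ergodic, measures in $\mathrm{Prob}(\mathcal A^G,G)$. Let $\pi:G\to Q$ be a surjective group homomorphism and $\Phi^\pi:\mathcal A^Q\to\mathcal A^G$, $\Phi^\pi(\omega)=\omega\circ\pi$. (i) If $Q$ is PA, then $\Phi^\pi_*(\mathrm{Prob}(\mathcal A^Q,Q))\subseteq\overline{\mathcal P(\mathcal A^G)}$ (weak* closure); in particular every $G$-process $(G,\mathcal A,\mu)$ with $\mu\in\Phi^\pi_*(\mathrm{Prob}(\mathcal A^Q,Q))$ admits a sofic model. (ii) If $Q$ is EPA, then $\Phi^\pi_*(\mathrm{Prob}(\mathcal A^Q,Q))\subseteq\overline{\mathcal P_e(\mathcal A^G)}$; in particular every such $G$-process admits an ergodically sofic model. If moreover $\ker\pi=R(G)$ (so $Q\cong G/R(G)$), then the inclusions in (i) and (ii) are equalities.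
   Context: $G$ acts on $\mathcal A^G$ (product of discrete spaces) by $(h.\omega)(g)=\omega(gh)$; $\mathrm{Prob}(\mathcal A^G,G)$ is the set of $G$-invariant Borel probability measures; a measure is ergodic if invariant sets have measure 0 or 1, and periodic if it is invariant with finite support. A group $Q$ is PA (resp. EPA) if for every finite set $\mathcal A$, the periodic (resp. periodic ergodic) measures are weak* dense in $\mathrm{Prob}(\mathcal A^Q,Q)$. $R(G)$ is the intersection of all finite-index normal subgroups of $G$. Sofic setting: $G$ has fixed finite symmetric generating set $S$; a sofic approximation is $(V_n,\sigma_n)$ with $V_n$ finite, $\sigma_n:G\to\mathrm{Sym}(V_n)$, $|\{v:\sigma_n^g\sigma_n^h(v)=\sigma_n^{gh}(v)\}|/|V_n|\to1$ for all $g,h$, $|\{v:\sigma_n^g(v)\ne v\}|/|V_n|\to1$ for $g\ne e$. For $\rho\in\mathcal A^{V_n}$, $\Pi^{\sigma_n}_v(\rho)=(\rho(\sigma_n^g(v)))_{g}$, $P_\rho^{\sigma_n}=\frac1{|V_n|}\sum_v\delta_{\Pi_v^{\sigma_n}(\rho)}$. $(V_n,\sigma_n,\mu_n)$, $\mu_n\in\mathrm{Prob}(\mathcal A^{V_n})$, is a sofic model for $(G,\mathcal A,\mu)$ if for every weak* neighbourhood $\mathcal O$ of $\mu$, $|\{v:(\Pi_v^{\sigma_n})_*\mu_n\in\mathcal O\}|/|V_n|\to1$; it is an ergodically sofic model if in addition $\mu_n(\{\rho:P_\rho^{\sigma_n}\in\mathcal O\})\to1$ for every such $\mathcal O$. 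*)

theory Defs
  imports "HOL-Probability.Probability" "HOL-Algebra.Algebra"
begin

text \<open>A^G as a measurable space: product sigma algebra of discrete spaces (for a
countable group G this coincides with the Borel sigma algebra of the product topology).\<close>
definition shift_space :: "('g, 'b) monoid_scheme \<Rightarrow> 'a set \<Rightarrow> ('g \<Rightarrow> 'a) measure" where
  "shift_space G A = PiM (carrier G) (\<lambda>_. count_space A)"

definition shift_top :: "('g, 'b) monoid_scheme \<Rightarrow> 'a set \<Rightarrow> ('g \<Rightarrow> 'a) topology" where
  "shift_top G A = product_topology (\<lambda>_. discrete_topology A) (carrier G)"

definition shift :: "('g, 'b) monoid_scheme \<Rightarrow> 'g \<Rightarrow> ('g \<Rightarrow> 'a) \<Rightarrow> ('g \<Rightarrow> 'a)" where
  "shift G h \<omega> = (\<lambda>g\<in>carrier G. \<omega> (g \<otimes>\<^bsub>G\<^esub> h))"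

definition Prob_meas :: "('g, 'b) monoid_scheme \<Rightarrow> 'a set \<Rightarrow> ('g \<Rightarrow> 'a) measure set" where
  "Prob_meas G A = {\<mu>. prob_space \<mu> \<and> sets \<mu> = sets (shift_space G A)}"

definition InvProb :: "('g, 'b) monoid_scheme \<Rightarrow> 'a set \<Rightarrow> ('g \<Rightarrow> 'a) measure set" where
  "InvProb G A = {\<mu> \<in> Prob_meas G A.
     \<forall>h\<in>carrier G. distr \<mu> (shift_space G A) (shift G h) = \<mu>}"

definition msupport :: "('g, 'b) monoid_scheme \<Rightarrow> 'a set \<Rightarrow> ('g \<Rightarrow> 'a) measure \<Rightarrow> ('g \<Rightarrow> 'a) set" where
  "msupport G A \<mu> = {\<omega> \<in> topspace (shift_top G A).
     \<forall>U. openin (shift_top G A) U \<and> \<omega> \<in> U \<longrightarrow> emeasure \<mu> U > 0}"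

definition periodic_meas :: "('g, 'b) monoid_scheme \<Rightarrow> 'a set \<Rightarrow> ('g \<Rightarrow> 'a) measure set" where
  "periodic_meas G A = {\<mu> \<in> InvProb G A. finite (msupport G A \<mu>)}"

definition ergodic_meas :: "('g, 'b) monoid_scheme \<Rightarrow> 'a set \<Rightarrow> ('g \<Rightarrow> 'a) measure set" where
  "ergodic_meas G A = {\<mu> \<in> InvProb G A.
     \<forall>B\<in>sets \<mu>. (\<forall>h\<in>carrier G. {\<omega> \<in> space \<mu>. shift G h \<omega> \<in> B} = B)
        \<longrightarrow> measure \<mu> B = 0 \<or> measure \<mu> B = 1}"

definition wstar_basic ::
  "('g, 'b) monoid_scheme \<Rightarrow> 'a set \<Rightarrow> ('g \<Rightarrow> 'a) measure \<Rightarrow> (('g \<Rightarrow> 'a) \<Rightarrow> real) set \<Rightarrow> real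
     \<Rightarrow> ('g \<Rightarrow> 'a) measure set" where
  "wstar_basic G A \<mu> F \<epsilon> = {\<nu> \<in> Prob_meas G A.
     \<forall>f\<in>F. \<bar>integral\<^sup>L \<nu> f - integral\<^sup>L \<mu> f\<bar> < \<epsilon>}"

definition wstar_nbhd ::
  "('g, 'b) monoid_scheme \<Rightarrow> 'a set \<Rightarrow> ('g \<Rightarrow> 'a) measure \<Rightarrow> ('g \<Rightarrow> 'a) measure set \<Rightarrow> bool" where
  "wstar_nbhd G A \<mu> U \<longleftrightarrow> (\<exists>F \<epsilon>. finite F \<and> \<epsilon> > 0 \<and>
     (\<forall>f\<in>F. continuous_map (shift_top G A) euclideanreal f) \<and>
     wstar_basic G A \<mu> F \<epsilon> \<subseteq> U)"

definition wstar_closure ::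
  "('g, 'b) monoid_scheme \<Rightarrow> 'a set \<Rightarrow> ('g \<Rightarrow> 'a) measure set \<Rightarrow> ('g \<Rightarrow> 'a) measure set" where
  "wstar_closure G A S = {\<mu> \<in> Prob_meas G A. \<forall>U. wstar_nbhd G A \<mu> U \<longrightarrow> U \<inter> S \<noteq> {}}"

text \<open>Finite alphabets are taken as finite sets of naturals (every finite set is in
bijection with one of these).\<close>
definition PA :: "('q, 'b) monoid_scheme \<Rightarrow> bool" where
  "PA Q \<longleftrightarrow> (\<forall>A :: nat set. finite A \<longrightarrow>
     InvProb Q A \<subseteq> wstar_closure Q A (periodic_meas Q A))"

definition EPA :: "('q, 'b) monoid_scheme \<Rightarrow> bool" where
  "EPA Q \<longleftrightarrow> (\<forall>A :: nat set. finite A \<longrightarrow>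
     InvProb Q A \<subseteq> wstar_closure Q A (periodic_meas Q A \<inter> ergodic_meas Q A))"

definition residual :: "('g, 'b) monoid_scheme \<Rightarrow> 'g set" where
  "residual G = carrier G \<inter> \<Inter>{N. normal N G \<and> finite (rcosets\<^bsub>G\<^esub> N)}"

definition fin_gen :: "('g, 'b) monoid_scheme \<Rightarrow> bool" where
  "fin_gen G \<longleftrightarrow> (\<exists>S. finite S \<and> S \<subseteq> carrier G \<and> generate G S = carrier G)"

definition sofic_approx ::
  "('g, 'b) monoid_scheme \<Rightarrow> (nat \<Rightarrow> nat set) \<Rightarrow> (nat \<Rightarrow> 'g \<Rightarrow> nat \<Rightarrow> nat) \<Rightarrow> bool" where
  "sofic_approx G V \<sigma> \<longleftrightarrow>
     (\<forall>n. finite (V n) \<and> (\<forall>g\<in>carrier G. bij_betw (\<sigma> n g) (V n) (V n))) \<and>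
     (\<forall>g\<in>carrier G. \<forall>h\<in>carrier G.
        (\<lambda>n. real (card {v \<in> V n. \<sigma> n g (\<sigma> n h v) = \<sigma> n (g \<otimes>\<^bsub>G\<^esub> h) v}) / real (card (V n)))
          \<longlonglongrightarrow> 1) \<and>
     (\<forall>g\<in>carrier G. g \<noteq> \<one>\<^bsub>G\<^esub> \<longrightarrow>
        (\<lambda>n. real (card {v \<in> V n. \<sigma> n g v \<noteq> v}) / real (card (V n))) \<longlonglongrightarrow> 1)"

definition sofic :: "('g, 'b) monoid_scheme \<Rightarrow> bool" where
  "sofic G \<longleftrightarrow> (\<exists>V \<sigma>. sofic_approx G V \<sigma>)"

definition Pi_at :: "('g, 'b) monoid_scheme \<Rightarrow> ('g \<Rightarrow> nat \<Rightarrow> nat) \<Rightarrow> nat \<Rightarrow> (nat \<Rightarrow> 'a) \<Rightarrow> ('g \<Rightarrow> 'a)" where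
  "Pi_at G s v \<rho> = (\<lambda>g\<in>carrier G. \<rho> (s g v))"

definition empirical ::
  "('g, 'b) monoid_scheme \<Rightarrow> 'a set \<Rightarrow> nat set \<Rightarrow> ('g \<Rightarrow> nat \<Rightarrow> nat) \<Rightarrow> (nat \<Rightarrow> 'a) \<Rightarrow> ('g \<Rightarrow> 'a) measure" where
  "empirical G A W s \<rho> = distr (uniform_measure (count_space W) W) (shift_space G A) (\<lambda>v. Pi_at G s v \<rho>)"

definition sofic_model ::
  "('g, 'b) monoid_scheme \<Rightarrow> 'a set \<Rightarrow> (nat \<Rightarrow> nat set) \<Rightarrow> (nat \<Rightarrow> 'g \<Rightarrow> nat \<Rightarrow> nat)
     \<Rightarrow> (nat \<Rightarrow> (nat \<Rightarrow> 'a) measure) \<Rightarrow> ('g \<Rightarrow> 'a) measure \<Rightarrow> bool" where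
  "sofic_model G A V \<sigma> M \<mu> \<longleftrightarrow> sofic_approx G V \<sigma> \<and>
     (\<forall>n. prob_space (M n) \<and> sets (M n) = sets (PiM (V n) (\<lambda>_. count_space A))) \<and>
     (\<forall>U. wstar_nbhd G A \<mu> U \<longrightarrow>
        (\<lambda>n. real (card {v \<in> V n. distr (M n) (shift_space G A) (Pi_at G (\<sigma> n) v) \<in> U})
               / real (card (V n))) \<longlonglongrightarrow> 1)"

definition ergodic_sofic_model ::
  "('g, 'b) monoid_scheme \<Rightarrow> 'a set \<Rightarrow> (nat \<Rightarrow> nat set) \<Rightarrow> (nat \<Rightarrow> 'g \<Rightarrow> nat \<Rightarrow> nat)
     \<Rightarrow> (nat \<Rightarrow> (nat \<Rightarrow> 'a) measure) \<Rightarrow> ('g \<Rightarrow> 'a) measure \<Rightarrow> bool" where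
  "ergodic_sofic_model G A V \<sigma> M \<mu> \<longleftrightarrow> sofic_model G A V \<sigma> M \<mu> \<and>
     (\<forall>U. wstar_nbhd G A \<mu> U \<longrightarrow>
        (\<lambda>n. measure (M n) {\<rho> \<in> space (M n). empirical G A (V n) (\<sigma> n) \<rho> \<in> U}) \<longlonglongrightarrow> 1)"

definition has_sofic_model :: "('g, 'b) monoid_scheme \<Rightarrow> 'a set \<Rightarrow> ('g \<Rightarrow> 'a) measure \<Rightarrow> bool" where
  "has_sofic_model G A \<mu> \<longleftrightarrow> (\<exists>V \<sigma> M. sofic_model G A V \<sigma> M \<mu>)"

definition has_ergodic_sofic_model :: "('g, 'b) monoid_scheme \<Rightarrow> 'a set \<Rightarrow> ('g \<Rightarrow> 'a) measure \<Rightarrow> bool" where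
  "has_ergodic_sofic_model G A \<mu> \<longleftrightarrow> (\<exists>V \<sigma> M. ergodic_sofic_model G A V \<sigma> M \<mu>)"

definition Phi :: "('g, 'b) monoid_scheme \<Rightarrow> ('g \<Rightarrow> 'q) \<Rightarrow> ('q \<Rightarrow> 'a) \<Rightarrow> ('g \<Rightarrow> 'a)" where
  "Phi G \<pi> \<omega> = (\<lambda>g\<in>carrier G. \<omega> (\<pi> g))"

definition Phi_push ::
  "('g, 'b) monoid_scheme \<Rightarrow> 'a set \<Rightarrow> ('g \<Rightarrow> 'q) \<Rightarrow> ('q \<Rightarrow> 'a) measure \<Rightarrow> ('g \<Rightarrow> 'a) measure" where
  "Phi_push G A \<pi> \<mu> = distr \<mu> (shift_space G A) (Phi G \<pi>)"

end

theory Submission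
  imports Defs
begin


definition cyl :: "('g,'b) monoid_scheme \<Rightarrow> 'a set \<Rightarrow> 'g set \<Rightarrow> ('g \<Rightarrow> 'a) \<Rightarrow> ('g \<Rightarrow> 'a) set" where
  "cyl G A J y = {\<omega> \<in> PiE (carrier G) (\<lambda>_. A). \<forall>j\<in>J. \<omega> j = y j}"

definition dep :: "('g,'b) monoid_scheme \<Rightarrow> 'a set \<Rightarrow> 'g set \<Rightarrow> (('g \<Rightarrow> 'a) \<Rightarrow> 'c) \<Rightarrow> bool" where
  "dep G A J f \<longleftrightarrow> (\<forall>\<omega>\<in>PiE (carrier G) (\<lambda>_. A). \<forall>\<omega>'\<in>PiE (carrier G) (\<lambda>_. A).
      (\<forall>j\<in>J. \<omega> j = \<omega>' j) \<longrightarrow> f \<omega> = f \<omega>')"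

lemma space_shift[simp]: "space (shift_space G A) = PiE (carrier G) (\<lambda>_. A)"
  by (simp add: shift_space_def space_PiM)

lemma topspace_shift[simp]: "topspace (shift_top G A) = PiE (carrier G) (\<lambda>_. A)"
  by (simp add: shift_top_def topspace_product_topology)

lemma cyl_subset: "cyl G A J y \<subseteq> PiE (carrier G) (\<lambda>_. A)"
  by (auto simp: cyl_def)

lemma coord_sets:
  assumes "j \<in> carrier G"
  shows "{\<omega> \<in> PiE (carrier G) (\<lambda>_. A). \<omega> j = c} \<in> sets (shift_space G A)"
proof -
  have m: "(\<lambda>\<omega>. \<omega> j) \<in> measurable (shift_space G A) (count_space A)"
    unfolding shift_space_def using assms by (rule measurable_component_singleton)
  have "(\<lambda>\<omega>. \<omega> j) -` ({c} \<inter> A) \<inter> space (shift_space G A) \<in> sets (shift_space G A)"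
    by (rule measurable_sets[OF m]) auto
  moreover have "(\<lambda>\<omega>. \<omega> j) -` ({c} \<inter> A) \<inter> space (shift_space G A)
       = {\<omega> \<in> PiE (carrier G) (\<lambda>_. A). \<omega> j = c}"
    using assms by auto
  ultimately show ?thesis by simp
qed

lemma cyl_sets:
  assumes "countable J" "J \<subseteq> carrier G"
  shows "cyl G A J y \<in> sets (shift_space G A)"
proof (cases "J = {}")
  case True
  then have "cyl G A J y = space (shift_space G A)" by (auto simp: cyl_def)
  then show ?thesis by (metis sets.top)
next
  case False
  have "cyl G A J y = (\<Inter>j\<in>J. {\<omega> \<in> PiE (carrier G) (\<lambda>_. A). \<omega> j = y j})"
    using False by (auto simp: cyl_def)
  also have "\<dots> \<in> sets (shift_space G A)"
    using assms False by (intro sets.countable_INT') (force intro: coord_sets)+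
  finally show ?thesis .
qed

lemma open_by_dep:
  assumes "finite J" "J \<subseteq> carrier G" "S \<subseteq> PiE (carrier G) (\<lambda>_. A)"
    and "\<And>\<omega> \<omega>'. \<omega> \<in> S \<Longrightarrow> \<omega>' \<in> PiE (carrier G) (\<lambda>_. A) \<Longrightarrow> (\<forall>j\<in>J. \<omega> j = \<omega>' j) \<Longrightarrow> \<omega>' \<in> S"
  shows "openin (shift_top G A) S"
  unfolding shift_top_def openin_product_topology_alt
proof
  fix x assume x: "x \<in> S"
  then have xA: "x \<in> PiE (carrier G) (\<lambda>_. A)" using assms(3) by auto
  define U where "U = (\<lambda>i. if i \<in> J then {x i} else A)"
  have "finite {i \<in> carrier G. U i \<noteq> topspace (discrete_topology A)}"
    by (rule finite_subset[OF _ assms(1)]) (auto simp: U_def)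
  moreover have "\<forall>i\<in>carrier G. openin (discrete_topology A) (U i)"
    using xA by (auto simp: U_def openin_discrete_topology)
  moreover have "x \<in> PiE (carrier G) U" using xA by (auto simp: U_def PiE_iff)
  moreover have "PiE (carrier G) U \<subseteq> S"
  proof
    fix \<omega> assume w: "\<omega> \<in> PiE (carrier G) U"
    have wA: "\<omega> \<in> PiE (carrier G) (\<lambda>_. A)"
      using w xA assms(2) by (auto simp: U_def PiE_iff split: if_splits)
    have "\<forall>j\<in>J. x j = \<omega> j"
    proof
      fix j assume j: "j \<in> J"
      then have "\<omega> j \<in> U j" using w assms(2) by (auto simp: PiE_iff)
      then show "x j = \<omega> j" using j by (simp add: U_def)
    qed
    then show "\<omega> \<in> S" using assms(4)[OF x wA] by auto
  qed
  ultimately show "\<exists>U. finite {i \<in> carrier G. U i \<noteq> topspace (discrete_topology A)} \<and>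
            (\<forall>i\<in>carrier G. openin (discrete_topology A) (U i)) \<and> x \<in> PiE (carrier G) U \<and> PiE (carrier G) U \<subseteq> S"
    by blast
qed

lemma openin_cyl:
  assumes "finite J" "J \<subseteq> carrier G"
  shows "openin (shift_top G A) (cyl G A J y)"
  by (rule open_by_dep[OF assms]) (auto simp: cyl_def)

lemma dep_continuous:
  assumes "finite J" "J \<subseteq> carrier G" "dep G A J f"
  shows "continuous_map (shift_top G A) euclideanreal f"
  unfolding continuous_map_def
proof (intro conjI allI impI)
  show "f \<in> topspace (shift_top G A) \<rightarrow> topspace euclideanreal" by simp
  fix U :: "real set"
  show "openin (shift_top G A) {x \<in> topspace (shift_top G A). f x \<in> U}"
  proof (rule open_by_dep[OF assms(1,2)])
    fix \<omega> \<omega>' assume a: "\<omega> \<in> {x \<in> topspace (shift_top G A). f x \<in> U}"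
      "\<omega>' \<in> PiE (carrier G) (\<lambda>_. A)" "\<forall>j\<in>J. \<omega> j = \<omega>' j"
    have w: "\<omega> \<in> PiE (carrier G) (\<lambda>_. A)" using a(1) by simp
    have "f \<omega> = f \<omega>'" using assms(3) w a(2) a(3) unfolding dep_def by blast
    then show "\<omega>' \<in> {x \<in> topspace (shift_top G A). f x \<in> U}" using a by simp
  qed (rule Collect_subset[THEN subset_trans], simp)
qed

lemma cyl_inside_open:
  assumes "openin (shift_top G A) U" "x \<in> U"
  shows "\<exists>K. finite K \<and> K \<subseteq> carrier G \<and> cyl G A K x \<subseteq> U"
proof -
  from assms obtain V where V: "finite {i \<in> carrier G. V i \<noteq> topspace (discrete_topology A)}"
    "\<forall>i\<in>carrier G. openin (discrete_topology A) (V i)" "x \<in> PiE (carrier G) V" "PiE (carrier G) V \<subseteq> U"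
    unfolding shift_top_def openin_product_topology_alt by blast
  define K where "K = {i \<in> carrier G. V i \<noteq> A}"
  have "cyl G A K x \<subseteq> PiE (carrier G) V"
  proof
    fix \<omega> assume w: "\<omega> \<in> cyl G A K x"
    show "\<omega> \<in> PiE (carrier G) V"
    proof (rule PiE_I)
      fix i assume i: "i \<in> carrier G"
      show "\<omega> i \<in> V i"
      proof (cases "i \<in> K")
        case True then show ?thesis using w V(3) i by (auto simp: cyl_def PiE_iff)
      next
        case False then show ?thesis using w i by (auto simp: cyl_def K_def PiE_iff)
      qed
    next
      fix i assume "i \<notin> carrier G" then show "\<omega> i = undefined" using w by (auto simp: cyl_def PiE_iff extensional_def)
    qed
  qed
  then show ?thesis using V by (intro exI[of _ K]) (auto simp: K_def)
qed

definition CY :: "('g,'b) monoid_scheme \<Rightarrow> 'a set \<Rightarrow> ('g \<Rightarrow> 'a) set set" where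
  "CY G A = (\<lambda>(K,y). cyl G A K y) ` (SIGMA K:{K. finite K \<and> K \<subseteq> carrier G}. PiE K (\<lambda>_. A))"

lemma countable_CY:
  assumes "countable (carrier G)" "countable A"
  shows "countable (CY G A)"
  unfolding CY_def
  using assms by (intro countable_image countable_SIGMA countable_Collect_finite_subset countable_PiE) auto

lemma cyl_in_CY:
  assumes "finite K" "K \<subseteq> carrier G" "x \<in> PiE (carrier G) (\<lambda>_. A)"
  shows "cyl G A K x \<in> CY G A"
proof -
  have "cyl G A K x = cyl G A K (restrict x K)" by (auto simp: cyl_def)
  moreover have "restrict x K \<in> PiE K (\<lambda>_. A)" using assms by auto
  ultimately show ?thesis using assms unfolding CY_def
    by (intro image_eqI[where x="(K, restrict x K)"]) auto
qed

lemma CY_sets: "C \<in> CY G A \<Longrightarrow> C \<in> sets (shift_space G A)"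
  unfolding CY_def by (auto intro!: cyl_sets countable_finite)

lemma open_sets:
  assumes "countable (carrier G)" "countable A" "openin (shift_top G A) U"
  shows "U \<in> sets (shift_space G A)"
proof -
  define F where "F = {C \<in> CY G A. C \<subseteq> U}"
  have "U = \<Union>F"
  proof
    show "U \<subseteq> \<Union>F"
    proof
      fix x assume x: "x \<in> U"
      then have xA: "x \<in> PiE (carrier G) (\<lambda>_. A)" using openin_subset[OF assms(3)] by auto
      obtain K where K: "finite K" "K \<subseteq> carrier G" "cyl G A K x \<subseteq> U"
        using cyl_inside_open[OF assms(3) x] by blast
      have "cyl G A K x \<in> F" using K cyl_in_CY[OF K(1,2) xA] by (auto simp: F_def)
      moreover have "x \<in> cyl G A K x" using xA by (auto simp: cyl_def)
      ultimately show "x \<in> \<Union>F" by blast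
    qed
  qed (auto simp: F_def)
  also have "\<dots> \<in> sets (shift_space G A)"
    using countable_CY[OF assms(1,2)] CY_sets
    by (intro sets.countable_Union) (auto simp: F_def intro: countable_subset)
  finally show ?thesis .
qed

lemma cont_measurable:
  assumes "countable (carrier G)" "countable A" "continuous_map (shift_top G A) euclideanreal f"
  shows "f \<in> borel_measurable (shift_space G A)"
proof (rule borel_measurableI)
  fix S :: "real set" assume "open S"
  then have "openin (shift_top G A) {x \<in> topspace (shift_top G A). f x \<in> S}"
    using assms(3) by (intro openin_continuous_map_preimage) auto
  then have "{x \<in> topspace (shift_top G A). f x \<in> S} \<in> sets (shift_space G A)"
    using assms by (intro open_sets) auto
  moreover have "f -` S \<inter> space (shift_space G A) = {x \<in> topspace (shift_top G A). f x \<in> S}"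
    by auto
  ultimately show "f -` S \<inter> space (shift_space G A) \<in> sets (shift_space G A)" by simp
qed

lemma compact_shift: "finite A \<Longrightarrow> compact_space (shift_top G A)"
  by (simp add: shift_top_def compact_space_product_topology compact_space_discrete_topology)

lemma unif_approx:
  assumes "finite A" "continuous_map (shift_top G A) euclideanreal f" "\<delta> > 0"
  shows "\<exists>J. finite J \<and> J \<subseteq> carrier G \<and> (\<forall>\<omega>\<in>PiE (carrier G) (\<lambda>_. A). \<forall>\<omega>'\<in>PiE (carrier G) (\<lambda>_. A).
            (\<forall>j\<in>J. \<omega> j = \<omega>' j) \<longrightarrow> \<bar>f \<omega> - f \<omega>'\<bar> < \<delta>)"
proof -
  let ?X = "PiE (carrier G) (\<lambda>_. A)"
  have "\<forall>x\<in>?X. \<exists>K. finite K \<and> K \<subseteq> carrier G \<and> cyl G A K x \<subseteq> {\<omega> \<in> topspace (shift_top G A). f \<omega> \<in> ball (f x) (\<delta>/2)}"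
  proof
    fix x assume x: "x \<in> ?X"
    have "openin (shift_top G A) {\<omega> \<in> topspace (shift_top G A). f \<omega> \<in> ball (f x) (\<delta>/2)}"
      using assms(2) by (intro openin_continuous_map_preimage) auto
    moreover have "x \<in> {\<omega> \<in> topspace (shift_top G A). f \<omega> \<in> ball (f x) (\<delta>/2)}"
      using x assms(3) by auto
    ultimately show "\<exists>K. finite K \<and> K \<subseteq> carrier G \<and> cyl G A K x \<subseteq> {\<omega> \<in> topspace (shift_top G A). f \<omega> \<in> ball (f x) (\<delta>/2)}"
      by (rule cyl_inside_open)
  qed
  from bchoice[OF this] obtain K where K0: "\<forall>x\<in>?X. finite (K x) \<and> K x \<subseteq> carrier G \<and>
       cyl G A (K x) x \<subseteq> {\<omega> \<in> topspace (shift_top G A). f \<omega> \<in> ball (f x) (\<delta>/2)}"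
    by blast
  have K: "\<And>x. x \<in> ?X \<Longrightarrow> finite (K x) \<and> K x \<subseteq> carrier G \<and>
       cyl G A (K x) x \<subseteq> {\<omega> \<in> topspace (shift_top G A). f \<omega> \<in> ball (f x) (\<delta>/2)}"
    using K0 by blast
  have "compactin (shift_top G A) (topspace (shift_top G A))"
    using compact_shift[OF assms(1)] by (simp add: compact_space_def)
  moreover have "\<forall>U\<in>(\<lambda>x. cyl G A (K x) x) ` ?X. openin (shift_top G A) U"
    using K by (auto intro!: openin_cyl)
  moreover have "topspace (shift_top G A) \<subseteq> \<Union>((\<lambda>x. cyl G A (K x) x) ` ?X)"
    by (auto simp: cyl_def)
  ultimately obtain F where F: "finite F" "F \<subseteq> (\<lambda>x. cyl G A (K x) x) ` ?X" "topspace (shift_top G A) \<subseteq> \<Union>F"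
    unfolding compactin_def by (elim conjE allE[where x="(\<lambda>x. cyl G A (K x) x) ` ?X"]) blast
  then obtain X0 where X0: "X0 \<subseteq> ?X" "finite X0" "F = (\<lambda>x. cyl G A (K x) x) ` X0"
    using finite_subset_image[OF F(1,2)] by blast
  define J where "J = \<Union>(K ` X0)"
  have "finite J" unfolding J_def using X0 K by (intro finite_UN_I) auto
  moreover have "J \<subseteq> carrier G"
  proof (unfold J_def, rule UN_least)
    fix x assume "x \<in> X0" then show "K x \<subseteq> carrier G" using K X0(1) by blast
  qed
  moreover have "\<forall>\<omega>\<in>?X. \<forall>\<omega>'\<in>?X. (\<forall>j\<in>J. \<omega> j = \<omega>' j) \<longrightarrow> \<bar>f \<omega> - f \<omega>'\<bar> < \<delta>"
  proof (intro ballI impI)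
    fix \<omega> \<omega>' assume w: "\<omega> \<in> ?X" "\<omega>' \<in> ?X" and agree: "\<forall>j\<in>J. \<omega> j = \<omega>' j"
    obtain x where x: "x \<in> X0" "\<omega> \<in> cyl G A (K x) x" using F(3) X0(3) w(1) by auto
    have "\<omega>' \<in> cyl G A (K x) x" using x w agree unfolding J_def cyl_def by auto
    then have 1: "dist (f x) (f \<omega>') < \<delta>/2" using K[of x] x X0 by auto
    have 2: "dist (f x) (f \<omega>) < \<delta>/2" using K[of x] x X0 by auto
    show "\<bar>f \<omega> - f \<omega>'\<bar> < \<delta>" using 1 2 unfolding dist_real_def by linarith
  qed
  ultimately show ?thesis by blast
qed


definition ext0 :: "('g,'b) monoid_scheme \<Rightarrow> 'a \<Rightarrow> 'g set \<Rightarrow> ('g \<Rightarrow> 'a) \<Rightarrow> ('g \<Rightarrow> 'a)" where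
  "ext0 G a0 J \<omega> = (\<lambda>i\<in>carrier G. if i \<in> J then \<omega> i else a0)"

lemma ext0_in: "a0 \<in> A \<Longrightarrow> (\<forall>j\<in>J \<inter> carrier G. \<omega> j \<in> A) \<Longrightarrow> ext0 G a0 J \<omega> \<in> PiE (carrier G) (\<lambda>_. A)"
  by (auto simp: ext0_def)

lemma ext0_restrict: "ext0 G a0 J (restrict \<omega> J) = ext0 G a0 J \<omega>"
  by (auto simp: ext0_def fun_eq_iff)

lemma ext0_ext0: "J \<subseteq> carrier G \<Longrightarrow> ext0 G a0 J (ext0 G a0 J \<omega>) = ext0 G a0 J \<omega>"
  by (auto simp: ext0_def fun_eq_iff)

lemma dep_ext0:
  fixes G :: "('g,'b) monoid_scheme" and A :: "'a set"
  shows "dep G A J (\<lambda>\<omega>. f (ext0 G a0 J \<omega>))"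
proof (unfold dep_def, intro ballI impI)
  fix \<omega> \<omega>' :: "'g \<Rightarrow> 'a" assume "\<forall>j\<in>J. \<omega> j = \<omega>' j"
  then have "ext0 G a0 J \<omega> = ext0 G a0 J \<omega>'" by (auto simp: ext0_def fun_eq_iff)
  then show "f (ext0 G a0 J \<omega>) = f (ext0 G a0 J \<omega>')" by simp
qed

lemma space_eq_shift:
  assumes "sets \<nu> = sets (shift_space G A)"
  shows "space \<nu> = PiE (carrier G) (\<lambda>_. A)"
  using sets_eq_imp_space_eq[OF assms] by simp

lemma indicator_cyl_eq:
  assumes "\<omega> \<in> PiE (carrier G) (\<lambda>_. A)" "y \<in> PiE J (\<lambda>_. A)" "J \<subseteq> carrier G"
  shows "indicator (cyl G A J y) \<omega> = (if y = restrict \<omega> J then 1 else (0::real))"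
proof -
  have "\<omega> \<in> cyl G A J y \<longleftrightarrow> y = restrict \<omega> J"
  proof
    assume "\<omega> \<in> cyl G A J y"
    then show "y = restrict \<omega> J" using assms(2) by (auto simp: cyl_def fun_eq_iff PiE_iff extensional_def)
  next
    assume "y = restrict \<omega> J"
    then show "\<omega> \<in> cyl G A J y" using assms(1) by (auto simp: cyl_def)
  qed
  then show ?thesis by (simp add: indicator_def)
qed

lemma integral_dep:
  assumes "prob_space \<nu>" "sets \<nu> = sets (shift_space G A)" "finite A" "finite J" "J \<subseteq> carrier G"
    "dep G A J g" "a0 \<in> A"
  shows "integral\<^sup>L \<nu> g = (\<Sum>y\<in>PiE J (\<lambda>_. A). g (ext0 G a0 J y) * measure \<nu> (cyl G A J y))"
proof -
  let ?P = "PiE J (\<lambda>_. A)"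
  have finP: "finite ?P" using assms(3,4) by (simp add: finite_PiE)
  have sp: "space \<nu> = PiE (carrier G) (\<lambda>_. A)" by (rule space_eq_shift[OF assms(2)])
  have eq: "g \<omega> = (\<Sum>y\<in>?P. g (ext0 G a0 J y) * indicator (cyl G A J y) \<omega>)"
    if w: "\<omega> \<in> PiE (carrier G) (\<lambda>_. A)" for \<omega>
  proof -
    have "(\<Sum>y\<in>?P. g (ext0 G a0 J y) * indicator (cyl G A J y) \<omega>)
        = (\<Sum>y\<in>?P. if y = restrict \<omega> J then g (ext0 G a0 J y) else 0)"
      using w assms(5) by (intro sum.cong refl) (simp add: indicator_cyl_eq)
    also have "\<dots> = g (ext0 G a0 J (restrict \<omega> J))"
    proof -
      have "restrict \<omega> J \<in> ?P" using w assms(5) by auto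
      then show ?thesis using finP by (simp add: sum.delta)
    qed
    also have "g (ext0 G a0 J (restrict \<omega> J)) = g \<omega>"
    proof -
      have e: "ext0 G a0 J \<omega> \<in> PiE (carrier G) (\<lambda>_. A)" using w assms(7) by (intro ext0_in) auto
      have ag: "\<forall>j\<in>J. ext0 G a0 J \<omega> j = \<omega> j" using assms(5) by (auto simp: ext0_def)
      have "g (ext0 G a0 J \<omega>) = g \<omega>" using assms(6) e w ag unfolding dep_def by blast
      then show ?thesis by (simp add: ext0_restrict)
    qed
    finally show ?thesis by simp
  qed
  have cs: "cyl G A J y \<in> sets \<nu>" for y
    using assms(2,4,5) by (simp add: cyl_sets countable_finite)
  have fin: "emeasure \<nu> (cyl G A J y) < \<infinity>" for y
    using finite_measure.emeasure_finite[of \<nu>] assms(1) by (simp add: less_top prob_space_def)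
  have "integral\<^sup>L \<nu> g = integral\<^sup>L \<nu> (\<lambda>\<omega>. \<Sum>y\<in>?P. g (ext0 G a0 J y) * indicator (cyl G A J y) \<omega>)"
    by (rule Bochner_Integration.integral_cong) (simp_all add: sp eq)
  also have "\<dots> = (\<Sum>y\<in>?P. integral\<^sup>L \<nu> (\<lambda>\<omega>. g (ext0 G a0 J y) * indicator (cyl G A J y) \<omega>))"
    by (rule Bochner_Integration.integral_sum) (intro integrable_mult_right integrable_real_indicator cs fin)
  also have "\<dots> = (\<Sum>y\<in>?P. g (ext0 G a0 J y) * measure \<nu> (cyl G A J y))"
  proof (rule sum.cong[OF refl])
    fix y
    have "cyl G A J y \<inter> space \<nu> = cyl G A J y" using sp cyl_subset by blast
    then show "integral\<^sup>L \<nu> (\<lambda>\<omega>. g (ext0 G a0 J y) * indicator (cyl G A J y) \<omega>) =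
          g (ext0 G a0 J y) * measure \<nu> (cyl G A J y)"
      by (simp add: integral_mult_right_zero integral_indicator)
  qed
  finally show ?thesis .
qed

lemma integral_approx:
  assumes "prob_space \<nu>" "sets \<nu> = sets (shift_space G A)" "finite A" "countable (carrier G)"
    "continuous_map (shift_top G A) euclideanreal f" "finite J" "J \<subseteq> carrier G"
    and close: "\<forall>\<omega>\<in>PiE (carrier G) (\<lambda>_. A). \<forall>\<omega>'\<in>PiE (carrier G) (\<lambda>_. A).
            (\<forall>j\<in>J. \<omega> j = \<omega>' j) \<longrightarrow> \<bar>f \<omega> - f \<omega>'\<bar> < \<delta>"
    and a0: "a0 \<in> A"
  shows "integrable \<nu> f"
    "\<bar>integral\<^sup>L \<nu> f - (\<Sum>y\<in>PiE J (\<lambda>_. A). f (ext0 G a0 J y) * measure \<nu> (cyl G A J y))\<bar> \<le> \<delta>"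
proof -
  let ?P = "PiE J (\<lambda>_. A)"
  let ?X = "PiE (carrier G) (\<lambda>_. A)"
  define g where "g = (\<lambda>\<omega>. f (ext0 G a0 J \<omega>))"
  have sp: "space \<nu> = ?X" by (rule space_eq_shift[OF assms(2)])
  have depg: "dep G A J g" unfolding g_def by (rule dep_ext0)
  have gext: "g (ext0 G a0 J y) = f (ext0 G a0 J y)" for y
    using assms(7) by (simp add: g_def ext0_ext0)
  have intg: "integral\<^sup>L \<nu> g = (\<Sum>y\<in>?P. f (ext0 G a0 J y) * measure \<nu> (cyl G A J y))"
    using integral_dep[OF assms(1,2,3,6,7) depg a0] by (simp add: gext)
  have closefg: "\<bar>f \<omega> - g \<omega>\<bar> < \<delta>" if w: "\<omega> \<in> ?X" for \<omega>
  proof -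
    have e: "ext0 G a0 J \<omega> \<in> ?X" using w a0 by (intro ext0_in) auto
    have ag: "\<forall>j\<in>J. \<omega> j = ext0 G a0 J \<omega> j" using assms(7) by (auto simp: ext0_def)
    show ?thesis using close w e ag unfolding g_def by blast
  qed
  define B where "B = (\<Sum>y\<in>?P. \<bar>f (ext0 G a0 J y)\<bar>)"
  have finP: "finite ?P" using assms(3,6) by (simp add: finite_PiE)
  have gB: "\<bar>g \<omega>\<bar> \<le> B" if w: "\<omega> \<in> ?X" for \<omega>
  proof -
    have r: "restrict \<omega> J \<in> ?P" using w assms(7) by auto
    have "g \<omega> = f (ext0 G a0 J (restrict \<omega> J))" by (simp add: g_def ext0_restrict)
    moreover have "\<bar>f (ext0 G a0 J (restrict \<omega> J))\<bar> \<le> B"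
      unfolding B_def by (rule member_le_sum[OF r _ finP]) simp
    ultimately show ?thesis by simp
  qed
  have ms: "measurable \<nu> borel = measurable (shift_space G A) borel"
    by (rule measurable_cong_sets[OF assms(2) refl])
  have cA: "countable A" using assms(3) by (rule countable_finite)
  have fm: "f \<in> borel_measurable \<nu>"
    unfolding ms by (rule cont_measurable[OF assms(4) cA assms(5)])
  have gm: "g \<in> borel_measurable \<nu>"
    unfolding ms by (rule cont_measurable[OF assms(4) cA dep_continuous[OF assms(6,7) depg]])
  have fin: "finite_measure \<nu>" using assms(1) by (simp add: prob_space_def)
  show intf: "integrable \<nu> f"
  proof (rule finite_measure.integrable_const_bound[OF fin _ fm])
    show "AE x in \<nu>. norm (f x) \<le> B + \<delta>"
    proof (rule AE_I2)
      fix x assume "x \<in> space \<nu>"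
      then have "x \<in> ?X" using sp by simp
      then show "norm (f x) \<le> B + \<delta>" using closefg[of x] gB[of x] by simp
    qed
  qed
  have intg': "integrable \<nu> g"
  proof (rule finite_measure.integrable_const_bound[OF fin _ gm])
    show "AE x in \<nu>. norm (g x) \<le> B"
    proof (rule AE_I2)
      fix x assume "x \<in> space \<nu>"
      then have "x \<in> ?X" using sp by simp
      then show "norm (g x) \<le> B" using gB[of x] by simp
    qed
  qed
  have "\<bar>integral\<^sup>L \<nu> f - integral\<^sup>L \<nu> g\<bar> = \<bar>integral\<^sup>L \<nu> (\<lambda>x. f x - g x)\<bar>"
    using intf intg' by simp
  also have "\<dots> \<le> integral\<^sup>L \<nu> (\<lambda>x. \<bar>f x - g x\<bar>)"
    using integral_norm_bound[of \<nu> "\<lambda>x. f x - g x"] by simp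
  also have "\<dots> \<le> integral\<^sup>L \<nu> (\<lambda>x. \<delta>)"
  proof (rule integral_mono)
    show "integrable \<nu> (\<lambda>x. \<bar>f x - g x\<bar>)" using intf intg' by simp
    show "integrable \<nu> (\<lambda>x. \<delta>)" by (rule finite_measure.integrable_const[OF fin])
    fix x assume "x \<in> space \<nu>"
    then show "\<bar>f x - g x\<bar> \<le> \<delta>" using closefg[of x] sp by simp
  qed
  also have "\<dots> = \<delta>" using prob_space.prob_space[OF assms(1)] by simp
  finally show "\<bar>integral\<^sup>L \<nu> f - (\<Sum>y\<in>?P. f (ext0 G a0 J y) * measure \<nu> (cyl G A J y))\<bar> \<le> \<delta>"
    using intg by simp
qed

lemma int_conv:
  assumes mu: "prob_space \<mu>" "sets \<mu> = sets (shift_space G A)"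
    and nu: "\<And>n. prob_space (\<nu> n)" "\<And>n. sets (\<nu> n) = sets (shift_space G A)"
    and A: "finite A" "A \<noteq> {}" and cG: "countable (carrier G)"
    and f: "continuous_map (shift_top G A) euclideanreal f"
    and conv: "\<And>J y. finite J \<Longrightarrow> J \<subseteq> carrier G \<Longrightarrow> y \<in> PiE J (\<lambda>_. A) \<Longrightarrow>
        (\<lambda>n. measure (\<nu> n) (cyl G A J y)) \<longlonglongrightarrow> measure \<mu> (cyl G A J y)"
  shows "(\<lambda>n. integral\<^sup>L (\<nu> n) f) \<longlonglongrightarrow> integral\<^sup>L \<mu> f"
  unfolding tendsto_iff
proof (intro allI impI)
  fix e :: real assume e: "e > 0"
  obtain a0 where a0: "a0 \<in> A" using A(2) by blast
  obtain J where J: "finite J" "J \<subseteq> carrier G" and close: "\<forall>\<omega>\<in>PiE (carrier G) (\<lambda>_. A). \<forall>\<omega>'\<in>PiE (carrier G) (\<lambda>_. A).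
            (\<forall>j\<in>J. \<omega> j = \<omega>' j) \<longrightarrow> \<bar>f \<omega> - f \<omega>'\<bar> < e/3"
    using unif_approx[OF A(1) f, of "e/3"] e by auto
  define S where "S = (\<lambda>M. \<Sum>y\<in>PiE J (\<lambda>_. A). f (ext0 G a0 J y) * measure M (cyl G A J y))"
  have lim: "(\<lambda>n. S (\<nu> n)) \<longlonglongrightarrow> S \<mu>"
    unfolding S_def using J by (intro tendsto_intros conv) auto
  have e3: "e/3 > 0" using e by simp
  have ev: "eventually (\<lambda>n. dist (S (\<nu> n)) (S \<mu>) < e/3) sequentially"
    using tendsto_iff[THEN iffD1, OF lim, rule_format, OF e3] .
  show "eventually (\<lambda>n. dist (integral\<^sup>L (\<nu> n) f) (integral\<^sup>L \<mu> f) < e) sequentially"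
  proof (rule eventually_mono[OF ev])
    fix n assume d: "dist (S (\<nu> n)) (S \<mu>) < e/3"
    have 1: "\<bar>integral\<^sup>L (\<nu> n) f - S (\<nu> n)\<bar> \<le> e/3"
      unfolding S_def by (rule integral_approx(2)[OF nu(1) nu(2) A(1) cG f J close a0])
    have 2: "\<bar>integral\<^sup>L \<mu> f - S \<mu>\<bar> \<le> e/3"
      unfolding S_def by (rule integral_approx(2)[OF mu A(1) cG f J close a0])
    show "dist (integral\<^sup>L (\<nu> n) f) (integral\<^sup>L \<mu> f) < e"
      using 1 2 d unfolding dist_real_def by linarith
  qed
qed

lemma wstar_conv:
  assumes mu: "prob_space \<mu>" "sets \<mu> = sets (shift_space G A)"
    and nu: "\<And>n. \<nu> n \<in> Prob_meas G A"
    and A: "finite A" "A \<noteq> {}" and cG: "countable (carrier G)"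
    and conv: "\<And>J y. finite J \<Longrightarrow> J \<subseteq> carrier G \<Longrightarrow> y \<in> PiE J (\<lambda>_. A) \<Longrightarrow>
        (\<lambda>n. measure (\<nu> n) (cyl G A J y)) \<longlonglongrightarrow> measure \<mu> (cyl G A J y)"
    and U: "wstar_nbhd G A \<mu> U"
  shows "eventually (\<lambda>n. \<nu> n \<in> U) sequentially"
proof -
  obtain F \<epsilon> where F: "finite F" "\<epsilon> > 0" "\<forall>f\<in>F. continuous_map (shift_top G A) euclideanreal f"
    "wstar_basic G A \<mu> F \<epsilon> \<subseteq> U"
    using U unfolding wstar_nbhd_def by blast
  have nu1: "\<And>n. prob_space (\<nu> n)" and nu2: "\<And>n. sets (\<nu> n) = sets (shift_space G A)"
    using nu by (auto simp: Prob_meas_def)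
  have "eventually (\<lambda>n. \<forall>f\<in>F. \<bar>integral\<^sup>L (\<nu> n) f - integral\<^sup>L \<mu> f\<bar> < \<epsilon>) sequentially"
  proof (rule eventually_ball_finite[OF F(1)], rule ballI)
    fix f assume "f \<in> F"
    then have "(\<lambda>n. integral\<^sup>L (\<nu> n) f) \<longlonglongrightarrow> integral\<^sup>L \<mu> f"
      using F(3) by (intro int_conv[OF mu nu1 nu2 A cG _ conv]) auto
    then show "eventually (\<lambda>n. \<bar>integral\<^sup>L (\<nu> n) f - integral\<^sup>L \<mu> f\<bar> < \<epsilon>) sequentially"
      using F(2) unfolding tendsto_iff dist_real_def by blast
  qed
  then show ?thesis
  proof (rule eventually_mono)
    fix n assume "\<forall>f\<in>F. \<bar>integral\<^sup>L (\<nu> n) f - integral\<^sup>L \<mu> f\<bar> < \<epsilon>"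
    then have "\<nu> n \<in> wstar_basic G A \<mu> F \<epsilon>" using nu[of n] by (simp add: wstar_basic_def)
    then show "\<nu> n \<in> U" using F(4) by blast
  qed
qed

lemma closure_approx:
  assumes "\<mu> \<in> wstar_closure G A S" "finite F" "\<forall>f\<in>F. continuous_map (shift_top G A) euclideanreal f" "\<epsilon> > 0"
  shows "\<exists>\<nu>\<in>S. \<nu> \<in> Prob_meas G A \<and> (\<forall>f\<in>F. \<bar>integral\<^sup>L \<nu> f - integral\<^sup>L \<mu> f\<bar> < \<epsilon>)"
proof -
  have "wstar_nbhd G A \<mu> (wstar_basic G A \<mu> F \<epsilon>)" unfolding wstar_nbhd_def using assms(2-4) by blast
  then have "wstar_basic G A \<mu> F \<epsilon> \<inter> S \<noteq> {}" using assms(1) unfolding wstar_closure_def by blast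
  then show ?thesis by (auto simp: wstar_basic_def)
qed

lemma AE_msupport:
  assumes "countable (carrier G)" "countable A" "sets \<nu> = sets (shift_space G A)"
  shows "AE \<omega> in \<nu>. \<omega> \<in> msupport G A \<nu>"
proof -
  define NF where "NF = {C \<in> CY G A. C \<in> null_sets \<nu>}"
  have cNF: "countable NF" using countable_CY[OF assms(1,2)] unfolding NF_def
    by (rule countable_subset[rotated]) auto
  have "\<Union>NF \<in> null_sets \<nu>" using null_sets_UN'[OF cNF, of "\<lambda>C. C" \<nu>] by (simp add: NF_def)
  moreover have "{x \<in> space \<nu>. \<not> x \<in> msupport G A \<nu>} \<subseteq> \<Union>NF"
  proof
    fix x assume x: "x \<in> {x \<in> space \<nu>. \<not> x \<in> msupport G A \<nu>}"
    have sp: "space \<nu> = PiE (carrier G) (\<lambda>_. A)" by (rule space_eq_shift[OF assms(3)])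
    then have xX: "x \<in> PiE (carrier G) (\<lambda>_. A)" using x by simp
    then obtain U where U: "openin (shift_top G A) U" "x \<in> U" "\<not> emeasure \<nu> U > 0"
      using x unfolding msupport_def by auto
    then have U0: "emeasure \<nu> U = 0" by (simp add: not_gr_zero)
    have Us: "U \<in> sets \<nu>" using open_sets[OF assms(1,2) U(1)] assms(3) by simp
    obtain K where K: "finite K" "K \<subseteq> carrier G" "cyl G A K x \<subseteq> U"
      using cyl_inside_open[OF U(1,2)] by blast
    have Cs: "cyl G A K x \<in> sets \<nu>" using assms(3) K by (simp add: cyl_sets countable_finite)
    have "emeasure \<nu> (cyl G A K x) \<le> emeasure \<nu> U" by (rule emeasure_mono[OF K(3) Us])
    then have "emeasure \<nu> (cyl G A K x) = 0" using U0 by simp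
    then have "cyl G A K x \<in> null_sets \<nu>" using Cs by (rule null_setsI)
    moreover have "cyl G A K x \<in> CY G A" by (rule cyl_in_CY[OF K(1,2) xX])
    moreover have "x \<in> cyl G A K x" using xX by (simp add: cyl_def)
    ultimately show "x \<in> \<Union>NF" unfolding NF_def by blast
  qed
  ultimately show ?thesis by (rule AE_I')
qed


lemma measurable_from_sets:
  assumes "sets \<mu> = sets M" "f \<in> measurable M N"
  shows "f \<in> measurable \<mu> N"
  using measurable_cong_sets[of \<mu> M N N] assms by simp

lemma shift_in:
  assumes "group G" "h \<in> carrier G" "\<omega> \<in> PiE (carrier G) (\<lambda>_. A)"
  shows "shift G h \<omega> \<in> PiE (carrier G) (\<lambda>_. A)"
  using assms by (auto simp: shift_def group.is_monoid monoid.m_closed)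

lemma shift_mult:
  assumes "group G" "g \<in> carrier G" "h \<in> carrier G"
  shows "shift G g (shift G h \<omega>) = shift G (g \<otimes>\<^bsub>G\<^esub> h) \<omega>"
  using assms by (auto simp: shift_def fun_eq_iff group.is_monoid monoid.m_closed monoid.m_assoc)

lemma shift_one:
  assumes "group G" "\<omega> \<in> PiE (carrier G) (\<lambda>_. A)"
  shows "shift G \<one>\<^bsub>G\<^esub> \<omega> = \<omega>"
  using assms by (auto simp: shift_def fun_eq_iff group.is_monoid monoid.r_one PiE_iff extensional_def)

lemma shift_inv:
  assumes "group G" "h \<in> carrier G" "\<omega> \<in> PiE (carrier G) (\<lambda>_. A)"
  shows "shift G (inv\<^bsub>G\<^esub> h) (shift G h \<omega>) = \<omega>"
  using assms by (simp add: shift_mult group.l_inv shift_one)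

lemma shift_inv':
  assumes "group G" "h \<in> carrier G" "\<omega> \<in> PiE (carrier G) (\<lambda>_. A)"
  shows "shift G h (shift G (inv\<^bsub>G\<^esub> h) \<omega>) = \<omega>"
  using assms by (simp add: shift_mult group.r_inv shift_one)

lemma shift_measurable:
  assumes "group G" "h \<in> carrier G"
  shows "shift G h \<in> measurable (shift_space G A) (shift_space G A)"
proof -
  have "(\<lambda>\<omega>. \<lambda>g\<in>carrier G. \<omega> (g \<otimes>\<^bsub>G\<^esub> h)) \<in> measurable (shift_space G A) (shift_space G A)"
    unfolding shift_space_def
    using assms by (intro measurable_restrict measurable_component_singleton)
      (auto simp: group.is_monoid monoid.m_closed)
  then show ?thesis by (simp add: shift_def[abs_def])
qed

lemma shift_continuous:
  assumes "group G" "h \<in> carrier G"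
  shows "continuous_map (shift_top G A) (shift_top G A) (shift G h)"
  unfolding shift_top_def continuous_map_componentwise
proof (intro conjI ballI)
  show "shift G h ` topspace (product_topology (\<lambda>_. discrete_topology A) (carrier G)) \<subseteq> extensional (carrier G)"
    by (auto simp: shift_def)
  fix k assume k: "k \<in> carrier G"
  have kh: "k \<otimes>\<^bsub>G\<^esub> h \<in> carrier G" using assms k by (simp add: group.is_monoid monoid.m_closed)
  have eq: "(\<lambda>x. shift G h x k) = (\<lambda>x. x (k \<otimes>\<^bsub>G\<^esub> h))" using k by (simp add: shift_def fun_eq_iff)
  show "continuous_map (product_topology (\<lambda>_. discrete_topology A) (carrier G)) (discrete_topology A) (\<lambda>x. shift G h x k)"
    unfolding eq by (rule continuous_map_product_projection[OF kh])
qed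

lemma InvProb_emeasure:
  assumes "group G" "\<mu> \<in> InvProb G A" "h \<in> carrier G" "B \<in> sets (shift_space G A)"
  shows "emeasure \<mu> B = emeasure \<mu> (shift G h -` B \<inter> PiE (carrier G) (\<lambda>_. A))"
proof -
  have s: "sets \<mu> = sets (shift_space G A)" using assms(2) by (simp add: InvProb_def Prob_meas_def)
  have m: "shift G h \<in> measurable \<mu> (shift_space G A)"
    by (rule measurable_from_sets[OF s shift_measurable[OF assms(1,3)]])
  have "emeasure \<mu> B = emeasure (distr \<mu> (shift_space G A) (shift G h)) B"
    using assms(2,3) by (simp add: InvProb_def)
  also have "\<dots> = emeasure \<mu> (shift G h -` B \<inter> space \<mu>)"
    by (rule emeasure_distr[OF m assms(4)])
  finally show ?thesis using space_eq_shift[OF s] by simp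
qed

lemma msupport_shift:
  assumes "group G" "countable (carrier G)" "countable A" "\<mu> \<in> InvProb G A"
    "\<omega> \<in> msupport G A \<mu>" "h \<in> carrier G"
  shows "shift G h \<omega> \<in> msupport G A \<mu>"
proof -
  have wX: "\<omega> \<in> PiE (carrier G) (\<lambda>_. A)" using assms(5) by (simp add: msupport_def)
  have s: "sets \<mu> = sets (shift_space G A)" using assms(4) by (simp add: InvProb_def Prob_meas_def)
  show ?thesis unfolding msupport_def
  proof (intro CollectI conjI allI impI)
    show "shift G h \<omega> \<in> topspace (shift_top G A)" using shift_in[OF assms(1,6) wX] by simp
    fix U assume U: "openin (shift_top G A) U \<and> shift G h \<omega> \<in> U"
    define V where "V = {x \<in> topspace (shift_top G A). shift G h x \<in> U}"
    have "openin (shift_top G A) V" unfolding V_def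
      using U shift_continuous[OF assms(1,6)] by (intro openin_continuous_map_preimage) auto
    moreover have "\<omega> \<in> V" using U wX by (simp add: V_def)
    ultimately have "emeasure \<mu> V > 0" using assms(5) unfolding msupport_def by blast
    moreover have "emeasure \<mu> U = emeasure \<mu> V"
    proof -
      have Us: "U \<in> sets (shift_space G A)" using open_sets[OF assms(2,3)] U by blast
      have "emeasure \<mu> U = emeasure \<mu> (shift G h -` U \<inter> PiE (carrier G) (\<lambda>_. A))"
        by (rule InvProb_emeasure[OF assms(1,4,6) Us])
      also have "shift G h -` U \<inter> PiE (carrier G) (\<lambda>_. A) = V" by (auto simp: V_def)
      finally show ?thesis .
    qed
    ultimately show "emeasure \<mu> U > 0" by simp
  qed
qed

lemma foldr_carrier:
  assumes "monoid G" "set l \<subseteq> carrier G"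
  shows "foldr (\<otimes>\<^bsub>G\<^esub>) l \<one>\<^bsub>G\<^esub> \<in> carrier G"
  using assms(2) by (induction l) (auto simp: monoid.m_closed[OF assms(1)] monoid.one_closed[OF assms(1)])

lemma foldr_app_mult:
  assumes "monoid G" "set l1 \<subseteq> carrier G" "set l2 \<subseteq> carrier G"
  shows "foldr (\<otimes>\<^bsub>G\<^esub>) (l1 @ l2) \<one>\<^bsub>G\<^esub> = foldr (\<otimes>\<^bsub>G\<^esub>) l1 \<one>\<^bsub>G\<^esub> \<otimes>\<^bsub>G\<^esub> foldr (\<otimes>\<^bsub>G\<^esub>) l2 \<one>\<^bsub>G\<^esub>"
  using assms(2)
proof (induction l1)
  case Nil then show ?case using foldr_carrier[OF assms(1,3)] by (simp add: monoid.l_one[OF assms(1)])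
next
  case (Cons a l1)
  then show ?case using foldr_carrier[OF assms(1,3)] foldr_carrier[OF assms(1), of l1]
    by (simp add: monoid.m_assoc[OF assms(1)])
qed

lemma countable_carrier:
  assumes "group G" "fin_gen G"
  shows "countable (carrier G)"
proof -
  obtain S where S: "finite S" "S \<subseteq> carrier G" "generate G S = carrier G"
    using assms(2) by (auto simp: fin_gen_def)
  have mon: "monoid G" using assms(1) by (rule group.is_monoid)
  let ?L = "S \<union> (\<lambda>s. inv\<^bsub>G\<^esub> s) ` S"
  have Lc: "?L \<subseteq> carrier G" using S(2) group.inv_closed[OF assms(1)] by auto
  define T where "T = (\<lambda>l. foldr (\<otimes>\<^bsub>G\<^esub>) l \<one>\<^bsub>G\<^esub>) ` lists ?L"
  have "countable T" unfolding T_def using S(1)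
    by (intro countable_image countable_lists countable_finite) auto
  moreover have "generate G S \<subseteq> T"
  proof
    fix x assume "x \<in> generate G S"
    then show "x \<in> T"
    proof (induction rule: generate.induct)
      case one
      have "[] \<in> lists ?L" by simp
      then show ?case unfolding T_def by (rule image_eqI[rotated]) simp
    next
      case (incl h)
      then have "[h] \<in> lists ?L" by simp
      moreover have "h = foldr (\<otimes>\<^bsub>G\<^esub>) [h] \<one>\<^bsub>G\<^esub>" using incl S(2) by (auto simp: monoid.r_one[OF mon])
      ultimately show ?case unfolding T_def by blast
    next
      case (inv h)
      then have "[inv\<^bsub>G\<^esub> h] \<in> lists ?L" by simp
      moreover have "inv\<^bsub>G\<^esub> h = foldr (\<otimes>\<^bsub>G\<^esub>) [inv\<^bsub>G\<^esub> h] \<one>\<^bsub>G\<^esub>"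
        using inv S(2) group.inv_closed[OF assms(1)] by (auto simp: monoid.r_one[OF mon])
      ultimately show ?case unfolding T_def by blast
    next
      case (eng h1 h2)
      then obtain l1 l2 where l: "l1 \<in> lists ?L" "l2 \<in> lists ?L"
        "h1 = foldr (\<otimes>\<^bsub>G\<^esub>) l1 \<one>\<^bsub>G\<^esub>" "h2 = foldr (\<otimes>\<^bsub>G\<^esub>) l2 \<one>\<^bsub>G\<^esub>"
        unfolding T_def by blast
      have "foldr (\<otimes>\<^bsub>G\<^esub>) (l1 @ l2) \<one>\<^bsub>G\<^esub> = h1 \<otimes>\<^bsub>G\<^esub> h2"
        unfolding l(3,4) by (rule foldr_app_mult[OF mon]) (use l Lc in blast)+
      then have "h1 \<otimes>\<^bsub>G\<^esub> h2 = foldr (\<otimes>\<^bsub>G\<^esub>) (l1 @ l2) \<one>\<^bsub>G\<^esub>" by (rule sym)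
      moreover have "l1 @ l2 \<in> lists ?L" using l by simp
      ultimately show ?case unfolding T_def by blast
    qed
  qed
  ultimately show ?thesis using S(3) by (metis countable_subset)
qed


definition Tmap :: "('g,'b) monoid_scheme \<Rightarrow> ('g \<Rightarrow> 'q) \<Rightarrow> ('c \<Rightarrow> 'a) \<Rightarrow> ('q \<Rightarrow> 'c) \<Rightarrow> ('g \<Rightarrow> 'a)" where
  "Tmap G \<pi> d \<omega> = (\<lambda>g\<in>carrier G. d (\<omega> (\<pi> g)))"

definition Tpush :: "('g,'b) monoid_scheme \<Rightarrow> 'a set \<Rightarrow> ('g \<Rightarrow> 'q) \<Rightarrow> ('c \<Rightarrow> 'a) \<Rightarrow> ('q \<Rightarrow> 'c) measure \<Rightarrow> ('g \<Rightarrow> 'a) measure" where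
  "Tpush G A \<pi> d \<nu> = distr \<nu> (shift_space G A) (Tmap G \<pi> d)"

locale transfer =
  fixes G :: "('g,'b) monoid_scheme" and Q :: "('q,'e) monoid_scheme" and \<pi> :: "'g \<Rightarrow> 'q"
    and d :: "'c \<Rightarrow> 'a" and A' :: "'c set" and A :: "'a set"
  assumes G: "group G" and Q: "group Q" and hom: "\<pi> \<in> hom G Q" and d: "d \<in> A' \<rightarrow> A"
begin

abbreviation "T \<equiv> Tmap G \<pi> d"

lemma pi_closed: "g \<in> carrier G \<Longrightarrow> \<pi> g \<in> carrier Q"
  using hom by (auto simp: hom_def)

lemma Tmap_in: "\<omega> \<in> PiE (carrier Q) (\<lambda>_. A') \<Longrightarrow> T \<omega> \<in> PiE (carrier G) (\<lambda>_. A)"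
  using d pi_closed by (auto simp: Tmap_def)

lemma Tmap_measurable: "T \<in> measurable (shift_space Q A') (shift_space G A)"
proof -
  have dm: "d \<in> measurable (count_space A') (count_space A)"
    using d by (simp add: measurable_count_space_eq1)
  have "(\<lambda>\<omega>. \<lambda>g\<in>carrier G. d (\<omega> (\<pi> g))) \<in> measurable (PiM (carrier Q) (\<lambda>_. count_space A')) (PiM (carrier G) (\<lambda>_. count_space A))"
  proof (rule measurable_restrict)
    fix g assume g: "g \<in> carrier G"
    show "(\<lambda>\<omega>. d (\<omega> (\<pi> g))) \<in> measurable (PiM (carrier Q) (\<lambda>_. count_space A')) (count_space A)"
      using measurable_compose[OF measurable_component_singleton[OF pi_closed[OF g]] dm] by simp
  qed
  then show ?thesis by (simp add: shift_space_def Tmap_def[abs_def])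
qed

lemma Tmap_continuous: "continuous_map (shift_top Q A') (shift_top G A) T"
  unfolding shift_top_def continuous_map_componentwise
proof (intro conjI ballI)
  show "T ` topspace (product_topology (\<lambda>_. discrete_topology A') (carrier Q)) \<subseteq> extensional (carrier G)"
    by (auto simp: Tmap_def)
  fix g assume g: "g \<in> carrier G"
  have eq: "(\<lambda>x. T x g) = d \<circ> (\<lambda>x. x (\<pi> g))" using g by (simp add: Tmap_def fun_eq_iff)
  have dc: "continuous_map (discrete_topology A') (discrete_topology A) d"
    using d by (simp add: continuous_map_from_discrete_topology)
  show "continuous_map (product_topology (\<lambda>_. discrete_topology A') (carrier Q)) (discrete_topology A) (\<lambda>x. T x g)"
    unfolding eq by (rule continuous_map_compose[OF continuous_map_product_projection[OF pi_closed[OF g]] dc])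
qed

lemma Tmap_shift:
  assumes "h \<in> carrier G"
  shows "shift G h (T \<omega>) = T (shift Q (\<pi> h) \<omega>)"
proof -
  have "\<And>g. g \<in> carrier G \<Longrightarrow> \<pi> (g \<otimes>\<^bsub>G\<^esub> h) = \<pi> g \<otimes>\<^bsub>Q\<^esub> \<pi> h"
    using hom assms by (simp add: hom_mult)
  moreover have "\<And>g. g \<in> carrier G \<Longrightarrow> g \<otimes>\<^bsub>G\<^esub> h \<in> carrier G"
    using G assms by (simp add: group.is_monoid monoid.m_closed)
  ultimately show ?thesis using pi_closed by (auto simp: shift_def Tmap_def fun_eq_iff)
qed

lemma Tpush_Prob:
  assumes "\<nu> \<in> Prob_meas Q A'"
  shows "Tpush G A \<pi> d \<nu> \<in> Prob_meas G A"
proof -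
  have s: "sets \<nu> = sets (shift_space Q A')" and p: "prob_space \<nu>" using assms by (auto simp: Prob_meas_def)
  have m: "T \<in> measurable \<nu> (shift_space G A)" by (rule measurable_from_sets[OF s Tmap_measurable])
  show ?thesis unfolding Prob_meas_def Tpush_def
    using prob_space.prob_space_distr[OF p m] by simp
qed

lemma Tpush_Inv:
  assumes "\<nu> \<in> InvProb Q A'"
  shows "Tpush G A \<pi> d \<nu> \<in> InvProb G A"
proof -
  have nP: "\<nu> \<in> Prob_meas Q A'" using assms by (simp add: InvProb_def)
  have s: "sets \<nu> = sets (shift_space Q A')" using nP by (auto simp: Prob_meas_def)
  have m: "T \<in> measurable \<nu> (shift_space G A)" by (rule measurable_from_sets[OF s Tmap_measurable])
  have sp: "space \<nu> = PiE (carrier Q) (\<lambda>_. A')" by (rule space_eq_shift[OF s])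
  show ?thesis unfolding InvProb_def
  proof (intro CollectI conjI ballI)
    show "Tpush G A \<pi> d \<nu> \<in> Prob_meas G A" by (rule Tpush_Prob[OF nP])
    fix h assume h: "h \<in> carrier G"
    have ph: "\<pi> h \<in> carrier Q" using pi_closed[OF h] .
    have ms: "shift Q (\<pi> h) \<in> measurable \<nu> (shift_space Q A')"
      by (rule measurable_from_sets[OF s shift_measurable[OF Q ph]])
    have "distr (Tpush G A \<pi> d \<nu>) (shift_space G A) (shift G h)
        = distr \<nu> (shift_space G A) (shift G h \<circ> T)"
      unfolding Tpush_def by (rule distr_distr[OF shift_measurable[OF G h] m])
    also have "\<dots> = distr \<nu> (shift_space G A) (T \<circ> shift Q (\<pi> h))"
      by (rule distr_cong) (simp_all add: Tmap_shift[OF h])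
    also have "\<dots> = distr (distr \<nu> (shift_space Q A') (shift Q (\<pi> h))) (shift_space G A) T"
      by (rule distr_distr[OF Tmap_measurable ms, symmetric])
    also have "distr \<nu> (shift_space Q A') (shift Q (\<pi> h)) = \<nu>"
      using assms ph by (simp add: InvProb_def)
    finally show "distr (Tpush G A \<pi> d \<nu>) (shift_space G A) (shift G h) = Tpush G A \<pi> d \<nu>"
      by (simp add: Tpush_def)
  qed
qed

lemma Tpush_periodic:
  assumes cQ: "countable (carrier Q)" and cA: "countable A'" and per: "\<nu> \<in> periodic_meas Q A'"
  shows "Tpush G A \<pi> d \<nu> \<in> periodic_meas G A"
proof -
  have inv: "\<nu> \<in> InvProb Q A'" and finS: "finite (msupport Q A' \<nu>)" using per by (auto simp: periodic_meas_def)
  have nP: "\<nu> \<in> Prob_meas Q A'" using inv by (simp add: InvProb_def)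
  have s: "sets \<nu> = sets (shift_space Q A')" using nP by (auto simp: Prob_meas_def)
  have m: "T \<in> measurable \<nu> (shift_space G A)" by (rule measurable_from_sets[OF s Tmap_measurable])
  have sp: "space \<nu> = PiE (carrier Q) (\<lambda>_. A')" by (rule space_eq_shift[OF s])
  let ?S = "msupport Q A' \<nu>"
  have SX: "?S \<subseteq> PiE (carrier Q) (\<lambda>_. A')" by (auto simp: msupport_def)
  have ae: "AE x in \<nu>. x \<in> ?S" by (rule AE_msupport[OF cQ cA s])
  have sub: "msupport G A (Tpush G A \<pi> d \<nu>) \<subseteq> T ` ?S"
  proof
    fix \<omega> assume w: "\<omega> \<in> msupport G A (Tpush G A \<pi> d \<nu>)"
    then have wX: "\<omega> \<in> PiE (carrier G) (\<lambda>_. A)" by (simp add: msupport_def)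
    show "\<omega> \<in> T ` ?S"
    proof (rule ccontr)
      assume nw: "\<omega> \<notin> T ` ?S"
      have "\<forall>s\<in>T ` ?S. \<exists>g. g \<in> carrier G \<and> s g \<noteq> \<omega> g"
      proof
        fix s assume s: "s \<in> T ` ?S"
        then have sX: "s \<in> PiE (carrier G) (\<lambda>_. A)" using SX Tmap_in by blast
        have "s \<noteq> \<omega>" using s nw by blast
        then show "\<exists>g. g \<in> carrier G \<and> s g \<noteq> \<omega> g" using PiE_ext[OF sX wX] by blast
      qed
      then obtain gs where gs: "\<And>s. s \<in> T ` ?S \<Longrightarrow> gs s \<in> carrier G \<and> s (gs s) \<noteq> \<omega> (gs s)"
        by metis
      define K where "K = gs ` (T ` ?S)"
      have K: "finite K" "K \<subseteq> carrier G" using finS gs by (auto simp: K_def)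
      let ?U = "cyl G A K \<omega>"
      have "openin (shift_top G A) ?U" by (rule openin_cyl[OF K])
      moreover have "\<omega> \<in> ?U" using wX by (simp add: cyl_def)
      ultimately have pos: "emeasure (Tpush G A \<pi> d \<nu>) ?U > 0" using w unfolding msupport_def by blast
      have Us: "?U \<in> sets (shift_space G A)" using K by (simp add: cyl_sets countable_finite)
      have "emeasure (Tpush G A \<pi> d \<nu>) ?U = emeasure \<nu> (T -` ?U \<inter> space \<nu>)"
        unfolding Tpush_def by (rule emeasure_distr[OF m Us])
      also have "\<dots> = emeasure \<nu> {x \<in> space \<nu>. T x \<in> ?U}" by (simp add: Int_commute vimage_def Collect_conj_eq)
      also have "\<dots> = 0"
      proof (rule emeasure_eq_0_AE)
        show "AE x in \<nu>. \<not> T x \<in> ?U"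
        proof (rule AE_mp[OF ae AE_I2], rule impI)
          fix x assume "x \<in> ?S"
          then have Tx: "T x \<in> T ` ?S" by blast
          then have "gs (T x) \<in> K" by (simp add: K_def)
          moreover have "T x (gs (T x)) \<noteq> \<omega> (gs (T x))" using gs[OF Tx] by blast
          ultimately show "\<not> T x \<in> ?U" by (auto simp: cyl_def)
        qed
      qed
      finally show False using pos by simp
    qed
  qed
  have "finite (msupport G A (Tpush G A \<pi> d \<nu>))"
    by (rule finite_subset[OF sub finite_imageI[OF finS]])
  then show ?thesis using Tpush_Inv[OF inv] by (simp add: periodic_meas_def)
qed

lemma Tpush_ergodic:
  assumes surj: "\<pi> ` carrier G = carrier Q" and erg: "\<nu> \<in> ergodic_meas Q A'"
  shows "Tpush G A \<pi> d \<nu> \<in> ergodic_meas G A"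
proof -
  have inv: "\<nu> \<in> InvProb Q A'" using erg by (simp add: ergodic_meas_def)
  have nP: "\<nu> \<in> Prob_meas Q A'" using inv by (simp add: InvProb_def)
  have s: "sets \<nu> = sets (shift_space Q A')" using nP by (auto simp: Prob_meas_def)
  have m: "T \<in> measurable \<nu> (shift_space G A)" by (rule measurable_from_sets[OF s Tmap_measurable])
  have sp: "space \<nu> = PiE (carrier Q) (\<lambda>_. A')" by (rule space_eq_shift[OF s])
  show ?thesis unfolding ergodic_meas_def
  proof (intro CollectI conjI ballI impI)
    show "Tpush G A \<pi> d \<nu> \<in> InvProb G A" by (rule Tpush_Inv[OF inv])
    fix B assume B: "B \<in> sets (Tpush G A \<pi> d \<nu>)"
      and Binv: "\<forall>h\<in>carrier G. {\<omega> \<in> space (Tpush G A \<pi> d \<nu>). shift G h \<omega> \<in> B} = B"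
    have Bs: "B \<in> sets (shift_space G A)" using B by (simp add: Tpush_def)
    have spT: "space (Tpush G A \<pi> d \<nu>) = PiE (carrier G) (\<lambda>_. A)" by (simp add: Tpush_def)
    define B' where "B' = T -` B \<inter> space \<nu>"
    have B's: "B' \<in> sets \<nu>" unfolding B'_def by (rule measurable_sets[OF m Bs])
    have B'inv: "\<forall>q\<in>carrier Q. {\<omega> \<in> space \<nu>. shift Q q \<omega> \<in> B'} = B'"
    proof
      fix q assume q: "q \<in> carrier Q"
      then obtain h where h: "h \<in> carrier G" "q = \<pi> h" using surj by blast
      have "shift Q q \<omega> \<in> B' \<longleftrightarrow> \<omega> \<in> B'" if w: "\<omega> \<in> space \<nu>" for \<omega>
      proof -
        have wX: "\<omega> \<in> PiE (carrier Q) (\<lambda>_. A')" using w sp by simp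
        have sX: "shift Q q \<omega> \<in> PiE (carrier Q) (\<lambda>_. A')" by (rule shift_in[OF Q q wX])
        have TwX: "T \<omega> \<in> PiE (carrier G) (\<lambda>_. A)" by (rule Tmap_in[OF wX])
        have "shift Q q \<omega> \<in> B' \<longleftrightarrow> T (shift Q q \<omega>) \<in> B" using sX sp by (simp add: B'_def)
        also have "\<dots> \<longleftrightarrow> shift G h (T \<omega>) \<in> B" using h by (simp add: Tmap_shift)
        also have "\<dots> \<longleftrightarrow> T \<omega> \<in> {x \<in> space (Tpush G A \<pi> d \<nu>). shift G h x \<in> B}"
          using TwX spT by simp
        also have "\<dots> \<longleftrightarrow> T \<omega> \<in> B" using Binv h by simp
        also have "\<dots> \<longleftrightarrow> \<omega> \<in> B'" using w by (simp add: B'_def)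
        finally show ?thesis .
      qed
      then show "{\<omega> \<in> space \<nu>. shift Q q \<omega> \<in> B'} = B'" using B'_def by auto
    qed
    have "measure \<nu> B' = 0 \<or> measure \<nu> B' = 1"
      using erg B's B'inv unfolding ergodic_meas_def by blast
    moreover have "measure (Tpush G A \<pi> d \<nu>) B = measure \<nu> B'"
      unfolding Tpush_def B'_def by (rule measure_distr[OF m Bs])
    ultimately show "measure (Tpush G A \<pi> d \<nu>) B = 0 \<or> measure (Tpush G A \<pi> d \<nu>) B = 1" by simp
  qed
qed

lemma Tpush_closure:
  assumes cG: "countable (carrier G)" and fA: "finite A" and cl: "\<mu> \<in> wstar_closure Q A' S"
  shows "Tpush G A \<pi> d \<mu> \<in> wstar_closure G A (Tpush G A \<pi> d ` S)"
proof -
  have mP: "\<mu> \<in> Prob_meas Q A'" using cl by (simp add: wstar_closure_def)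
  have cA: "countable A" using fA by (rule countable_finite)
  have int_eq: "integral\<^sup>L (Tpush G A \<pi> d \<nu>) f = integral\<^sup>L \<nu> (f \<circ> T)"
    if nu: "\<nu> \<in> Prob_meas Q A'" and f: "continuous_map (shift_top G A) euclideanreal f" for \<nu> f
  proof -
    have s: "sets \<nu> = sets (shift_space Q A')" using nu by (auto simp: Prob_meas_def)
    have m: "T \<in> measurable \<nu> (shift_space G A)" by (rule measurable_from_sets[OF s Tmap_measurable])
    show ?thesis unfolding Tpush_def
      using integral_distr[OF m cont_measurable[OF cG cA f]] by (simp add: comp_def)
  qed
  show ?thesis unfolding wstar_closure_def
  proof (intro CollectI conjI allI impI)
    show "Tpush G A \<pi> d \<mu> \<in> Prob_meas G A" by (rule Tpush_Prob[OF mP])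
    fix U assume U: "wstar_nbhd G A (Tpush G A \<pi> d \<mu>) U"
    then obtain F \<epsilon> where F: "finite F" "\<epsilon> > 0" "\<forall>f\<in>F. continuous_map (shift_top G A) euclideanreal f"
      "wstar_basic G A (Tpush G A \<pi> d \<mu>) F \<epsilon> \<subseteq> U"
      unfolding wstar_nbhd_def by blast
    have "finite ((\<lambda>f. f \<circ> T) ` F)" using F(1) by simp
    moreover have "\<forall>f'\<in>(\<lambda>f. f \<circ> T) ` F. continuous_map (shift_top Q A') euclideanreal f'"
      using F(3) by (auto intro: continuous_map_compose[OF Tmap_continuous])
    ultimately obtain \<nu> where nu: "\<nu> \<in> S" "\<nu> \<in> Prob_meas Q A'"
      "\<forall>f'\<in>(\<lambda>f. f \<circ> T) ` F. \<bar>integral\<^sup>L \<nu> f' - integral\<^sup>L \<mu> f'\<bar> < \<epsilon>"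
      using closure_approx[OF cl _ _ F(2)] by blast
    have "Tpush G A \<pi> d \<nu> \<in> wstar_basic G A (Tpush G A \<pi> d \<mu>) F \<epsilon>"
      unfolding wstar_basic_def
    proof (intro CollectI conjI ballI)
      show "Tpush G A \<pi> d \<nu> \<in> Prob_meas G A" by (rule Tpush_Prob[OF nu(2)])
      fix f assume f: "f \<in> F"
      then have fc: "continuous_map (shift_top G A) euclideanreal f" using F(3) by blast
      show "\<bar>integral\<^sup>L (Tpush G A \<pi> d \<nu>) f - integral\<^sup>L (Tpush G A \<pi> d \<mu>) f\<bar> < \<epsilon>"
        using nu(3) f int_eq[OF nu(2) fc] int_eq[OF mP fc] by auto
    qed
    then show "U \<inter> Tpush G A \<pi> d ` S \<noteq> {}" using F(4) nu(1) by blast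
  qed
qed

end

lemma closure_mono: "S \<subseteq> S' \<Longrightarrow> wstar_closure G A S \<subseteq> wstar_closure G A S'"
  unfolding wstar_closure_def by blast

lemma Tpush_comp:
  assumes "\<nu> \<in> Prob_meas Q A" "group Q" "group G" "\<pi> \<in> hom G Q"
    "e \<in> A \<rightarrow> A'" "d2 \<in> A' \<rightarrow> A" "\<And>a. a \<in> A \<Longrightarrow> d2 (e a) = a"
  shows "Tpush G A \<pi> d2 (Tpush Q A' (\<lambda>x. x) e \<nu>) = Phi_push G A \<pi> \<nu>"
proof -
  have idhom: "(\<lambda>x. x) \<in> hom Q Q" by (simp add: hom_def)
  interpret t1: transfer Q Q "\<lambda>x. x" e A A' by (rule transfer.intro[OF assms(2) assms(2) idhom assms(5)])
  interpret t2: transfer G Q \<pi> d2 A' A by (rule transfer.intro[OF assms(3) assms(2) assms(4) assms(6)])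
  have s: "sets \<nu> = sets (shift_space Q A)" using assms(1) by (auto simp: Prob_meas_def)
  have m1: "Tmap Q (\<lambda>x. x) e \<in> measurable \<nu> (shift_space Q A')"
    by (rule measurable_from_sets[OF s t1.Tmap_measurable])
  have "Tpush G A \<pi> d2 (Tpush Q A' (\<lambda>x. x) e \<nu>) = distr \<nu> (shift_space G A) (Tmap G \<pi> d2 \<circ> Tmap Q (\<lambda>x. x) e)"
    unfolding Tpush_def by (rule distr_distr[OF t2.Tmap_measurable m1])
  also have "\<dots> = distr \<nu> (shift_space G A) (Phi G \<pi>)"
  proof (rule distr_cong)
    fix \<omega> assume "\<omega> \<in> space \<nu>"
    then have w: "\<omega> \<in> PiE (carrier Q) (\<lambda>_. A)" using space_eq_shift[OF s] by simp
    show "(Tmap G \<pi> d2 \<circ> Tmap Q (\<lambda>x. x) e) \<omega> = Phi G \<pi> \<omega>"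
      using w t2.pi_closed assms(7) by (auto simp: Tmap_def Phi_def fun_eq_iff)
  qed simp_all
  finally show ?thesis by (simp add: Phi_push_def)
qed


definition dset :: "('g,'b) monoid_scheme \<Rightarrow> 'a set \<Rightarrow> 'g set \<Rightarrow> ('g \<Rightarrow> 'a) set \<Rightarrow> bool" where
  "dset G A J E \<longleftrightarrow> E \<subseteq> PiE (carrier G) (\<lambda>_. A) \<and>
     (\<forall>\<omega>\<in>E. \<forall>\<omega>'\<in>PiE (carrier G) (\<lambda>_. A). (\<forall>j\<in>J. \<omega> j = \<omega>' j) \<longrightarrow> \<omega>' \<in> E)"

lemma dset_open:
  assumes "finite J" "J \<subseteq> carrier G" "dset G A J E"
  shows "openin (shift_top G A) E"
proof (rule open_by_dep[OF assms(1,2)])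
  show "E \<subseteq> PiE (carrier G) (\<lambda>_. A)" using assms(3) by (simp add: dset_def)
  fix \<omega> \<omega>' assume "\<omega> \<in> E" "\<omega>' \<in> PiE (carrier G) (\<lambda>_. A)" "\<forall>j\<in>J. \<omega> j = \<omega>' j"
  then show "\<omega>' \<in> E" using assms(3) unfolding dset_def by blast
qed

lemma dset_sets:
  assumes "finite J" "J \<subseteq> carrier G" "dset G A J E" "countable (carrier G)" "countable A"
  shows "E \<in> sets (shift_space G A)"
  by (rule open_sets[OF assms(4,5) dset_open[OF assms(1-3)]])

lemma dset_indicator_cont:
  assumes "finite J" "J \<subseteq> carrier G" "dset G A J E"
  shows "continuous_map (shift_top G A) euclideanreal (indicator E :: _ \<Rightarrow> real)"
proof (rule dep_continuous[OF assms(1,2)])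
  show "dep G A J (indicator E :: _ \<Rightarrow> real)"
    unfolding dep_def
  proof (intro ballI impI)
    fix \<omega> \<omega>' assume w: "\<omega> \<in> PiE (carrier G) (\<lambda>_. A)" "\<omega>' \<in> PiE (carrier G) (\<lambda>_. A)"
      and ag: "\<forall>j\<in>J. \<omega> j = \<omega>' j"
    have ag': "\<forall>j\<in>J. \<omega>' j = \<omega> j" using ag by simp
    have "\<omega> \<in> E \<longleftrightarrow> \<omega>' \<in> E"
    proof
      assume "\<omega> \<in> E" then show "\<omega>' \<in> E" using assms(3) w(2) ag unfolding dset_def by blast
    next
      assume "\<omega>' \<in> E" then show "\<omega> \<in> E" using assms(3) w(1) ag' unfolding dset_def by blast
    qed
    then show "(indicator E \<omega> :: real) = indicator E \<omega>'" by (simp add: indicator_def)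
  qed
qed

lemma integral_indicator_X:
  assumes "sets \<nu> = sets (shift_space G A)" "E \<subseteq> PiE (carrier G) (\<lambda>_. A)"
  shows "integral\<^sup>L \<nu> (indicator E :: _ \<Rightarrow> real) = measure \<nu> E"
proof -
  have "E \<inter> space \<nu> = E" using assms space_eq_shift[OF assms(1)] by auto
  then show ?thesis by (simp add: integral_indicator)
qed

lemma closure_measure_eq:
  assumes cl: "\<mu> \<in> wstar_closure G A S" and J: "finite J" "J \<subseteq> carrier G"
    and E: "dset G A J E" "dset G A J E'"
    and hyp: "\<And>\<nu>. \<nu> \<in> S \<Longrightarrow> \<nu> \<in> Prob_meas G A \<Longrightarrow> measure \<nu> E = measure \<nu> E'"
  shows "measure \<mu> E = measure \<mu> E'"
proof (rule ccontr)
  assume ne: "measure \<mu> E \<noteq> measure \<mu> E'"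
  define \<epsilon> where "\<epsilon> = \<bar>measure \<mu> E - measure \<mu> E'\<bar> / 2"
  have \<epsilon>: "\<epsilon> > 0" using ne by (simp add: \<epsilon>_def)
  have EX: "E \<subseteq> PiE (carrier G) (\<lambda>_. A)" "E' \<subseteq> PiE (carrier G) (\<lambda>_. A)" using E by (auto simp: dset_def)
  have mP: "\<mu> \<in> Prob_meas G A" using cl by (simp add: wstar_closure_def)
  then have ms: "sets \<mu> = sets (shift_space G A)" by (simp add: Prob_meas_def)
  let ?F = "{indicator E :: _ \<Rightarrow> real, indicator E'}"
  have "finite ?F" by simp
  moreover have "\<forall>f\<in>?F. continuous_map (shift_top G A) euclideanreal f"
    using dset_indicator_cont[OF J E(1)] dset_indicator_cont[OF J E(2)] by auto
  ultimately obtain \<nu> where nu: "\<nu> \<in> S" "\<nu> \<in> Prob_meas G A"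
    "\<forall>f\<in>?F. \<bar>integral\<^sup>L \<nu> f - integral\<^sup>L \<mu> f\<bar> < \<epsilon>"
    using closure_approx[OF cl _ _ \<epsilon>] by blast
  have ns: "sets \<nu> = sets (shift_space G A)" using nu(2) by (simp add: Prob_meas_def)
  have 1: "\<bar>measure \<nu> E - measure \<mu> E\<bar> < \<epsilon>"
  proof -
    have "\<bar>integral\<^sup>L \<nu> (indicator E :: _ \<Rightarrow> real) - integral\<^sup>L \<mu> (indicator E)\<bar> < \<epsilon>" using nu(3) by blast
    then show ?thesis unfolding integral_indicator_X[OF ns EX(1)] integral_indicator_X[OF ms EX(1)] .
  qed
  have 2: "\<bar>measure \<nu> E' - measure \<mu> E'\<bar> < \<epsilon>"
  proof -
    have "\<bar>integral\<^sup>L \<nu> (indicator E' :: _ \<Rightarrow> real) - integral\<^sup>L \<mu> (indicator E')\<bar> < \<epsilon>" using nu(3) by blast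
    then show ?thesis unfolding integral_indicator_X[OF ns EX(2)] integral_indicator_X[OF ms EX(2)] .
  qed
  have 3: "measure \<nu> E = measure \<nu> E'" by (rule hyp[OF nu(1,2)])
  show False using 1 2 3 \<epsilon>_def unfolding abs_real_def by (auto split: if_splits)
qed

section \<open>Periodic measures are invariant under the residual subgroup\<close>

lemma periodic_residual:
  assumes G: "group G" and cG: "countable (carrier G)" and cA: "countable A"
    and per: "\<nu> \<in> periodic_meas G A" and w: "\<omega> \<in> msupport G A \<nu>"
    and r: "r \<in> residual G" and g: "g \<in> carrier G"
  shows "\<omega> (g \<otimes>\<^bsub>G\<^esub> r) = \<omega> g"
proof -
  let ?S = "msupport G A \<nu>"
  have inv: "\<nu> \<in> InvProb G A" and finS: "finite ?S" using per by (auto simp: periodic_meas_def)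
  have SX: "?S \<subseteq> PiE (carrier G) (\<lambda>_. A)" by (auto simp: msupport_def)
  have Sinv: "\<And>x h. x \<in> ?S \<Longrightarrow> h \<in> carrier G \<Longrightarrow> shift G h x \<in> ?S"
    by (rule msupport_shift[OF G cG cA inv])
  define N where "N = {a \<in> carrier G. \<forall>x\<in>?S. shift G a x = x}"
  have sub: "subgroup N G"
  proof (rule group.subgroupI[OF G])
    show "N \<subseteq> carrier G" by (auto simp: N_def)
    have one: "\<one>\<^bsub>G\<^esub> \<in> carrier G" using G by (simp add: group.is_monoid monoid.one_closed)
    have "\<forall>x\<in>?S. shift G \<one>\<^bsub>G\<^esub> x = x"
    proof
      fix x assume "x \<in> ?S"
      then have "x \<in> PiE (carrier G) (\<lambda>_. A)" using SX by blast
      then show "shift G \<one>\<^bsub>G\<^esub> x = x" by (rule shift_one[OF G])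
    qed
    then have "\<one>\<^bsub>G\<^esub> \<in> N" using one unfolding N_def by blast
    then show "N \<noteq> {}" by blast
  next
    fix a assume a: "a \<in> N"
    then have ac: "a \<in> carrier G" unfolding N_def by blast
    have ia: "inv\<^bsub>G\<^esub> a \<in> carrier G" using G ac by (simp add: group.inv_closed)
    have "\<forall>x\<in>?S. shift G (inv\<^bsub>G\<^esub> a) x = x"
    proof
      fix x assume x: "x \<in> ?S"
      have xX: "x \<in> PiE (carrier G) (\<lambda>_. A)" using SX x by blast
      have "shift G a x = x" using a x unfolding N_def by blast
      then have "shift G (inv\<^bsub>G\<^esub> a) x = shift G (inv\<^bsub>G\<^esub> a) (shift G a x)" by simp
      also have "\<dots> = x" by (rule shift_inv[OF G ac xX])
      finally show "shift G (inv\<^bsub>G\<^esub> a) x = x" .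
    qed
    then show "inv\<^bsub>G\<^esub> a \<in> N" using ia unfolding N_def by blast
  next
    fix a b assume ab: "a \<in> N" "b \<in> N"
    then have abc: "a \<in> carrier G" "b \<in> carrier G" unfolding N_def by blast+
    have m: "a \<otimes>\<^bsub>G\<^esub> b \<in> carrier G" using abc G by (simp add: group.is_monoid monoid.m_closed)
    have "\<forall>x\<in>?S. shift G (a \<otimes>\<^bsub>G\<^esub> b) x = x"
    proof
      fix x assume x: "x \<in> ?S"
      have 1: "shift G b x = x" using ab(2) x unfolding N_def by blast
      have 2: "shift G a x = x" using ab(1) x unfolding N_def by blast
      have "shift G (a \<otimes>\<^bsub>G\<^esub> b) x = shift G a (shift G b x)" by (rule shift_mult[OF G abc, symmetric])
      then show "shift G (a \<otimes>\<^bsub>G\<^esub> b) x = x" using 1 2 by simp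
    qed
    then show "a \<otimes>\<^bsub>G\<^esub> b \<in> N" using m unfolding N_def by blast
  qed
  have nor: "N \<lhd> G"
    unfolding group.normal_inv_iff[OF G]
  proof (intro conjI sub ballI)
    fix x h assume x: "x \<in> carrier G" and h: "h \<in> N"
    have hc: "h \<in> carrier G" using h unfolding N_def by blast
    have ix: "inv\<^bsub>G\<^esub> x \<in> carrier G" using G x by (simp add: group.inv_closed)
    have xh: "x \<otimes>\<^bsub>G\<^esub> h \<in> carrier G" using G x hc by (simp add: group.is_monoid monoid.m_closed)
    have c: "x \<otimes>\<^bsub>G\<^esub> h \<otimes>\<^bsub>G\<^esub> inv\<^bsub>G\<^esub> x \<in> carrier G" using G xh ix by (simp add: group.is_monoid monoid.m_closed)
    have "\<forall>y\<in>?S. shift G (x \<otimes>\<^bsub>G\<^esub> h \<otimes>\<^bsub>G\<^esub> inv\<^bsub>G\<^esub> x) y = y"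
    proof
      fix y assume y: "y \<in> ?S"
      have yX: "y \<in> PiE (carrier G) (\<lambda>_. A)" using SX y by blast
      have yi: "shift G (inv\<^bsub>G\<^esub> x) y \<in> ?S" by (rule Sinv[OF y ix])
      have hh: "shift G h (shift G (inv\<^bsub>G\<^esub> x) y) = shift G (inv\<^bsub>G\<^esub> x) y"
        using h yi unfolding N_def by blast
      have "shift G (x \<otimes>\<^bsub>G\<^esub> h \<otimes>\<^bsub>G\<^esub> inv\<^bsub>G\<^esub> x) y = shift G x (shift G h (shift G (inv\<^bsub>G\<^esub> x) y))"
        by (simp only: shift_mult[OF G x hc] shift_mult[OF G xh ix])
      also have "\<dots> = shift G x (shift G (inv\<^bsub>G\<^esub> x) y)" by (simp only: hh)
      also have "\<dots> = y" by (rule shift_inv'[OF G x yX])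
      finally show "shift G (x \<otimes>\<^bsub>G\<^esub> h \<otimes>\<^bsub>G\<^esub> inv\<^bsub>G\<^esub> x) y = y" .
    qed
    then show "x \<otimes>\<^bsub>G\<^esub> h \<otimes>\<^bsub>G\<^esub> inv\<^bsub>G\<^esub> x \<in> N" using c unfolding N_def by blast
  qed
  define rr where "rr = (\<lambda>a. restrict (\<lambda>x. shift G a x) ?S)"
  have key: "N #>\<^bsub>G\<^esub> a = N #>\<^bsub>G\<^esub> b" if ab: "a \<in> carrier G" "b \<in> carrier G" "rr a = rr b" for a b
  proof -
    have ia: "inv\<^bsub>G\<^esub> a \<in> carrier G" using G ab by (simp add: group.inv_closed)
    have bia: "b \<otimes>\<^bsub>G\<^esub> inv\<^bsub>G\<^esub> a \<in> carrier G" using G ab ia by (simp add: group.is_monoid monoid.m_closed)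
    have "\<forall>y\<in>?S. shift G (b \<otimes>\<^bsub>G\<^esub> inv\<^bsub>G\<^esub> a) y = y"
    proof
      fix y assume y: "y \<in> ?S"
      have yX: "y \<in> PiE (carrier G) (\<lambda>_. A)" using SX y by blast
      have z: "shift G (inv\<^bsub>G\<^esub> a) y \<in> ?S" by (rule Sinv[OF y ia])
      have "rr b (shift G (inv\<^bsub>G\<^esub> a) y) = rr a (shift G (inv\<^bsub>G\<^esub> a) y)" using ab(3) by simp
      then have e: "shift G b (shift G (inv\<^bsub>G\<^esub> a) y) = shift G a (shift G (inv\<^bsub>G\<^esub> a) y)"
        using z unfolding rr_def by simp
      have "shift G (b \<otimes>\<^bsub>G\<^esub> inv\<^bsub>G\<^esub> a) y = shift G b (shift G (inv\<^bsub>G\<^esub> a) y)"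
        by (rule shift_mult[OF G ab(2) ia, symmetric])
      also have "\<dots> = shift G a (shift G (inv\<^bsub>G\<^esub> a) y)" by (rule e)
      also have "\<dots> = y" by (rule shift_inv'[OF G ab(1) yX])
      finally show "shift G (b \<otimes>\<^bsub>G\<^esub> inv\<^bsub>G\<^esub> a) y = y" .
    qed
    then have bN: "b \<otimes>\<^bsub>G\<^esub> inv\<^bsub>G\<^esub> a \<in> N" using bia unfolding N_def by blast
    have "(b \<otimes>\<^bsub>G\<^esub> inv\<^bsub>G\<^esub> a) \<otimes>\<^bsub>G\<^esub> a = b \<otimes>\<^bsub>G\<^esub> (inv\<^bsub>G\<^esub> a \<otimes>\<^bsub>G\<^esub> a)"
      using G ab ia by (simp add: group.is_monoid monoid.m_assoc)
    also have "\<dots> = b" using G ab by (simp add: group.l_inv group.is_monoid monoid.r_one)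
    finally have "b = (b \<otimes>\<^bsub>G\<^esub> inv\<^bsub>G\<^esub> a) \<otimes>\<^bsub>G\<^esub> a" by simp
    then have "b \<in> N #>\<^bsub>G\<^esub> a" using bN unfolding r_coset_def by blast
    then show ?thesis by (rule group.repr_independence[OF G _ ab(1) sub])
  qed
  have fin: "finite (rcosets\<^bsub>G\<^esub> N)"
  proof -
    define ch where "ch = (\<lambda>k. SOME a. a \<in> carrier G \<and> rr a = k)"
    have "rcosets\<^bsub>G\<^esub> N \<subseteq> (\<lambda>k. N #>\<^bsub>G\<^esub> ch k) ` (rr ` carrier G)"
    proof
      fix C assume "C \<in> rcosets\<^bsub>G\<^esub> N"
      then obtain a where a: "a \<in> carrier G" "C = N #>\<^bsub>G\<^esub> a" unfolding RCOSETS_def by blast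
      have "\<exists>a'. a' \<in> carrier G \<and> rr a' = rr a" using a by blast
      then have "ch (rr a) \<in> carrier G \<and> rr (ch (rr a)) = rr a"
        unfolding ch_def by (rule someI_ex)
      then have c: "ch (rr a) \<in> carrier G" "rr (ch (rr a)) = rr a" by blast+
      have "C = N #>\<^bsub>G\<^esub> ch (rr a)" using key[OF a(1) c(1) c(2)[symmetric]] a by simp
      then show "C \<in> (\<lambda>k. N #>\<^bsub>G\<^esub> ch k) ` (rr ` carrier G)" using a by blast
    qed
    moreover have "finite (rr ` carrier G)"
    proof (rule finite_subset)
      show "rr ` carrier G \<subseteq> PiE ?S (\<lambda>_. ?S)"
      proof
        fix k assume "k \<in> rr ` carrier G"
        then obtain a where a: "a \<in> carrier G" "k = rr a" by blast
        show "k \<in> PiE ?S (\<lambda>_. ?S)" unfolding a(2) rr_def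
        proof (rule PiE_I)
          fix x assume "x \<in> ?S" then show "restrict (\<lambda>x. shift G a x) ?S x \<in> ?S" using Sinv[OF _ a(1)] by simp
        qed simp
      qed
      show "finite (PiE ?S (\<lambda>_. ?S))" using finS by (simp add: finite_PiE)
    qed
    ultimately show ?thesis using finite_subset finite_imageI by blast
  qed
  have NN: "N \<in> {N. N \<lhd> G \<and> finite (rcosets\<^bsub>G\<^esub> N)}" using nor fin by simp
  have "r \<in> \<Inter>{N. N \<lhd> G \<and> finite (rcosets\<^bsub>G\<^esub> N)}" using r by (simp add: residual_def)
  then have "r \<in> N" using NN by (rule InterD)
  moreover have "\<omega> \<in> ?S" by (rule w)
  ultimately have "shift G r \<omega> = \<omega>" by (simp add: N_def)
  then have "shift G r \<omega> g = \<omega> g" by simp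
  then show ?thesis using g by (simp add: shift_def)
qed

lemma periodic_AE_res:
  assumes G: "group G" and cG: "countable (carrier G)" and cA: "countable A"
    and per: "\<nu> \<in> periodic_meas G A"
  shows "AE \<omega> in \<nu>. \<forall>g\<in>carrier G. \<forall>r\<in>residual G. \<omega> (g \<otimes>\<^bsub>G\<^esub> r) = \<omega> g"
proof -
  have s: "sets \<nu> = sets (shift_space G A)" using per by (simp add: periodic_meas_def InvProb_def Prob_meas_def)
  show ?thesis
  proof (rule AE_mp[OF AE_msupport[OF cG cA s] AE_I2])
    fix x assume "x \<in> space \<nu>"
    show "x \<in> msupport G A \<nu> \<longrightarrow> (\<forall>g\<in>carrier G. \<forall>r\<in>residual G. x (g \<otimes>\<^bsub>G\<^esub> r) = x g)"
    proof (intro impI ballI)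
      fix g r assume a: "x \<in> msupport G A \<nu>" "g \<in> carrier G" "r \<in> residual G"
      show "x (g \<otimes>\<^bsub>G\<^esub> r) = x g" by (rule periodic_residual[OF G cG cA per a(1) a(3) a(2)])
    qed
  qed
qed


lemma prod_emb_eq:
  assumes "J \<subseteq> carrier G"
  shows "prod_emb (carrier G) (\<lambda>_. count_space A) J (PiE J F) = {\<omega> \<in> PiE (carrier G) (\<lambda>_. A). \<forall>j\<in>J. \<omega> j \<in> F j}"
  using assms by (auto simp: prod_emb_def PiE_iff extensional_def)

lemma closure_invariant:
  assumes G: "group G" and cG: "countable (carrier G)" and fA: "finite A"
    and cl: "\<mu> \<in> wstar_closure G A S" and SI: "S \<subseteq> InvProb G A"
  shows "\<mu> \<in> InvProb G A"
proof -
  have mP: "\<mu> \<in> Prob_meas G A" using cl by (simp add: wstar_closure_def)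
  have ms: "sets \<mu> = sets (shift_space G A)" and mp: "prob_space \<mu>" using mP by (auto simp: Prob_meas_def)
  have cA: "countable A" using fA by (rule countable_finite)
  show ?thesis unfolding InvProb_def
  proof (intro CollectI conjI mP ballI)
    fix h assume h: "h \<in> carrier G"
    have mh: "shift G h \<in> measurable \<mu> (shift_space G A)"
      by (rule measurable_from_sets[OF ms shift_measurable[OF G h]])
    show "distr \<mu> (shift_space G A) (shift G h) = \<mu>"
    proof (rule measure_eqI_PiM_infinite[where I="carrier G" and M="\<lambda>_. count_space A"])
      show "sets (distr \<mu> (shift_space G A) (shift G h)) = sets (PiM (carrier G) (\<lambda>_. count_space A))"
        by (simp add: shift_space_def)
      show "sets \<mu> = sets (PiM (carrier G) (\<lambda>_. count_space A))" using ms by (simp add: shift_space_def)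
      show "finite_measure (distr \<mu> (shift_space G A) (shift G h))"
        using prob_space.prob_space_distr[OF mp mh] by (simp add: prob_space_def)
    next
      fix F J assume J: "finite J" "J \<subseteq> carrier G" and F: "\<And>i. i \<in> J \<Longrightarrow> F i \<in> sets (count_space A)"
      define P where "P = {\<omega> \<in> PiE (carrier G) (\<lambda>_. A). \<forall>j\<in>J. \<omega> j \<in> F j}"
      define P' where "P' = {\<omega> \<in> PiE (carrier G) (\<lambda>_. A). \<forall>j\<in>J. \<omega> (j \<otimes>\<^bsub>G\<^esub> h) \<in> F j}"
      define J' where "J' = J \<union> (\<lambda>j. j \<otimes>\<^bsub>G\<^esub> h) ` J"
      have J': "finite J'" "J' \<subseteq> carrier G" using J h G by (auto simp: J'_def group.is_monoid monoid.m_closed)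
      have dP: "dset G A J' P" unfolding dset_def P_def J'_def by auto
      have dP': "dset G A J' P'" unfolding dset_def P'_def J'_def by auto
      have Ps: "P \<in> sets (shift_space G A)" by (rule dset_sets[OF J' dP cG cA])
      have P's: "P' \<in> sets (shift_space G A)" by (rule dset_sets[OF J' dP' cG cA])
      have pre: "shift G h -` P \<inter> PiE (carrier G) (\<lambda>_. A) = P'"
      proof
        show "shift G h -` P \<inter> PiE (carrier G) (\<lambda>_. A) \<subseteq> P'"
          using J(2) by (auto simp: P_def P'_def shift_def)
        show "P' \<subseteq> shift G h -` P \<inter> PiE (carrier G) (\<lambda>_. A)"
        proof
          fix \<omega> assume w: "\<omega> \<in> P'"
          then have wX: "\<omega> \<in> PiE (carrier G) (\<lambda>_. A)" by (simp add: P'_def)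
          have "shift G h \<omega> \<in> PiE (carrier G) (\<lambda>_. A)" by (rule shift_in[OF G h wX])
          moreover have "\<forall>j\<in>J. shift G h \<omega> j \<in> F j" using w J(2) by (auto simp: P'_def shift_def)
          ultimately show "\<omega> \<in> shift G h -` P \<inter> PiE (carrier G) (\<lambda>_. A)" using wX by (simp add: P_def)
        qed
      qed
      have eqm: "measure \<mu> P = measure \<mu> P'"
      proof (rule closure_measure_eq[OF cl J' dP dP'])
        fix \<nu> assume "\<nu> \<in> S" "\<nu> \<in> Prob_meas G A"
        then have nI: "\<nu> \<in> InvProb G A" using SI by blast
        have "emeasure \<nu> P = emeasure \<nu> P'" using InvProb_emeasure[OF G nI h Ps] pre by simp
        then show "measure \<nu> P = measure \<nu> P'" by (simp add: measure_def)
      qed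
      have "prod_emb (carrier G) (\<lambda>_. count_space A) J (PiE J F) = P"
        unfolding P_def by (rule prod_emb_eq[OF J(2)])
      moreover have "emeasure (distr \<mu> (shift_space G A) (shift G h)) P = emeasure \<mu> P"
      proof -
        have "emeasure (distr \<mu> (shift_space G A) (shift G h)) P = emeasure \<mu> (shift G h -` P \<inter> space \<mu>)"
          by (rule emeasure_distr[OF mh Ps])
        also have "\<dots> = emeasure \<mu> P'" using pre space_eq_shift[OF ms] by simp
        also have "\<dots> = emeasure \<mu> P"
          using eqm finite_measure.emeasure_eq_measure[of \<mu>] mp by (simp add: prob_space_def)
        finally show ?thesis .
      qed
      ultimately show "emeasure (distr \<mu> (shift_space G A) (shift G h)) (prod_emb (carrier G) (\<lambda>_. count_space A) J (PiE J F)) =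
          emeasure \<mu> (prod_emb (carrier G) (\<lambda>_. count_space A) J (PiE J F))" by simp
    qed
  qed
qed

definition goodR :: "('g,'b) monoid_scheme \<Rightarrow> ('g \<Rightarrow> 'a) \<Rightarrow> bool" where
  "goodR G \<omega> \<longleftrightarrow> (\<forall>g\<in>carrier G. \<forall>r\<in>residual G. \<omega> (g \<otimes>\<^bsub>G\<^esub> r) = \<omega> g)"

lemma closure_AE_good:
  assumes G: "group G" and cG: "countable (carrier G)" and fA: "finite A"
    and cl: "\<mu> \<in> wstar_closure G A (periodic_meas G A)"
  shows "AE \<omega> in \<mu>. goodR G \<omega>"
proof -
  have mP: "\<mu> \<in> Prob_meas G A" using cl by (simp add: wstar_closure_def)
  have ms: "sets \<mu> = sets (shift_space G A)" and mp: "prob_space \<mu>" using mP by (auto simp: Prob_meas_def)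
  have cA: "countable A" using fA by (rule countable_finite)
  have resc: "residual G \<subseteq> carrier G" by (simp add: residual_def)
  have cR: "countable (residual G)" using cG resc by (rule countable_subset[rotated])
  have each: "AE \<omega> in \<mu>. \<omega> (g \<otimes>\<^bsub>G\<^esub> r) = \<omega> g" if g: "g \<in> carrier G" and r: "r \<in> residual G" for g r
  proof -
    define E where "E = {\<omega> \<in> PiE (carrier G) (\<lambda>_. A). \<omega> (g \<otimes>\<^bsub>G\<^esub> r) \<noteq> \<omega> g}"
    have gr: "g \<otimes>\<^bsub>G\<^esub> r \<in> carrier G" using G g r resc by (auto simp: group.is_monoid monoid.m_closed)
    have J: "finite {g, g \<otimes>\<^bsub>G\<^esub> r}" "{g, g \<otimes>\<^bsub>G\<^esub> r} \<subseteq> carrier G" using g gr by auto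
    have dE: "dset G A {g, g \<otimes>\<^bsub>G\<^esub> r} E" unfolding dset_def E_def by auto
    have d0: "dset G A {g, g \<otimes>\<^bsub>G\<^esub> r} {}" unfolding dset_def by auto
    have Es: "E \<in> sets (shift_space G A)" by (rule dset_sets[OF J dE cG cA])
    have "measure \<mu> E = measure \<mu> {}"
    proof (rule closure_measure_eq[OF cl J dE d0])
      fix \<nu> assume per: "\<nu> \<in> periodic_meas G A"
      have "AE \<omega> in \<nu>. \<not> \<omega> \<in> E"
        by (rule AE_mp[OF periodic_AE_res[OF G cG cA per] AE_I2]) (use g r in \<open>auto simp: E_def\<close>)
      then have "emeasure \<nu> {\<omega> \<in> space \<nu>. \<omega> \<in> E} = 0" by (rule emeasure_eq_0_AE)
      moreover have "{\<omega> \<in> space \<nu>. \<omega> \<in> E} = E"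
        using per space_eq_shift[of \<nu> G A] by (auto simp: periodic_meas_def InvProb_def Prob_meas_def E_def)
      ultimately show "measure \<nu> E = measure \<nu> {}" by (simp add: measure_def)
    qed
    then have "measure \<mu> E = 0" by simp
    then have "emeasure \<mu> E = 0"
      using finite_measure.emeasure_eq_measure[of \<mu> E] mp by (simp add: prob_space_def)
    then have "E \<in> null_sets \<mu>" using Es ms by (intro null_setsI) auto
    then show ?thesis
    proof (rule AE_I')
      show "{x \<in> space \<mu>. \<not> x (g \<otimes>\<^bsub>G\<^esub> r) = x g} \<subseteq> E" using space_eq_shift[OF ms] by (auto simp: E_def)
    qed
  qed
  have "AE \<omega> in \<mu>. \<forall>g\<in>carrier G. \<forall>r\<in>residual G. \<omega> (g \<otimes>\<^bsub>G\<^esub> r) = \<omega> g"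
    using cG cR each by (simp add: AE_ball_countable)
  then show ?thesis by (simp add: goodR_def)
qed

lemma goodR_eq:
  assumes G: "group G" and Q: "group Q" and hom: "\<pi> \<in> hom G Q" and ker: "kernel G Q \<pi> = residual G"
    and gd: "goodR G \<omega>" and a: "a \<in> carrier G" and b: "b \<in> carrier G" and ab: "\<pi> a = \<pi> b"
  shows "\<omega> a = \<omega> b"
proof -
  have gh: "group_hom G Q \<pi>" using G Q hom by (simp add: group_hom_def group_hom_axioms_def)
  define r where "r = inv\<^bsub>G\<^esub> a \<otimes>\<^bsub>G\<^esub> b"
  have ia: "inv\<^bsub>G\<^esub> a \<in> carrier G" using G a by (simp add: group.inv_closed)
  have rc: "r \<in> carrier G" using G ia b by (simp add: r_def group.is_monoid monoid.m_closed)
  have "\<pi> r = inv\<^bsub>Q\<^esub> (\<pi> a) \<otimes>\<^bsub>Q\<^esub> \<pi> b"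
    using hom ia b group_hom.hom_inv[OF gh a] by (simp add: r_def hom_mult)
  also have "\<dots> = \<one>\<^bsub>Q\<^esub>" using ab Q hom b by (simp add: group.l_inv hom_in_carrier)
  finally have "r \<in> kernel G Q \<pi>" using rc by (simp add: kernel_def)
  then have rR: "r \<in> residual G" using ker by simp
  have "a \<otimes>\<^bsub>G\<^esub> r = (a \<otimes>\<^bsub>G\<^esub> inv\<^bsub>G\<^esub> a) \<otimes>\<^bsub>G\<^esub> b"
    using G a ia b by (simp add: r_def group.is_monoid monoid.m_assoc)
  also have "\<dots> = b" using G a b by (simp add: group.r_inv group.is_monoid monoid.l_one)
  finally have "a \<otimes>\<^bsub>G\<^esub> r = b" .
  then show ?thesis using gd a rR unfolding goodR_def by metis
qed

lemma closure_periodic_image: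
  fixes G :: "('g,'b) monoid_scheme" and Q :: "('q,'c) monoid_scheme" and A :: "'a set"
  assumes G: "group G" and Q: "group Q" and hom: "\<pi> \<in> hom G Q" and surj: "\<pi> ` carrier G = carrier Q"
    and ker: "kernel G Q \<pi> = residual G" and cG: "countable (carrier G)" and fA: "finite A"
    and cl: "\<mu> \<in> wstar_closure G A (periodic_meas G A)"
  shows "\<mu> \<in> Phi_push G A \<pi> ` InvProb Q A"
proof -
  have mP: "\<mu> \<in> Prob_meas G A" using cl by (simp add: wstar_closure_def)
  have ms: "sets \<mu> = sets (shift_space G A)" and mp: "prob_space \<mu>" using mP by (auto simp: Prob_meas_def)
  have spm: "space \<mu> = PiE (carrier G) (\<lambda>_. A)" by (rule space_eq_shift[OF ms])
  have muI: "\<mu> \<in> InvProb G A"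
    by (rule closure_invariant[OF G cG fA cl]) (auto simp: periodic_meas_def)
  have ae: "AE \<omega> in \<mu>. goodR G \<omega>" by (rule closure_AE_good[OF G cG fA cl])
  define s where "s = (\<lambda>q. inv_into (carrier G) \<pi> q)"
  have s: "\<And>q. q \<in> carrier Q \<Longrightarrow> s q \<in> carrier G \<and> \<pi> (s q) = q"
    using surj unfolding s_def by (metis inv_into_into f_inv_into_f)
  define Psi where "Psi = (\<lambda>\<omega>::'g \<Rightarrow> 'a. \<lambda>q\<in>carrier Q. \<omega> (s q))"
  have Psim: "Psi \<in> measurable (shift_space G A) (shift_space Q A)"
    unfolding Psi_def shift_space_def
    by (intro measurable_restrict measurable_component_singleton) (use s in blast)
  have Psim': "Psi \<in> measurable \<mu> (shift_space Q A)" by (rule measurable_from_sets[OF ms Psim])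
  define \<eta> where "\<eta> = distr \<mu> (shift_space Q A) Psi"
  have etaP: "\<eta> \<in> Prob_meas Q A" unfolding \<eta>_def Prob_meas_def
    using prob_space.prob_space_distr[OF mp Psim'] by simp
  have etaI: "\<eta> \<in> InvProb Q A" unfolding InvProb_def
  proof (intro CollectI conjI etaP ballI)
    fix q assume q: "q \<in> carrier Q"
    define h where "h = s q"
    have h: "h \<in> carrier G" "\<pi> h = q" using s[OF q] by (auto simp: h_def)
    have mhG: "shift G h \<in> measurable \<mu> (shift_space G A)"
      by (rule measurable_from_sets[OF ms shift_measurable[OF G h(1)]])
    have "distr \<eta> (shift_space Q A) (shift Q q) = distr \<mu> (shift_space Q A) (shift Q q \<circ> Psi)"
      unfolding \<eta>_def by (rule distr_distr[OF shift_measurable[OF Q q] Psim'])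
    also have "\<dots> = distr \<mu> (shift_space Q A) (Psi \<circ> shift G h)"
    proof (rule distr_cong_AE[OF refl refl])
      show "AE x in \<mu>. (shift Q q \<circ> Psi) x = (Psi \<circ> shift G h) x"
      proof (rule AE_mp[OF ae AE_I2], rule impI)
        fix x assume x: "x \<in> space \<mu>" and gx: "goodR G x"
        show "(shift Q q \<circ> Psi) x = (Psi \<circ> shift G h) x"
        proof -
          have "x (s (q' \<otimes>\<^bsub>Q\<^esub> q)) = x (s q' \<otimes>\<^bsub>G\<^esub> h)" if q': "q' \<in> carrier Q" for q'
          proof (rule goodR_eq[OF G Q hom ker gx])
            have qq: "q' \<otimes>\<^bsub>Q\<^esub> q \<in> carrier Q" using Q q q' by (simp add: group.is_monoid monoid.m_closed)
            show "s (q' \<otimes>\<^bsub>Q\<^esub> q) \<in> carrier G" using s[OF qq] by blast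
            show "s q' \<otimes>\<^bsub>G\<^esub> h \<in> carrier G" using s[OF q'] h G by (simp add: group.is_monoid monoid.m_closed)
            show "\<pi> (s (q' \<otimes>\<^bsub>Q\<^esub> q)) = \<pi> (s q' \<otimes>\<^bsub>G\<^esub> h)"
              using s[OF qq] s[OF q'] h hom by (simp add: hom_mult)
          qed
          moreover have "\<And>q'. q' \<in> carrier Q \<Longrightarrow> q' \<otimes>\<^bsub>Q\<^esub> q \<in> carrier Q"
            using Q q by (simp add: group.is_monoid monoid.m_closed)
          ultimately show ?thesis using s by (auto simp: Psi_def shift_def fun_eq_iff)
        qed
      qed
      show "shift Q q \<circ> Psi \<in> measurable \<mu> (shift_space Q A)"
        by (rule measurable_comp[OF Psim' shift_measurable[OF Q q]])
      show "Psi \<circ> shift G h \<in> measurable \<mu> (shift_space Q A)"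
        by (rule measurable_comp[OF mhG Psim])
    qed
    also have "\<dots> = distr (distr \<mu> (shift_space G A) (shift G h)) (shift_space Q A) Psi"
      by (rule distr_distr[OF Psim mhG, symmetric])
    also have "distr \<mu> (shift_space G A) (shift G h) = \<mu>" using muI h by (simp add: InvProb_def)
    finally show "distr \<eta> (shift_space Q A) (shift Q q) = \<eta>" by (simp add: \<eta>_def)
  qed
  interpret tr: transfer G Q \<pi> "\<lambda>x. x" A A by (rule transfer.intro[OF G Q hom]) simp
  have PhiT: "Phi G \<pi> = Tmap G \<pi> (\<lambda>x. x)" by (simp add: Phi_def Tmap_def fun_eq_iff)
  have Phim: "Phi G \<pi> \<in> measurable (shift_space Q A) (shift_space G A)"
    unfolding PhiT by (rule tr.Tmap_measurable)
  have "Phi_push G A \<pi> \<eta> = distr \<mu> (shift_space G A) (Phi G \<pi> \<circ> Psi)"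
    unfolding Phi_push_def \<eta>_def by (rule distr_distr[OF Phim Psim'])
  also have "\<dots> = distr \<mu> (shift_space G A) (\<lambda>x. x)"
  proof (rule distr_cong_AE[OF refl refl])
    show "AE x in \<mu>. (Phi G \<pi> \<circ> Psi) x = x"
    proof (rule AE_mp[OF ae AE_I2], rule impI)
      fix x assume x: "x \<in> space \<mu>" and gx: "goodR G x"
      have xX: "x \<in> PiE (carrier G) (\<lambda>_. A)" using x spm by simp
      have "x (s (\<pi> g)) = x g" if g: "g \<in> carrier G" for g
      proof (rule goodR_eq[OF G Q hom ker gx])
        have pg: "\<pi> g \<in> carrier Q" using hom g by (simp add: hom_in_carrier)
        show "s (\<pi> g) \<in> carrier G" "g \<in> carrier G" "\<pi> (s (\<pi> g)) = \<pi> g" using s[OF pg] g by auto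
      qed
      moreover have "\<And>g. g \<in> carrier G \<Longrightarrow> \<pi> g \<in> carrier Q" using hom by (simp add: hom_in_carrier)
      ultimately show "(Phi G \<pi> \<circ> Psi) x = x"
        using xX by (auto simp: Phi_def Psi_def fun_eq_iff PiE_iff extensional_def)
    qed
    show "Phi G \<pi> \<circ> Psi \<in> measurable \<mu> (shift_space G A)" by (rule measurable_comp[OF Psim' Phim])
    show "(\<lambda>x. x) \<in> measurable \<mu> (shift_space G A)" using ms by (simp add: measurable_ident_sets)
  qed
  also have "\<dots> = \<mu>" by (rule distr_id2[OF ms[symmetric]])
  finally show ?thesis using etaI by blast
qed


definition Wset :: "('g,'b) monoid_scheme \<Rightarrow> 'a set \<Rightarrow> ('g \<Rightarrow> 'a) measure \<Rightarrow> (('g \<Rightarrow> 'a) \<Rightarrow> ('g \<Rightarrow> 'a)) set" where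
  "Wset G A \<nu> = (\<lambda>g. restrict (shift G g) (msupport G A \<nu>)) ` carrier G"

definition bet :: "('g,'b) monoid_scheme \<Rightarrow> 'a set \<Rightarrow> ('g \<Rightarrow> 'a) measure \<Rightarrow> nat \<Rightarrow> (('g \<Rightarrow> 'a) \<Rightarrow> ('g \<Rightarrow> 'a))" where
  "bet G A \<nu> = (SOME \<beta>. bij_betw \<beta> {0..<card (Wset G A \<nu>)} (Wset G A \<nu>))"

definition xrep :: "('g,'b) monoid_scheme \<Rightarrow> 'a set \<Rightarrow> ('g \<Rightarrow> 'a) measure \<Rightarrow> nat \<Rightarrow> 'g" where
  "xrep G A \<nu> i = (SOME x. x \<in> carrier G \<and> bet G A \<nu> i = restrict (shift G x) (msupport G A \<nu>))"

definition actW :: "('g,'b) monoid_scheme \<Rightarrow> 'a set \<Rightarrow> ('g \<Rightarrow> 'a) measure \<Rightarrow> 'g \<Rightarrow> (('g \<Rightarrow> 'a) \<Rightarrow> ('g \<Rightarrow> 'a)) \<Rightarrow> (('g \<Rightarrow> 'a) \<Rightarrow> ('g \<Rightarrow> 'a))" where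
  "actW G A \<nu> g w = restrict (\<lambda>\<omega>. shift G g (w \<omega>)) (msupport G A \<nu>)"

definition tau :: "('g,'b) monoid_scheme \<Rightarrow> 'a set \<Rightarrow> ('g \<Rightarrow> 'a) measure \<Rightarrow> 'g \<Rightarrow> nat \<Rightarrow> nat" where
  "tau G A \<nu> g i = inv_into {0..<card (Wset G A \<nu>)} (bet G A \<nu>) (actW G A \<nu> g (bet G A \<nu> i))"

definition Vc :: "('g,'b) monoid_scheme \<Rightarrow> 'a set \<Rightarrow> ('g \<Rightarrow> 'a) measure \<Rightarrow> nat set \<Rightarrow> nat set" where
  "Vc G A \<nu> V' = prod_encode ` (V' \<times> {0..<card (Wset G A \<nu>)})"

definition sc :: "('g,'b) monoid_scheme \<Rightarrow> 'a set \<Rightarrow> ('g \<Rightarrow> 'a) measure \<Rightarrow> ('g \<Rightarrow> nat \<Rightarrow> nat) \<Rightarrow> 'g \<Rightarrow> nat \<Rightarrow> nat" where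
  "sc G A \<nu> \<sigma>' g n = prod_encode (\<sigma>' g (fst (prod_decode n)), tau G A \<nu> g (snd (prod_decode n)))"

definition rho :: "('g,'b) monoid_scheme \<Rightarrow> 'a set \<Rightarrow> ('g \<Rightarrow> 'a) measure \<Rightarrow> nat set \<Rightarrow> ('g \<Rightarrow> 'a) \<Rightarrow> (nat \<Rightarrow> 'a)" where
  "rho G A \<nu> V' \<omega> = (\<lambda>n\<in>Vc G A \<nu> V'. \<omega> (xrep G A \<nu> (snd (prod_decode n))))"

definition Mc :: "('g,'b) monoid_scheme \<Rightarrow> 'a set \<Rightarrow> ('g \<Rightarrow> 'a) measure \<Rightarrow> nat set \<Rightarrow> (nat \<Rightarrow> 'a) measure" where
  "Mc G A \<nu> V' = distr \<nu> (PiM (Vc G A \<nu> V') (\<lambda>_. count_space A)) (rho G A \<nu> V')"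

locale percons =
  fixes G :: "('g,'b) monoid_scheme" and A :: "'a set" and \<nu> :: "('g \<Rightarrow> 'a) measure"
  assumes G: "group G" and cG: "countable (carrier G)" and fA: "finite A"
    and per: "\<nu> \<in> periodic_meas G A"
begin

abbreviation "S \<equiv> msupport G A \<nu>"
abbreviation "W \<equiv> Wset G A \<nu>"
abbreviation "m \<equiv> card (Wset G A \<nu>)"
abbreviation "\<beta> \<equiv> bet G A \<nu>"
abbreviation "XX \<equiv> PiE (carrier G) (\<lambda>_. A)"

lemma cA: "countable A" using fA by (rule countable_finite)
lemma inv: "\<nu> \<in> InvProb G A" using per by (simp add: periodic_meas_def)
lemma finS: "finite S" using per by (simp add: periodic_meas_def)
lemma SX: "S \<subseteq> XX" by (auto simp: msupport_def)
lemma ns: "sets \<nu> = sets (shift_space G A)" using inv by (simp add: InvProb_def Prob_meas_def)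
lemma np: "prob_space \<nu>" using inv by (simp add: InvProb_def Prob_meas_def)
lemma nsp: "space \<nu> = XX" by (rule space_eq_shift[OF ns])
lemma Sinv: "\<omega> \<in> S \<Longrightarrow> g \<in> carrier G \<Longrightarrow> shift G g \<omega> \<in> S"
  by (rule msupport_shift[OF G cG cA inv])
lemma aeS: "AE \<omega> in \<nu>. \<omega> \<in> S" by (rule AE_msupport[OF cG cA ns])

lemma one_c: "\<one>\<^bsub>G\<^esub> \<in> carrier G" using G by (simp add: group.is_monoid monoid.one_closed)
lemma mult_c: "a \<in> carrier G \<Longrightarrow> b \<in> carrier G \<Longrightarrow> a \<otimes>\<^bsub>G\<^esub> b \<in> carrier G"
  using G by (simp add: group.is_monoid monoid.m_closed)
lemma inv_c: "a \<in> carrier G \<Longrightarrow> inv\<^bsub>G\<^esub> a \<in> carrier G"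
  using G by (simp add: group.inv_closed)

lemma W_sub: "W \<subseteq> PiE S (\<lambda>_. S)"
proof
  fix w assume "w \<in> W"
  then obtain g where g: "g \<in> carrier G" "w = restrict (shift G g) S" by (auto simp: Wset_def)
  show "w \<in> PiE S (\<lambda>_. S)" unfolding g(2)
  proof (rule PiE_I)
    fix x assume "x \<in> S" then show "restrict (shift G g) S x \<in> S" using Sinv[OF _ g(1)] by simp
  qed simp
qed

lemma finW: "finite W"
  by (rule finite_subset[OF W_sub]) (simp add: finite_PiE finS)

lemma m_pos: "m > 0"
proof -
  have "restrict (shift G \<one>\<^bsub>G\<^esub>) S \<in> W" using one_c by (auto simp: Wset_def)
  then have "W \<noteq> {}" by blast
  then show ?thesis using finW by (simp add: card_gt_0_iff)
qed

lemma bet_bij: "bij_betw \<beta> {0..<m} W"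
proof -
  have "\<exists>\<beta>. bij_betw \<beta> {0..<m} W" using ex_bij_betw_nat_finite[OF finW] .
  then show ?thesis unfolding bet_def by (rule someI_ex)
qed

lemma bet_in: "i < m \<Longrightarrow> \<beta> i \<in> W"
  using bet_bij by (auto simp: bij_betw_def)

lemma xrep: assumes "i < m"
  shows "xrep G A \<nu> i \<in> carrier G" "\<beta> i = restrict (shift G (xrep G A \<nu> i)) S"
proof -
  have "\<exists>x. x \<in> carrier G \<and> \<beta> i = restrict (shift G x) S"
    using bet_in[OF assms] by (auto simp: Wset_def)
  then have "xrep G A \<nu> i \<in> carrier G \<and> \<beta> i = restrict (shift G (xrep G A \<nu> i)) S"
    unfolding xrep_def by (rule someI_ex)
  then show "xrep G A \<nu> i \<in> carrier G" "\<beta> i = restrict (shift G (xrep G A \<nu> i)) S" by blast+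
qed

lemma act_restrict:
  assumes "g \<in> carrier G" "x \<in> carrier G"
  shows "actW G A \<nu> g (restrict (shift G x) S) = restrict (shift G (g \<otimes>\<^bsub>G\<^esub> x)) S"
  using assms by (auto simp: actW_def fun_eq_iff shift_mult[OF G])

lemma act_W: assumes "g \<in> carrier G" "w \<in> W" shows "actW G A \<nu> g w \<in> W"
proof -
  obtain x where x: "x \<in> carrier G" "w = restrict (shift G x) S" using assms(2) by (auto simp: Wset_def)
  show ?thesis unfolding x(2) act_restrict[OF assms(1) x(1)] using mult_c[OF assms(1) x(1)]
    by (auto simp: Wset_def)
qed

lemma act_mult:
  assumes "g \<in> carrier G" "h \<in> carrier G" "w \<in> W"
  shows "actW G A \<nu> g (actW G A \<nu> h w) = actW G A \<nu> (g \<otimes>\<^bsub>G\<^esub> h) w"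
proof -
  obtain x where x: "x \<in> carrier G" "w = restrict (shift G x) S" using assms(3) by (auto simp: Wset_def)
  show ?thesis unfolding x(2) using assms x
    by (simp add: act_restrict mult_c G group.is_monoid monoid.m_assoc)
qed

lemma act_one:
  assumes "w \<in> W" shows "actW G A \<nu> \<one>\<^bsub>G\<^esub> w = w"
proof -
  obtain x where x: "x \<in> carrier G" "w = restrict (shift G x) S" using assms by (auto simp: Wset_def)
  show ?thesis unfolding x(2) using x one_c
    by (simp add: act_restrict G group.is_monoid monoid.l_one)
qed

lemma act_bij: assumes g: "g \<in> carrier G" shows "bij_betw (actW G A \<nu> g) W W"
proof (rule bij_betw_byWitness[where f'="actW G A \<nu> (inv\<^bsub>G\<^esub> g)"])
  show "\<forall>a\<in>W. actW G A \<nu> (inv\<^bsub>G\<^esub> g) (actW G A \<nu> g a) = a"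
    using g by (simp add: act_mult inv_c G group.l_inv act_one)
  show "\<forall>a\<in>W. actW G A \<nu> g (actW G A \<nu> (inv\<^bsub>G\<^esub> g) a) = a"
    using g by (simp add: act_mult inv_c G group.r_inv act_one)
  show "actW G A \<nu> g ` W \<subseteq> W" using act_W[OF g] by blast
  show "actW G A \<nu> (inv\<^bsub>G\<^esub> g) ` W \<subseteq> W" using act_W[OF inv_c[OF g]] by blast
qed

lemma tau_in: assumes "g \<in> carrier G" "i < m"
  shows "tau G A \<nu> g i < m" "\<beta> (tau G A \<nu> g i) = actW G A \<nu> g (\<beta> i)"
proof -
  have aw: "actW G A \<nu> g (\<beta> i) \<in> W" by (rule act_W[OF assms(1) bet_in[OF assms(2)]])
  have "tau G A \<nu> g i \<in> {0..<m}" unfolding tau_def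
    using bij_betw_inv_into[OF bet_bij] aw by (auto simp: bij_betw_def)
  then show "tau G A \<nu> g i < m" by simp
  show "\<beta> (tau G A \<nu> g i) = actW G A \<nu> g (\<beta> i)" unfolding tau_def
    by (rule bij_betw_inv_into_right[OF bet_bij aw])
qed

lemma tau_mult: assumes "g \<in> carrier G" "h \<in> carrier G" "i < m"
  shows "tau G A \<nu> g (tau G A \<nu> h i) = tau G A \<nu> (g \<otimes>\<^bsub>G\<^esub> h) i"
proof -
  have "tau G A \<nu> g (tau G A \<nu> h i) = inv_into {0..<m} \<beta> (actW G A \<nu> g (actW G A \<nu> h (\<beta> i)))"
    unfolding tau_def[of G A \<nu> g] using tau_in(2)[OF assms(2,3)] by simp
  also have "\<dots> = inv_into {0..<m} \<beta> (actW G A \<nu> (g \<otimes>\<^bsub>G\<^esub> h) (\<beta> i))"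
    using act_mult[OF assms(1,2) bet_in[OF assms(3)]] by simp
  finally show ?thesis by (simp add: tau_def)
qed

lemma tau_bij: assumes g: "g \<in> carrier G" shows "bij_betw (tau G A \<nu> g) {0..<m} {0..<m}"
proof -
  have "bij_betw (inv_into {0..<m} \<beta> \<circ> (actW G A \<nu> g \<circ> \<beta>)) {0..<m} {0..<m}"
    by (intro bij_betw_trans[OF bij_betw_trans[OF bet_bij act_bij[OF g]] bij_betw_inv_into[OF bet_bij]])
  moreover have "inv_into {0..<m} \<beta> \<circ> (actW G A \<nu> g \<circ> \<beta>) = tau G A \<nu> g"
    by (simp add: tau_def fun_eq_iff)
  ultimately show ?thesis by simp
qed

end


locale percons2 = percons G A \<nu> for G :: "('g,'b) monoid_scheme" and A :: "'a set" and \<nu> +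
  fixes V' :: "nat set" and \<sigma>' :: "'g \<Rightarrow> nat \<Rightarrow> nat"
  assumes finV: "finite V'" and bijV: "\<And>g. g \<in> carrier G \<Longrightarrow> bij_betw (\<sigma>' g) V' V'"
begin

abbreviation "V \<equiv> Vc G A \<nu> V'"
abbreviation "\<sigma> \<equiv> sc G A \<nu> \<sigma>'"

lemma sigV: "g \<in> carrier G \<Longrightarrow> v \<in> V' \<Longrightarrow> \<sigma>' g v \<in> V'"
  using bijV by (auto simp: bij_betw_def)

lemma V_mem: "prod_encode (v, i) \<in> V \<longleftrightarrow> v \<in> V' \<and> i < m"
  using inj_prod_encode[of UNIV] by (auto simp: Vc_def inj_on_def)

lemma V_dec: "n \<in> V \<Longrightarrow> fst (prod_decode n) \<in> V' \<and> snd (prod_decode n) < m"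
  by (auto simp: Vc_def prod_encode_inverse)

lemma V_fin: "finite V" using finV by (simp add: Vc_def)

lemma card_enc: "card (prod_encode ` (B \<times> C)) = card B * card C"
  using inj_prod_encode[of "B \<times> C"] by (simp add: card_image card_cartesian_product)

lemma V_card: "card V = card V' * m"
  unfolding Vc_def by (simp add: card_enc)

lemma sc_enc: "\<sigma> g (prod_encode (v, i)) = prod_encode (\<sigma>' g v, tau G A \<nu> g i)"
  by (simp add: sc_def prod_encode_inverse)

lemma sc_in: "g \<in> carrier G \<Longrightarrow> n \<in> V \<Longrightarrow> \<sigma> g n \<in> V"
  using V_dec[of n] sigV tau_in(1) by (auto simp: sc_def V_mem)

lemma sc_bij: assumes g: "g \<in> carrier G" shows "bij_betw (\<sigma> g) V V"
proof (rule bij_betw_byWitness[where f'="\<lambda>n. prod_encode (inv_into V' (\<sigma>' g) (fst (prod_decode n)),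
           inv_into {0..<m} (tau G A \<nu> g) (snd (prod_decode n)))"])
  have b1: "bij_betw (\<sigma>' g) V' V'" by (rule bijV[OF g])
  have b2: "bij_betw (tau G A \<nu> g) {0..<m} {0..<m}" by (rule tau_bij[OF g])
  show "\<forall>a\<in>V. prod_encode (inv_into V' (\<sigma>' g) (fst (prod_decode (\<sigma> g a))),
           inv_into {0..<m} (tau G A \<nu> g) (snd (prod_decode (\<sigma> g a)))) = a"
  proof
    fix a assume a: "a \<in> V"
    have d: "fst (prod_decode a) \<in> V'" "snd (prod_decode a) \<in> {0..<m}" using V_dec[OF a] by auto
    show "prod_encode (inv_into V' (\<sigma>' g) (fst (prod_decode (\<sigma> g a))),
           inv_into {0..<m} (tau G A \<nu> g) (snd (prod_decode (\<sigma> g a)))) = a"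
      using bij_betw_inv_into_left[OF b1 d(1)] bij_betw_inv_into_left[OF b2 d(2)]
      by (simp add: sc_def prod_encode_inverse prod_decode_inverse)
  qed
  show "\<forall>a\<in>V. \<sigma> g (prod_encode (inv_into V' (\<sigma>' g) (fst (prod_decode a)),
           inv_into {0..<m} (tau G A \<nu> g) (snd (prod_decode a)))) = a"
  proof
    fix a assume a: "a \<in> V"
    have d: "fst (prod_decode a) \<in> V'" "snd (prod_decode a) \<in> {0..<m}" using V_dec[OF a] by auto
    show "\<sigma> g (prod_encode (inv_into V' (\<sigma>' g) (fst (prod_decode a)),
           inv_into {0..<m} (tau G A \<nu> g) (snd (prod_decode a)))) = a"
      using bij_betw_inv_into_right[OF b1 d(1)] bij_betw_inv_into_right[OF b2 d(2)]
      by (simp add: sc_def prod_encode_inverse prod_decode_inverse)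
  qed
  show "\<sigma> g ` V \<subseteq> V" using sc_in[OF g] by blast
  show "(\<lambda>n. prod_encode (inv_into V' (\<sigma>' g) (fst (prod_decode n)),
           inv_into {0..<m} (tau G A \<nu> g) (snd (prod_decode n)))) ` V \<subseteq> V"
  proof
    fix b assume "b \<in> (\<lambda>n. prod_encode (inv_into V' (\<sigma>' g) (fst (prod_decode n)),
           inv_into {0..<m} (tau G A \<nu> g) (snd (prod_decode n)))) ` V"
    then obtain a where a: "a \<in> V" and b: "b = prod_encode (inv_into V' (\<sigma>' g) (fst (prod_decode a)),
           inv_into {0..<m} (tau G A \<nu> g) (snd (prod_decode a)))" by blast
    have d: "fst (prod_decode a) \<in> V'" "snd (prod_decode a) \<in> {0..<m}" using V_dec[OF a] by auto
    have "inv_into V' (\<sigma>' g) (fst (prod_decode a)) \<in> V'"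
      using bij_betw_inv_into[OF b1] d(1) by (auto simp: bij_betw_def)
    moreover have "inv_into {0..<m} (tau G A \<nu> g) (snd (prod_decode a)) \<in> {0..<m}"
      using bij_betw_inv_into[OF b2] d(2) by (auto simp: bij_betw_def)
    ultimately show "b \<in> V" unfolding b by (simp add: V_mem)
  qed
qed

lemma comp_set:
  assumes g: "g \<in> carrier G" and h: "h \<in> carrier G"
  shows "{n \<in> V. \<sigma> g (\<sigma> h n) = \<sigma> (g \<otimes>\<^bsub>G\<^esub> h) n}
       = prod_encode ` ({v \<in> V'. \<sigma>' g (\<sigma>' h v) = \<sigma>' (g \<otimes>\<^bsub>G\<^esub> h) v} \<times> {0..<m})"
proof -
  have "\<sigma> g (\<sigma> h (prod_encode (v, i))) = \<sigma> (g \<otimes>\<^bsub>G\<^esub> h) (prod_encode (v, i)) \<longleftrightarrow>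
        \<sigma>' g (\<sigma>' h v) = \<sigma>' (g \<otimes>\<^bsub>G\<^esub> h) v" if i: "i < m" for v i
    using tau_mult[OF g h i] by (simp add: sc_enc prod_encode_eq)
  then show ?thesis unfolding Vc_def by (auto simp: prod_encode_eq)
qed

lemma free_set:
  assumes g: "g \<in> carrier G"
  shows "prod_encode ` ({v \<in> V'. \<sigma>' g v \<noteq> v} \<times> {0..<m}) \<subseteq> {n \<in> V. \<sigma> g n \<noteq> n}"
  by (auto simp: sc_enc prod_encode_eq V_mem)

lemma ratio_comp:
  assumes g: "g \<in> carrier G" and h: "h \<in> carrier G"
  shows "real (card {n \<in> V. \<sigma> g (\<sigma> h n) = \<sigma> (g \<otimes>\<^bsub>G\<^esub> h) n}) / real (card V)
       = real (card {v \<in> V'. \<sigma>' g (\<sigma>' h v) = \<sigma>' (g \<otimes>\<^bsub>G\<^esub> h) v}) / real (card V')"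
  using m_pos by (simp add: comp_set[OF g h] card_enc V_card)

lemma ratio_free:
  assumes g: "g \<in> carrier G"
  shows "real (card {v \<in> V'. \<sigma>' g v \<noteq> v}) / real (card V') \<le> real (card {n \<in> V. \<sigma> g n \<noteq> n}) / real (card V)"
    "real (card {n \<in> V. \<sigma> g n \<noteq> n}) / real (card V) \<le> 1"
proof -
  have "card (prod_encode ` ({v \<in> V'. \<sigma>' g v \<noteq> v} \<times> {0..<m})) \<le> card {n \<in> V. \<sigma> g n \<noteq> n}"
    by (rule card_mono[OF _ free_set[OF g]]) (simp add: V_fin)
  then have le: "card {v \<in> V'. \<sigma>' g v \<noteq> v} * m \<le> card {n \<in> V. \<sigma> g n \<noteq> n}" by (simp add: card_enc)
  show "real (card {v \<in> V'. \<sigma>' g v \<noteq> v}) / real (card V') \<le> real (card {n \<in> V. \<sigma> g n \<noteq> n}) / real (card V)"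
  proof (cases "card V' = 0")
    case True then show ?thesis by simp
  next
    case False
    have "real (card {v \<in> V'. \<sigma>' g v \<noteq> v}) / real (card V') = real (card {v \<in> V'. \<sigma>' g v \<noteq> v} * m) / real (card V)"
      using m_pos False by (simp add: V_card)
    also have "\<dots> \<le> real (card {n \<in> V. \<sigma> g n \<noteq> n}) / real (card V)"
    proof (rule divide_right_mono)
      show "real (card {v \<in> V'. \<sigma>' g v \<noteq> v} * m) \<le> real (card {n \<in> V. \<sigma> g n \<noteq> n})"
        using le by (simp only: of_nat_le_iff)
    qed simp
    finally show ?thesis .
  qed
  have "card {n \<in> V. \<sigma> g n \<noteq> n} \<le> card V" by (rule card_mono[OF V_fin]) auto
  then show "real (card {n \<in> V. \<sigma> g n \<noteq> n}) / real (card V) \<le> 1"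
    by (cases "card V = 0") simp_all
qed

lemma rho_meas: "rho G A \<nu> V' \<in> measurable (shift_space G A) (PiM V (\<lambda>_. count_space A))"
  unfolding rho_def shift_space_def
proof (rule measurable_restrict)
  fix n assume n: "n \<in> V"
  have "xrep G A \<nu> (snd (prod_decode n)) \<in> carrier G" using xrep(1) V_dec[OF n] by blast
  then show "(\<lambda>\<omega>. \<omega> (xrep G A \<nu> (snd (prod_decode n)))) \<in> measurable (PiM (carrier G) (\<lambda>_. count_space A)) (count_space A)"
    by (rule measurable_component_singleton)
qed

lemma rho_meas': "rho G A \<nu> V' \<in> measurable \<nu> (PiM V (\<lambda>_. count_space A))"
  by (rule measurable_from_sets[OF ns rho_meas])

lemma Mc_prob: "prob_space (Mc G A \<nu> V')" "sets (Mc G A \<nu> V') = sets (PiM V (\<lambda>_. count_space A))"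
  unfolding Mc_def using prob_space.prob_space_distr[OF np rho_meas'] by simp_all

lemma Pi_meas: assumes n: "n \<in> V"
  shows "Pi_at G \<sigma> n \<in> measurable (PiM V (\<lambda>_. count_space A)) (shift_space G A)"
  unfolding Pi_at_def[abs_def] shift_space_def
proof (rule measurable_restrict)
  fix g assume g: "g \<in> carrier G"
  show "(\<lambda>\<rho>. \<rho> (\<sigma> g n)) \<in> measurable (PiM V (\<lambda>_. count_space A)) (count_space A)"
    by (rule measurable_component_singleton[OF sc_in[OF g n]])
qed

lemma Pi_rho:
  assumes n: "n \<in> V" and w: "\<omega> \<in> S"
  shows "Pi_at G \<sigma> n (rho G A \<nu> V' \<omega>) = shift G (xrep G A \<nu> (snd (prod_decode n))) \<omega>"
proof -
  let ?i = "snd (prod_decode n)"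
  have i: "?i < m" using V_dec[OF n] by blast
  have xi: "xrep G A \<nu> ?i \<in> carrier G" by (rule xrep(1)[OF i])
  have "\<omega> (xrep G A \<nu> (tau G A \<nu> g ?i)) = \<omega> (g \<otimes>\<^bsub>G\<^esub> xrep G A \<nu> ?i)" if g: "g \<in> carrier G" for g
  proof -
    let ?j = "tau G A \<nu> g ?i"
    have j: "?j < m" by (rule tau_in(1)[OF g i])
    have xj: "xrep G A \<nu> ?j \<in> carrier G" by (rule xrep(1)[OF j])
    have "restrict (shift G (xrep G A \<nu> ?j)) S = restrict (shift G (g \<otimes>\<^bsub>G\<^esub> xrep G A \<nu> ?i)) S"
      using xrep(2)[OF j] tau_in(2)[OF g i] xrep(2)[OF i] act_restrict[OF g xi] by simp
    then have "shift G (xrep G A \<nu> ?j) \<omega> = shift G (g \<otimes>\<^bsub>G\<^esub> xrep G A \<nu> ?i) \<omega>"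
      using w by (metis restrict_apply')
    then have "shift G (xrep G A \<nu> ?j) \<omega> \<one>\<^bsub>G\<^esub> = shift G (g \<otimes>\<^bsub>G\<^esub> xrep G A \<nu> ?i) \<omega> \<one>\<^bsub>G\<^esub>" by simp
    then show ?thesis using one_c xj mult_c[OF g xi] G
      by (simp add: shift_def group.is_monoid monoid.l_one)
  qed
  moreover have "\<And>g. g \<in> carrier G \<Longrightarrow> \<sigma> g n \<in> V" using sc_in n by blast
  moreover have "\<And>g. g \<in> carrier G \<Longrightarrow> snd (prod_decode (\<sigma> g n)) = tau G A \<nu> g ?i"
    by (simp add: sc_def prod_encode_inverse)
  ultimately show ?thesis by (auto simp: Pi_at_def rho_def shift_def fun_eq_iff)
qed

lemma local_law:
  assumes n: "n \<in> V"
  shows "distr (Mc G A \<nu> V') (shift_space G A) (Pi_at G \<sigma> n) = \<nu>"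
proof -
  let ?x = "xrep G A \<nu> (snd (prod_decode n))"
  have xc: "?x \<in> carrier G" using xrep(1) V_dec[OF n] by blast
  have "distr (Mc G A \<nu> V') (shift_space G A) (Pi_at G \<sigma> n) = distr \<nu> (shift_space G A) (Pi_at G \<sigma> n \<circ> rho G A \<nu> V')"
    unfolding Mc_def by (rule distr_distr[OF Pi_meas[OF n] rho_meas'])
  also have "\<dots> = distr \<nu> (shift_space G A) (shift G ?x)"
  proof (rule distr_cong_AE[OF refl refl])
    show "AE x in \<nu>. (Pi_at G \<sigma> n \<circ> rho G A \<nu> V') x = shift G ?x x"
      by (rule AE_mp[OF aeS AE_I2]) (simp add: Pi_rho[OF n])
    show "Pi_at G \<sigma> n \<circ> rho G A \<nu> V' \<in> measurable \<nu> (shift_space G A)"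
      by (rule measurable_comp[OF rho_meas' Pi_meas[OF n]])
    show "shift G ?x \<in> measurable \<nu> (shift_space G A)"
      by (rule measurable_from_sets[OF ns shift_measurable[OF G xc]])
  qed
  also have "\<dots> = \<nu>" using inv xc by (simp add: InvProb_def)
  finally show ?thesis .
qed

end


context percons
begin

lemma emm: "emeasure \<nu> B = ennreal (measure \<nu> B)"
  using np by (simp add: prob_space_def finite_measure.emeasure_eq_measure)

lemma singleton_sets: assumes "\<omega> \<in> XX" shows "{\<omega>} \<in> sets (shift_space G A)"
proof -
  have "cyl G A (carrier G) \<omega> = {\<omega>}"
    using assms by (auto simp: cyl_def intro: PiE_ext)
  then show ?thesis using cyl_sets[OF cG order_refl, of A \<omega>] by simp
qed

lemma singleton_sets': "\<omega> \<in> S \<Longrightarrow> {\<omega>} \<in> sets \<nu>"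
  using singleton_sets SX ns by blast

lemma finite_sets: "T \<subseteq> S \<Longrightarrow> T \<in> sets \<nu>"
proof -
  assume T: "T \<subseteq> S"
  then have "finite T" using finS finite_subset by blast
  then have "(\<Union>x\<in>T. {x}) \<in> sets \<nu>" using T singleton_sets' by (intro sets.finite_UN) auto
  then show ?thesis by simp
qed

lemma singleton_pos: assumes w: "\<omega> \<in> S" shows "emeasure \<nu> {\<omega>} > 0"
proof -
  have wX: "\<omega> \<in> XX" using w SX by blast
  have "\<forall>\<tau>\<in>S - {\<omega>}. \<exists>g. g \<in> carrier G \<and> \<tau> g \<noteq> \<omega> g"
  proof
    fix \<tau> assume t: "\<tau> \<in> S - {\<omega>}"
    then have tX: "\<tau> \<in> XX" using SX by blast
    show "\<exists>g. g \<in> carrier G \<and> \<tau> g \<noteq> \<omega> g" using t PiE_ext[OF tX wX] by blast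
  qed
  then obtain gs where gs: "\<And>\<tau>. \<tau> \<in> S - {\<omega>} \<Longrightarrow> gs \<tau> \<in> carrier G \<and> \<tau> (gs \<tau>) \<noteq> \<omega> (gs \<tau>)" by metis
  define K where "K = gs ` (S - {\<omega>})"
  have K: "finite K" "K \<subseteq> carrier G" using finS gs by (auto simp: K_def)
  let ?U = "cyl G A K \<omega>"
  have "openin (shift_top G A) ?U" by (rule openin_cyl[OF K])
  moreover have "\<omega> \<in> ?U" using wX by (simp add: cyl_def)
  ultimately have pos: "emeasure \<nu> ?U > 0" using w unfolding msupport_def by blast
  have Us: "?U \<in> sets \<nu>" using ns K by (simp add: cyl_sets countable_finite)
  have "emeasure \<nu> ?U = emeasure \<nu> {\<omega>}"
  proof (rule emeasure_eq_AE[OF _ Us singleton_sets'[OF w]])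
    show "AE x in \<nu>. (x \<in> ?U) = (x \<in> {\<omega>})"
    proof (rule AE_mp[OF aeS AE_I2], rule impI)
      fix x assume x: "x \<in> S"
      show "(x \<in> ?U) = (x \<in> {\<omega>})"
      proof
        assume xU: "x \<in> ?U"
        show "x \<in> {\<omega>}"
        proof (rule ccontr)
          assume "x \<notin> {\<omega>}"
          then have xs: "x \<in> S - {\<omega>}" using x by blast
          then have "gs x \<in> K" by (simp add: K_def)
          then have "x (gs x) = \<omega> (gs x)" using xU by (simp add: cyl_def)
          then show False using gs[OF xs] by blast
        qed
      next
        assume "x \<in> {\<omega>}" then show "x \<in> ?U" using wX by (simp add: cyl_def)
      qed
    qed
  qed
  then show ?thesis using pos by simp
qed

lemma shift_inj: assumes "g \<in> carrier G" "x \<in> XX" "y \<in> XX" "shift G g x = shift G g y" shows "x = y"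
  using shift_inv[OF G assms(1) assms(2)] shift_inv[OF G assms(1) assms(3)] assms(4) by metis

lemma singleton_shift: assumes w: "\<omega> \<in> S" and g: "g \<in> carrier G"
  shows "emeasure \<nu> {shift G g \<omega>} = emeasure \<nu> {\<omega>}"
proof -
  have wX: "\<omega> \<in> XX" using w SX by blast
  have sw: "shift G g \<omega> \<in> XX" by (rule shift_in[OF G g wX])
  have "emeasure \<nu> {shift G g \<omega>} = emeasure \<nu> (shift G g -` {shift G g \<omega>} \<inter> XX)"
    by (rule InvProb_emeasure[OF G inv g singleton_sets[OF sw]])
  also have "shift G g -` {shift G g \<omega>} \<inter> XX = {\<omega>}"
    using wX shift_inj[OF g] by blast
  finally show ?thesis .
qed

end

locale percons_erg = percons +
  assumes erg: "\<nu> \<in> ergodic_meas G A"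
begin

lemma orbit: assumes w: "\<omega> \<in> S" and t: "\<tau> \<in> S" shows "\<exists>y\<in>carrier G. \<tau> = shift G y \<omega>"
proof (rule ccontr)
  assume no: "\<not> (\<exists>y\<in>carrier G. \<tau> = shift G y \<omega>)"
  have wX: "\<omega> \<in> XX" using w SX by blast
  define Orb where "Orb = (\<lambda>g. shift G g \<omega>) ` carrier G"
  have OS: "Orb \<subseteq> S" using Sinv[OF w] by (auto simp: Orb_def)
  have Os: "Orb \<in> sets \<nu>" by (rule finite_sets[OF OS])
  have Oinv: "\<forall>h\<in>carrier G. {x \<in> space \<nu>. shift G h x \<in> Orb} = Orb"
  proof
    fix h assume h: "h \<in> carrier G"
    show "{x \<in> space \<nu>. shift G h x \<in> Orb} = Orb"
    proof
      show "{x \<in> space \<nu>. shift G h x \<in> Orb} \<subseteq> Orb"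
      proof
        fix x assume x: "x \<in> {x \<in> space \<nu>. shift G h x \<in> Orb}"
        then obtain g where g: "g \<in> carrier G" "shift G h x = shift G g \<omega>" by (auto simp: Orb_def)
        have xX: "x \<in> XX" using x nsp by simp
        have "x = shift G (inv\<^bsub>G\<^esub> h) (shift G h x)" using shift_inv[OF G h xX] by simp
        also have "\<dots> = shift G (inv\<^bsub>G\<^esub> h \<otimes>\<^bsub>G\<^esub> g) \<omega>" using g shift_mult[OF G inv_c[OF h] g(1)] by simp
        finally show "x \<in> Orb" using mult_c[OF inv_c[OF h] g(1)] by (auto simp: Orb_def)
      qed
      show "Orb \<subseteq> {x \<in> space \<nu>. shift G h x \<in> Orb}"
      proof
        fix x assume "x \<in> Orb"
        then obtain g where g: "g \<in> carrier G" "x = shift G g \<omega>" by (auto simp: Orb_def)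
        have "shift G h x = shift G (h \<otimes>\<^bsub>G\<^esub> g) \<omega>" using g shift_mult[OF G h g(1)] by simp
        moreover have "x \<in> space \<nu>" using g shift_in[OF G g(1) wX] nsp by simp
        ultimately show "x \<in> {x \<in> space \<nu>. shift G h x \<in> Orb}" using mult_c[OF h g(1)] by (auto simp: Orb_def)
      qed
    qed
  qed
  have "measure \<nu> Orb = 0 \<or> measure \<nu> Orb = 1" using erg Os Oinv unfolding ergodic_meas_def by blast
  moreover have "measure \<nu> Orb > 0"
  proof -
    have "\<omega> \<in> Orb" using shift_one[OF G wX] one_c by (force simp: Orb_def)
    then have "emeasure \<nu> {\<omega>} \<le> emeasure \<nu> Orb" using Os by (intro emeasure_mono) auto
    then have "emeasure \<nu> Orb > 0" using singleton_pos[OF w] by simp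
    then show ?thesis by (simp add: emm)
  qed
  ultimately have O1: "measure \<nu> Orb = 1" by simp
  have tO: "{\<tau>} \<subseteq> space \<nu> - Orb" using no t SX nsp by (auto simp: Orb_def)
  have "measure \<nu> (space \<nu> - Orb) = 0" using prob_space.prob_compl[OF np Os] O1 by simp
  then have "measure \<nu> {\<tau>} = 0"
    using finite_measure.finite_measure_mono[of \<nu> "{\<tau>}" "space \<nu> - Orb"] tO Os np
    by (simp add: prob_space_def measure_nonneg antisym)
  moreover have "emeasure \<nu> {\<tau>} > 0" by (rule singleton_pos[OF t])
  ultimately show False by (simp add: emm)
qed

lemma S_ne: "S \<noteq> {}"
proof
  assume "S = {}"
  then have "AE x in \<nu>. False" using aeS by simp
  then show False using np by (simp add: prob_space.AE_False)
qed

lemma nu_formula: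
  assumes B: "B \<in> sets \<nu>"
  shows "measure \<nu> B * real (card S) = real (card (B \<inter> S))"
proof -
  obtain \<omega>0 where w0: "\<omega>0 \<in> S" using S_ne by blast
  define c where "c = emeasure \<nu> {\<omega>0}"
  have cst: "\<And>\<tau>. \<tau> \<in> S \<Longrightarrow> emeasure \<nu> {\<tau>} = c"
    using orbit[OF w0] singleton_shift[OF w0] by (auto simp: c_def)
  have sumS: "emeasure \<nu> T = of_nat (card T) * c" if T: "T \<subseteq> S" for T
  proof -
    have fT: "finite T" using T finS finite_subset by blast
    have "emeasure \<nu> T = (\<Sum>x\<in>T. emeasure \<nu> {x})"
      using T singleton_sets' by (intro emeasure_eq_sum_singleton[OF fT]) auto
    also have "\<dots> = (\<Sum>x\<in>T. c)" using T cst by (intro sum.cong) auto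
    finally show ?thesis by simp
  qed
  have "emeasure \<nu> B = emeasure \<nu> (B \<inter> S)"
    by (rule emeasure_eq_AE[OF AE_mp[OF aeS AE_I2] B]) (auto intro: finite_sets)
  then have eB: "emeasure \<nu> B = of_nat (card (B \<inter> S)) * c" using sumS[of "B \<inter> S"] by simp
  have "emeasure \<nu> (space \<nu>) = emeasure \<nu> S"
    by (rule emeasure_eq_AE[OF AE_mp[OF aeS AE_I2] sets.top finite_sets[OF order_refl]]) (use SX nsp in auto)
  then have one: "1 = of_nat (card S) * c" using sumS[of S] np by (simp add: prob_space.emeasure_space_1)
  have "emeasure \<nu> B * of_nat (card S) = (of_nat (card S) * c) * of_nat (card (B \<inter> S))"
    unfolding eB by (metis mult.assoc mult.commute)
  then have "emeasure \<nu> B * of_nat (card S) = of_nat (card (B \<inter> S))"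
    unfolding one[symmetric] by simp
  then have "ennreal (measure \<nu> B * real (card S)) = ennreal (real (card (B \<inter> S)))"
    by (simp add: emm ennreal_of_nat_eq_real_of_nat ennreal_mult)
  then show ?thesis by (simp add: measure_nonneg)
qed

lemma W_perm: assumes w: "w \<in> W" shows "bij_betw w S S"
proof -
  obtain g where g: "g \<in> carrier G" "w = restrict (shift G g) S" using w by (auto simp: Wset_def)
  show ?thesis unfolding g(2)
  proof (rule bij_betw_byWitness[where f'="restrict (shift G (inv\<^bsub>G\<^esub> g)) S"])
    show "\<forall>a\<in>S. restrict (shift G (inv\<^bsub>G\<^esub> g)) S (restrict (shift G g) S a) = a"
    proof
      fix a assume a: "a \<in> S"
      then have aX: "a \<in> XX" using SX by blast
      show "restrict (shift G (inv\<^bsub>G\<^esub> g)) S (restrict (shift G g) S a) = a"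
        using a Sinv[OF a g(1)] shift_inv[OF G g(1) aX] by simp
    qed
    show "\<forall>a\<in>S. restrict (shift G g) S (restrict (shift G (inv\<^bsub>G\<^esub> g)) S a) = a"
    proof
      fix a assume a: "a \<in> S"
      then have aX: "a \<in> XX" using SX by blast
      show "restrict (shift G g) S (restrict (shift G (inv\<^bsub>G\<^esub> g)) S a) = a"
        using a Sinv[OF a inv_c[OF g(1)]] shift_inv'[OF G g(1) aX] by simp
    qed
    show "restrict (shift G g) S ` S \<subseteq> S" using Sinv[OF _ g(1)] by auto
    show "restrict (shift G (inv\<^bsub>G\<^esub> g)) S ` S \<subseteq> S" using Sinv[OF _ inv_c[OF g(1)]] by auto
  qed
qed

lemma count_invariant:
  assumes w: "\<omega> \<in> S" and t: "\<tau> \<in> S"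
  shows "card {u \<in> W. u \<tau> \<in> B} = card {u \<in> W. u \<omega> \<in> B}"
proof -
  obtain y where y: "y \<in> carrier G" "\<tau> = shift G y \<omega>" using orbit[OF w t] by blast
  define \<phi> where "\<phi> = (\<lambda>u::('a \<Rightarrow> 'c) \<Rightarrow> ('a \<Rightarrow> 'c). restrict (\<lambda>x. u (shift G y x)) S)"
  have phiW: "\<phi> (restrict (shift G g) S) = restrict (shift G (g \<otimes>\<^bsub>G\<^esub> y)) S" if g: "g \<in> carrier G" for g
    using Sinv[OF _ y(1)] shift_mult[OF G g y(1)] by (auto simp: \<phi>_def fun_eq_iff)
  have bij: "bij_betw \<phi> W W"
  proof (rule bij_betw_byWitness[where f'="\<lambda>u. restrict (\<lambda>x. u (shift G (inv\<^bsub>G\<^esub> y) x)) S"])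
    show "\<forall>a\<in>W. restrict (\<lambda>x. \<phi> a (shift G (inv\<^bsub>G\<^esub> y) x)) S = a"
    proof
      fix a assume "a \<in> W"
      then obtain g where g: "g \<in> carrier G" "a = restrict (shift G g) S" by (auto simp: Wset_def)
      show "restrict (\<lambda>x. \<phi> a (shift G (inv\<^bsub>G\<^esub> y) x)) S = a"
      proof
        fix x show "restrict (\<lambda>x. \<phi> a (shift G (inv\<^bsub>G\<^esub> y) x)) S x = a x"
        proof (cases "x \<in> S")
          case True
          have xX: "x \<in> XX" using True SX by blast
          have s1: "shift G (inv\<^bsub>G\<^esub> y) x \<in> S" by (rule Sinv[OF True inv_c[OF y(1)]])
          have s2: "shift G y (shift G (inv\<^bsub>G\<^esub> y) x) = x" by (rule shift_inv'[OF G y(1) xX])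
          show ?thesis using True s1 s2 by (simp add: \<phi>_def)
        next
          case False then show ?thesis using g(2) by simp
        qed
      qed
    qed
    show "\<forall>a\<in>W. \<phi> (restrict (\<lambda>x. a (shift G (inv\<^bsub>G\<^esub> y) x)) S) = a"
    proof
      fix a assume "a \<in> W"
      then obtain g where g: "g \<in> carrier G" "a = restrict (shift G g) S" by (auto simp: Wset_def)
      show "\<phi> (restrict (\<lambda>x. a (shift G (inv\<^bsub>G\<^esub> y) x)) S) = a"
      proof
        fix x show "\<phi> (restrict (\<lambda>x. a (shift G (inv\<^bsub>G\<^esub> y) x)) S) x = a x"
        proof (cases "x \<in> S")
          case True
          have xX: "x \<in> XX" using True SX by blast
          have s1: "shift G y x \<in> S" by (rule Sinv[OF True y(1)])
          have s2: "shift G (inv\<^bsub>G\<^esub> y) (shift G y x) = x" by (rule shift_inv[OF G y(1) xX])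
          show ?thesis using True s1 s2 by (simp add: \<phi>_def)
        next
          case False then show ?thesis using g(2) by (simp add: \<phi>_def)
        qed
      qed
    qed
    show "\<phi> ` W \<subseteq> W"
    proof
      fix b assume "b \<in> \<phi> ` W"
      then obtain g where g: "g \<in> carrier G" "b = \<phi> (restrict (shift G g) S)" by (auto simp: Wset_def)
      show "b \<in> W" unfolding g(2) phiW[OF g(1)] using mult_c[OF g(1) y(1)] by (auto simp: Wset_def)
    qed
    show "(\<lambda>u. restrict (\<lambda>x. u (shift G (inv\<^bsub>G\<^esub> y) x)) S) ` W \<subseteq> W"
    proof
      fix b assume "b \<in> (\<lambda>u. restrict (\<lambda>x. u (shift G (inv\<^bsub>G\<^esub> y) x)) S) ` W"
      then obtain g where g: "g \<in> carrier G" "b = restrict (\<lambda>x. restrict (shift G g) S (shift G (inv\<^bsub>G\<^esub> y) x)) S"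
        by (auto simp: Wset_def)
      have "b = restrict (shift G (g \<otimes>\<^bsub>G\<^esub> inv\<^bsub>G\<^esub> y)) S"
        unfolding g(2) using Sinv[OF _ inv_c[OF y(1)]] shift_mult[OF G g(1) inv_c[OF y(1)]]
        by (auto simp: fun_eq_iff)
      then show "b \<in> W" using mult_c[OF g(1) inv_c[OF y(1)]] by (auto simp: Wset_def)
    qed
  qed
  have ev: "\<phi> u \<omega> = u \<tau>" for u using w y by (simp add: \<phi>_def)
  have "bij_betw \<phi> {u \<in> W. u \<tau> \<in> B} {u \<in> W. u \<omega> \<in> B}"
  proof -
    have "inj_on \<phi> {u \<in> W. u \<tau> \<in> B}" using bij by (auto simp: bij_betw_def intro: inj_on_subset)
    moreover have "\<phi> ` {u \<in> W. u \<tau> \<in> B} = {u \<in> W. u \<omega> \<in> B}"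
    proof
      show "\<phi> ` {u \<in> W. u \<tau> \<in> B} \<subseteq> {u \<in> W. u \<omega> \<in> B}" using bij ev by (auto simp: bij_betw_def)
      show "{u \<in> W. u \<omega> \<in> B} \<subseteq> \<phi> ` {u \<in> W. u \<tau> \<in> B}"
      proof
        fix u assume u: "u \<in> {u \<in> W. u \<omega> \<in> B}"
        then obtain u' where u': "u' \<in> W" "u = \<phi> u'" using bij by (auto simp: bij_betw_def)
        then have "u' \<tau> \<in> B" using u ev by simp
        then show "u \<in> \<phi> ` {u \<in> W. u \<tau> \<in> B}" using u' by blast
      qed
    qed
    ultimately show ?thesis by (simp add: bij_betw_def)
  qed
  then show ?thesis by (rule bij_betw_same_card)
qed

lemma count_formula:
  assumes w: "\<omega> \<in> S"
  shows "card {u \<in> W. u \<omega> \<in> B} * card S = m * card (B \<inter> S)"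
proof -
  have ind: "card {x \<in> T. P x} = (\<Sum>x\<in>T. if P x then 1 else 0)" if "finite T" for T and P :: "_ \<Rightarrow> bool"
    using sum.inter_filter[OF that, of "\<lambda>_. 1::nat" P] by simp
  have "card {u \<in> W. u \<omega> \<in> B} * card S = (\<Sum>\<tau>\<in>S. card {u \<in> W. u \<tau> \<in> B})"
    using count_invariant[OF w] by simp
  also have "\<dots> = (\<Sum>\<tau>\<in>S. \<Sum>u\<in>W. if u \<tau> \<in> B then 1 else 0)" using ind[OF finW] by simp
  also have "\<dots> = (\<Sum>u\<in>W. \<Sum>\<tau>\<in>S. if u \<tau> \<in> B then 1 else 0)" by (rule sum.swap)
  also have "\<dots> = (\<Sum>u\<in>W. card {\<tau> \<in> S. u \<tau> \<in> B})" using ind[OF finS] by simp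
  also have "\<dots> = (\<Sum>u\<in>W. card (B \<inter> S))"
  proof (rule sum.cong[OF refl])
    fix u assume u: "u \<in> W"
    have b: "bij_betw u S S" by (rule W_perm[OF u])
    have "bij_betw u {\<tau> \<in> S. u \<tau> \<in> B} (B \<inter> S)"
    proof -
      have "inj_on u {\<tau> \<in> S. u \<tau> \<in> B}" using b by (auto simp: bij_betw_def intro: inj_on_subset)
      moreover have "u ` {\<tau> \<in> S. u \<tau> \<in> B} = B \<inter> S"
      proof
        show "u ` {\<tau> \<in> S. u \<tau> \<in> B} \<subseteq> B \<inter> S" using b by (auto simp: bij_betw_def)
        show "B \<inter> S \<subseteq> u ` {\<tau> \<in> S. u \<tau> \<in> B}"
        proof
          fix x assume x: "x \<in> B \<inter> S"
          then obtain t where "t \<in> S" "x = u t" using b by (auto simp: bij_betw_def)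
          then show "x \<in> u ` {\<tau> \<in> S. u \<tau> \<in> B}" using x by blast
        qed
      qed
      ultimately show ?thesis by (simp add: bij_betw_def)
    qed
    then show "card {\<tau> \<in> S. u \<tau> \<in> B} = card (B \<inter> S)" by (rule bij_betw_same_card)
  qed
  also have "\<dots> = m * card (B \<inter> S)" by simp
  finally show ?thesis .
qed

end


locale percons2e = percons2 G A \<nu> V' \<sigma>' + percons_erg G A \<nu>
  for G :: "('g,'b) monoid_scheme" and A :: "'a set" and \<nu> V' \<sigma>'
begin

lemma count_i:
  assumes w: "\<omega> \<in> S"
  shows "card {i \<in> {0..<m}. shift G (xrep G A \<nu> i) \<omega> \<in> B} = card {u \<in> W. u \<omega> \<in> B}"
proof -
  have ev: "\<beta> i \<omega> = shift G (xrep G A \<nu> i) \<omega>" if "i < m" for i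
    using xrep(2)[OF that] w by simp
  have "bij_betw \<beta> {i \<in> {0..<m}. shift G (xrep G A \<nu> i) \<omega> \<in> B} {u \<in> W. u \<omega> \<in> B}"
  proof -
    have "inj_on \<beta> {i \<in> {0..<m}. shift G (xrep G A \<nu> i) \<omega> \<in> B}"
      using bet_bij by (auto simp: bij_betw_def intro: inj_on_subset)
    moreover have "\<beta> ` {i \<in> {0..<m}. shift G (xrep G A \<nu> i) \<omega> \<in> B} = {u \<in> W. u \<omega> \<in> B}"
    proof
      show "\<beta> ` {i \<in> {0..<m}. shift G (xrep G A \<nu> i) \<omega> \<in> B} \<subseteq> {u \<in> W. u \<omega> \<in> B}"
        using bet_in ev by auto
      show "{u \<in> W. u \<omega> \<in> B} \<subseteq> \<beta> ` {i \<in> {0..<m}. shift G (xrep G A \<nu> i) \<omega> \<in> B}"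
      proof
        fix u assume u: "u \<in> {u \<in> W. u \<omega> \<in> B}"
        have "u \<in> \<beta> ` {0..<m}" using u bet_bij unfolding bij_betw_def by blast
        then obtain i where i: "i \<in> {0..<m}" "u = \<beta> i" by blast
        then show "u \<in> \<beta> ` {i \<in> {0..<m}. shift G (xrep G A \<nu> i) \<omega> \<in> B}" using u ev by auto
      qed
    qed
    ultimately show ?thesis by (simp add: bij_betw_def)
  qed
  then show ?thesis by (rule bij_betw_same_card)
qed

lemma emp_eq:
  assumes w: "\<omega> \<in> S" and V'ne: "V' \<noteq> {}"
  shows "empirical G A V \<sigma> (rho G A \<nu> V' \<omega>) = \<nu>"
proof -
  define f where "f = (\<lambda>n. Pi_at G \<sigma> n (rho G A \<nu> V' \<omega>))"
  let ?UM = "uniform_measure (count_space V) V"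
  have wX: "\<omega> \<in> XX" using w SX by blast
  have fV: "f n = shift G (xrep G A \<nu> (snd (prod_decode n))) \<omega>" if n: "n \<in> V" for n
    unfolding f_def by (rule Pi_rho[OF n w])
  have fX: "f n \<in> XX" if n: "n \<in> V" for n
    using fV[OF n] shift_in[OF G xrep(1)[OF conjunct2[OF V_dec[OF n]]] wX] by simp
  have mf: "f \<in> measurable ?UM (shift_space G A)"
  proof -
    have "f \<in> measurable (count_space V) (shift_space G A)"
      using fX by (simp add: measurable_count_space_eq1)
    then show ?thesis by (rule measurable_from_sets[OF sets_uniform_measure])
  qed
  have finS0: "card S > 0" using S_ne finS by (simp add: card_gt_0_iff)
  have cV': "card V' > 0" using V'ne finV by (simp add: card_gt_0_iff)
  show ?thesis unfolding empirical_def f_def[symmetric]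
  proof (rule measure_eqI)
    show "sets (distr ?UM (shift_space G A) f) = sets \<nu>" using ns by simp
    fix B assume B: "B \<in> sets (distr ?UM (shift_space G A) f)"
    then have Bs: "B \<in> sets (shift_space G A)" by simp
    then have Bn: "B \<in> sets \<nu>" using ns by simp
    let ?k = "card {u \<in> W. u \<omega> \<in> B}"
    have setV: "{n \<in> V. f n \<in> B} = prod_encode ` (V' \<times> {i \<in> {0..<m}. shift G (xrep G A \<nu> i) \<omega> \<in> B})"
    proof
      show "{n \<in> V. f n \<in> B} \<subseteq> prod_encode ` (V' \<times> {i \<in> {0..<m}. shift G (xrep G A \<nu> i) \<omega> \<in> B})"
      proof
        fix n assume n: "n \<in> {n \<in> V. f n \<in> B}"
        then have "n = prod_encode (fst (prod_decode n), snd (prod_decode n))" by (simp add: prod_decode_inverse)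
        moreover have "fst (prod_decode n) \<in> V'" "snd (prod_decode n) < m" using V_dec n by auto
        moreover have "shift G (xrep G A \<nu> (snd (prod_decode n))) \<omega> \<in> B" using n fV by auto
        ultimately show "n \<in> prod_encode ` (V' \<times> {i \<in> {0..<m}. shift G (xrep G A \<nu> i) \<omega> \<in> B})" by force
      qed
      show "prod_encode ` (V' \<times> {i \<in> {0..<m}. shift G (xrep G A \<nu> i) \<omega> \<in> B}) \<subseteq> {n \<in> V. f n \<in> B}"
      proof
        fix n assume "n \<in> prod_encode ` (V' \<times> {i \<in> {0..<m}. shift G (xrep G A \<nu> i) \<omega> \<in> B})"
        then obtain v i where vi: "v \<in> V'" "i < m" "shift G (xrep G A \<nu> i) \<omega> \<in> B" "n = prod_encode (v, i)" by auto
        have nV: "n \<in> V" using vi by (simp add: V_mem)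
        then show "n \<in> {n \<in> V. f n \<in> B}" using fV[OF nV] vi by (simp add: prod_encode_inverse)
      qed
    qed
    have cardB: "card {n \<in> V. f n \<in> B} = card V' * ?k"
      unfolding setV card_enc count_i[OF w] ..
    have "emeasure (distr ?UM (shift_space G A) f) B = emeasure ?UM (f -` B \<inter> space ?UM)"
      by (rule emeasure_distr[OF mf Bs])
    also have "f -` B \<inter> space ?UM = {n \<in> V. f n \<in> B}" by auto
    also have "emeasure ?UM {n \<in> V. f n \<in> B} = emeasure (count_space V) (V \<inter> {n \<in> V. f n \<in> B}) / emeasure (count_space V) V"
      by (rule emeasure_uniform_measure) auto
    also have "\<dots> = of_nat (card V' * ?k) / of_nat (card V' * m)"
    proof -
      have sub: "V \<inter> {n \<in> V. f n \<in> B} = {n \<in> V. f n \<in> B}" by blast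
      have fin1: "finite {n \<in> V. f n \<in> B}" using V_fin by simp
      have c1: "emeasure (count_space V) (V \<inter> {n \<in> V. f n \<in> B}) = of_nat (card V' * ?k)"
        unfolding sub cardB[symmetric] by (rule emeasure_count_space_finite[OF _ fin1]) blast
      have c2: "emeasure (count_space V) V = of_nat (card V' * m)"
        unfolding V_card[symmetric] by (rule emeasure_count_space_finite[OF order_refl V_fin])
      show ?thesis by (simp only: c1 c2)
    qed
    also have "\<dots> = ennreal (real (card V' * ?k) / real (card V' * m))"
    proof -
      have "real (card V' * m) > 0" using cV' m_pos by simp
      then have "ennreal (real (card V' * ?k)) / ennreal (real (card V' * m)) = ennreal (real (card V' * ?k) / real (card V' * m))"
        by (intro divide_ennreal) auto
      then show ?thesis by (simp only: ennreal_of_nat_eq_real_of_nat)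
    qed
    also have "real (card V' * ?k) / real (card V' * m) = measure \<nu> B"
    proof -
      have kf0: "?k * card S = m * card (B \<inter> S)" by (rule count_formula[OF w])
      have kf: "real ?k * real (card S) = real (card (B \<inter> S)) * real m"
      proof -
        have "real (?k * card S) = real (m * card (B \<inter> S))" using kf0 by (simp only:)
        then show ?thesis by (simp only: of_nat_mult mult.commute)
      qed
      have nf: "measure \<nu> B * real (card S) = real (card (B \<inter> S))" by (rule nu_formula[OF Bn])
      have m0: "real m \<noteq> 0" and s0: "real (card S) \<noteq> 0" and v0: "real (card V') \<noteq> 0"
        using m_pos finS0 cV' by auto
      have "real (card V' * ?k) / real (card V' * m) = (real (card V') * real ?k) / (real (card V') * real m)"
        by (simp only: of_nat_mult)
      also have "\<dots> = real ?k / real m" by (rule mult_divide_mult_cancel_left[OF v0])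
      also have "\<dots> = real (card (B \<inter> S)) / real (card S)"
        using kf m0 s0 by (simp add: field_simps)
      also have "\<dots> = measure \<nu> B"
        using nf s0 by (simp add: field_simps)
      finally show ?thesis .
    qed
    finally show "emeasure (distr ?UM (shift_space G A) f) B = emeasure \<nu> B" by (simp add: emm)
  qed
qed

lemma Pi_all_sets:
  assumes T: "T \<subseteq> PiE V (\<lambda>_. A)"
  shows "T \<in> sets (PiM V (\<lambda>_. count_space A))"
proof -
  have fT: "finite T" using T finite_subset finite_PiE[OF V_fin, of "\<lambda>_. A"] fA by blast
  have single: "{\<rho>} \<in> sets (PiM V (\<lambda>_. count_space A))" if r: "\<rho> \<in> PiE V (\<lambda>_. A)" for \<rho>
  proof -
    have "PiE V (\<lambda>n. {\<rho> n}) = {\<rho>}"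
    proof
      show "PiE V (\<lambda>n. {\<rho> n}) \<subseteq> {\<rho>}"
      proof
        fix x assume x: "x \<in> PiE V (\<lambda>n. {\<rho> n})"
        have "x = \<rho>"
        proof (rule extensionalityI[of _ V])
          show "x \<in> extensional V" using x by (simp add: PiE_iff)
          show "\<rho> \<in> extensional V" using r by (simp add: PiE_iff)
          fix n assume "n \<in> V" then show "x n = \<rho> n" using x by (auto simp: PiE_iff)
        qed
        then show "x \<in> {\<rho>}" by simp
      qed
      show "{\<rho>} \<subseteq> PiE V (\<lambda>n. {\<rho> n})" using r by (auto simp: PiE_iff)
    qed
    moreover have "PiE V (\<lambda>n. {\<rho> n}) \<in> sets (PiM V (\<lambda>_. count_space A))"
      using r by (intro sets_PiM_I_finite[OF V_fin]) auto
    ultimately show ?thesis by simp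
  qed
  have "(\<Union>\<rho>\<in>T. {\<rho>}) \<in> sets (PiM V (\<lambda>_. count_space A))"
    using T single by (intro sets.finite_UN[OF fT]) auto
  then show ?thesis by simp
qed

lemma emp_measure:
  assumes V'ne: "V' \<noteq> {}" and U: "\<nu> \<in> U"
  shows "measure (Mc G A \<nu> V') {\<rho> \<in> space (Mc G A \<nu> V'). empirical G A V \<sigma> \<rho> \<in> U} = 1"
proof -
  let ?M = "Mc G A \<nu> V'"
  let ?B = "{\<rho> \<in> space ?M. empirical G A V \<sigma> \<rho> \<in> U}"
  have spM: "space ?M = PiE V (\<lambda>_. A)" by (simp add: Mc_def space_PiM)
  have Bs: "?B \<in> sets (PiM V (\<lambda>_. count_space A))" by (rule Pi_all_sets) (use spM in auto)
  have "measure ?M ?B = measure (distr \<nu> (PiM V (\<lambda>_. count_space A)) (rho G A \<nu> V')) ?B"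
    by (simp add: Mc_def)
  also have "\<dots> = measure \<nu> (rho G A \<nu> V' -` ?B \<inter> space \<nu>)"
    by (rule measure_distr[OF rho_meas' Bs])
  finally have "measure ?M ?B = measure \<nu> (rho G A \<nu> V' -` ?B \<inter> space \<nu>)" .
  moreover have "S \<subseteq> rho G A \<nu> V' -` ?B \<inter> space \<nu>"
  proof
    fix \<omega> assume w: "\<omega> \<in> S"
    then have wn: "\<omega> \<in> space \<nu>" using SX nsp by blast
    have "rho G A \<nu> V' \<omega> \<in> space (PiM V (\<lambda>_. count_space A))"
      using measurable_space[OF rho_meas' wn] .
    then have "rho G A \<nu> V' \<omega> \<in> space ?M" by (simp add: Mc_def)
    moreover have "empirical G A V \<sigma> (rho G A \<nu> V' \<omega>) \<in> U" using emp_eq[OF w V'ne] U by simp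
    ultimately show "\<omega> \<in> rho G A \<nu> V' -` ?B \<inter> space \<nu>" using wn by simp
  qed
  moreover have "measure \<nu> S = 1"
  proof -
    have "emeasure \<nu> S = emeasure \<nu> (space \<nu>)"
      by (rule emeasure_eq_AE[OF AE_mp[OF aeS AE_I2] finite_sets[OF order_refl] sets.top]) (use SX nsp in auto)
    then have "emeasure \<nu> S = 1" using np by (simp add: prob_space.emeasure_space_1)
    then show ?thesis by (simp add: emm)
  qed
  moreover have "rho G A \<nu> V' -` ?B \<inter> space \<nu> \<in> sets \<nu>"
    by (rule measurable_sets[OF rho_meas' Bs])
  ultimately show ?thesis
    using finite_measure.finite_measure_mono[of \<nu> S "rho G A \<nu> V' -` ?B \<inter> space \<nu>"] np
      prob_space.prob_le_1[OF np, of "rho G A \<nu> V' -` ?B \<inter> space \<nu>"]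
    by (simp add: prob_space_def)
qed

end


lemma cyl_dset: "dset G A J (cyl G A J y)"
  unfolding dset_def cyl_def by auto

lemma sofic_from_closure:
  fixes G :: "('g,'b) monoid_scheme" and A :: "'a set"
  assumes G: "group G" and cG: "countable (carrier G)" and fA: "finite A" and sof: "sofic G"
    and cl: "\<mu> \<in> wstar_closure G A S" and SP: "S \<subseteq> periodic_meas G A"
  shows "has_sofic_model G A \<mu> \<and> (S \<subseteq> ergodic_meas G A \<longrightarrow> has_ergodic_sofic_model G A \<mu>)"
proof -
  obtain V' \<sigma>' where sa: "sofic_approx G V' \<sigma>'" using sof by (auto simp: sofic_def)
  have finV: "\<And>n. finite (V' n)" and bijV: "\<And>n g. g \<in> carrier G \<Longrightarrow> bij_betw (\<sigma>' n g) (V' n) (V' n)"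
    using sa by (auto simp: sofic_approx_def)
  have compV: "\<And>g h. g \<in> carrier G \<Longrightarrow> h \<in> carrier G \<Longrightarrow>
      (\<lambda>n. real (card {v \<in> V' n. \<sigma>' n g (\<sigma>' n h v) = \<sigma>' n (g \<otimes>\<^bsub>G\<^esub> h) v}) / real (card (V' n))) \<longlonglongrightarrow> 1"
    using sa unfolding sofic_approx_def by blast
  have freeV: "\<And>g. g \<in> carrier G \<Longrightarrow> g \<noteq> \<one>\<^bsub>G\<^esub> \<Longrightarrow>
      (\<lambda>n. real (card {v \<in> V' n. \<sigma>' n g v \<noteq> v}) / real (card (V' n))) \<longlonglongrightarrow> 1"
    using sa unfolding sofic_approx_def by blast
  have mP: "\<mu> \<in> Prob_meas G A" using cl by (simp add: wstar_closure_def)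
  have ms: "sets \<mu> = sets (shift_space G A)" and mp: "prob_space \<mu>" using mP by (auto simp: Prob_meas_def)
  have one_c: "\<one>\<^bsub>G\<^esub> \<in> carrier G" using G by (simp add: group.is_monoid monoid.one_closed)
  have Ane: "A \<noteq> {}"
  proof
    assume "A = {}"
    then have "space \<mu> = {}" using space_eq_shift[OF ms] one_c by (auto simp: PiE_eq_empty_iff)
    then show False using prob_space.not_empty[OF mp] by simp
  qed
  have cne: "carrier G \<noteq> {}" using one_c by blast
  define en where "en = from_nat_into (carrier G)"
  define Jk where "Jk = (\<lambda>k::nat. en ` {..<k})"
  have Jk: "\<And>k. finite (Jk k)" "\<And>k. Jk k \<subseteq> carrier G"
    using from_nat_into[OF cne] by (auto simp: Jk_def en_def)
  define Fk where "Fk = (\<lambda>k. (\<lambda>(J, y). indicator (cyl G A J y) :: ('g \<Rightarrow> 'a) \<Rightarrow> real) ` (SIGMA J:Pow (Jk k). PiE J (\<lambda>_. A)))"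
  have "\<forall>k. \<exists>\<nu>. \<nu> \<in> S \<and> \<nu> \<in> Prob_meas G A \<and> (\<forall>f\<in>Fk k. \<bar>integral\<^sup>L \<nu> f - integral\<^sup>L \<mu> f\<bar> < inverse (real (Suc k)))"
  proof
    fix k
    have fin: "finite (Fk k)" unfolding Fk_def
    proof (intro finite_imageI finite_SigmaI)
      show "finite (Pow (Jk k))" using Jk(1) by simp
      fix J assume "J \<in> Pow (Jk k)"
      then have "finite J" using Jk(1) finite_subset by auto
      then show "finite (PiE J (\<lambda>_. A))" using fA by (simp add: finite_PiE)
    qed
    have cont: "\<forall>f\<in>Fk k. continuous_map (shift_top G A) euclideanreal f"
    proof
      fix f assume "f \<in> Fk k"
      then obtain J y where J: "J \<subseteq> Jk k" and f: "f = indicator (cyl G A J y)" unfolding Fk_def by auto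
      have "finite J" using J Jk(1) finite_subset by blast
      moreover have "J \<subseteq> carrier G" using J Jk(2) by blast
      ultimately show "continuous_map (shift_top G A) euclideanreal f"
        unfolding f by (rule dset_indicator_cont[OF _ _ cyl_dset])
    qed
    show "\<exists>\<nu>. \<nu> \<in> S \<and> \<nu> \<in> Prob_meas G A \<and> (\<forall>f\<in>Fk k. \<bar>integral\<^sup>L \<nu> f - integral\<^sup>L \<mu> f\<bar> < inverse (real (Suc k)))"
      using closure_approx[OF cl fin cont, of "inverse (real (Suc k))"] by auto
  qed
  then obtain nu where nu: "\<And>k. nu k \<in> S" "\<And>k. nu k \<in> Prob_meas G A"
    "\<And>k. \<forall>f\<in>Fk k. \<bar>integral\<^sup>L (nu k) f - integral\<^sup>L \<mu> f\<bar> < inverse (real (Suc k))"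
    by (metis (no_types))
  have nuper: "\<And>k. nu k \<in> periodic_meas G A" using nu(1) SP by blast
  have conv: "(\<lambda>k. measure (nu k) (cyl G A J y)) \<longlonglongrightarrow> measure \<mu> (cyl G A J y)"
    if J: "finite J" "J \<subseteq> carrier G" and y: "y \<in> PiE J (\<lambda>_. A)" for J y
  proof -
    define K where "K = Suc (Max (insert 0 (to_nat_on (carrier G) ` J)))"
    have sub: "J \<subseteq> Jk k" if k: "K \<le> k" for k
    proof
      fix j assume j: "j \<in> J"
      have jc: "j \<in> carrier G" using j J by blast
      have "to_nat_on (carrier G) j \<le> Max (insert 0 (to_nat_on (carrier G) ` J))"
        using j J(1) by (intro Max_ge) auto
      then have "to_nat_on (carrier G) j < k" using k by (simp add: K_def)
      moreover have "en (to_nat_on (carrier G) j) = j" unfolding en_def by (rule from_nat_into_to_nat_on[OF cG jc])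
      ultimately show "j \<in> Jk k" unfolding Jk_def by force
    qed
    have bound: "\<bar>measure (nu k) (cyl G A J y) - measure \<mu> (cyl G A J y)\<bar> < inverse (real (Suc k))"
      if k: "K \<le> k" for k
    proof -
      have "indicator (cyl G A J y) \<in> Fk k" unfolding Fk_def using sub[OF k] y by force
      then have "\<bar>integral\<^sup>L (nu k) (indicator (cyl G A J y) :: _ \<Rightarrow> real) - integral\<^sup>L \<mu> (indicator (cyl G A J y))\<bar> < inverse (real (Suc k))"
        using nu(3) by blast
      moreover have "sets (nu k) = sets (shift_space G A)" using nu(2) by (simp add: Prob_meas_def)
      ultimately show ?thesis
        using integral_indicator_X[OF _ cyl_subset] ms by metis
    qed
    have "(\<lambda>k. measure (nu k) (cyl G A J y) - measure \<mu> (cyl G A J y)) \<longlonglongrightarrow> 0"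
    proof (rule tendsto_sandwich[where f="\<lambda>k. - inverse (real (Suc k))" and h="\<lambda>k. inverse (real (Suc k))"])
      show "eventually (\<lambda>k. - inverse (real (Suc k)) \<le> measure (nu k) (cyl G A J y) - measure \<mu> (cyl G A J y)) sequentially"
        by (rule eventually_sequentiallyI[of K]) (use bound in \<open>fastforce simp: abs_less_iff\<close>)
      show "eventually (\<lambda>k. measure (nu k) (cyl G A J y) - measure \<mu> (cyl G A J y) \<le> inverse (real (Suc k))) sequentially"
        by (rule eventually_sequentiallyI[of K]) (use bound in \<open>fastforce simp: abs_less_iff\<close>)
      show "(\<lambda>k. - inverse (real (Suc k))) \<longlonglongrightarrow> 0" using tendsto_minus[OF LIMSEQ_inverse_real_of_nat] by simp
      show "(\<lambda>k. inverse (real (Suc k))) \<longlonglongrightarrow> 0" by (rule LIMSEQ_inverse_real_of_nat)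
    qed
    then show ?thesis by (rule LIM_zero_cancel)
  qed
  have pc: "percons2 G A (nu k) (V' k) (\<sigma>' k)" for k
    by (rule percons2.intro[OF percons.intro[OF G cG fA nuper] percons2_axioms.intro[OF finV bijV]])
  define V where "V = (\<lambda>k. Vc G A (nu k) (V' k))"
  define \<sigma> where "\<sigma> = (\<lambda>k. sc G A (nu k) (\<sigma>' k))"
  define M where "M = (\<lambda>k. Mc G A (nu k) (V' k))"
  have saV: "sofic_approx G V \<sigma>"
    unfolding sofic_approx_def
  proof (intro conjI allI ballI impI)
    fix n
    show "finite (V n)" unfolding V_def by (rule percons2.V_fin[OF pc])
    fix g assume g: "g \<in> carrier G"
    show "bij_betw (\<sigma> n g) (V n) (V n)" unfolding V_def \<sigma>_def by (rule percons2.sc_bij[OF pc g])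
  next
    fix g h assume g: "g \<in> carrier G" and h: "h \<in> carrier G"
    have "(\<lambda>n. real (card {v \<in> V n. \<sigma> n g (\<sigma> n h v) = \<sigma> n (g \<otimes>\<^bsub>G\<^esub> h) v}) / real (card (V n)))
        = (\<lambda>n. real (card {v \<in> V' n. \<sigma>' n g (\<sigma>' n h v) = \<sigma>' n (g \<otimes>\<^bsub>G\<^esub> h) v}) / real (card (V' n)))"
      unfolding V_def \<sigma>_def using percons2.ratio_comp[OF pc g h] by simp
    then show "(\<lambda>n. real (card {v \<in> V n. \<sigma> n g (\<sigma> n h v) = \<sigma> n (g \<otimes>\<^bsub>G\<^esub> h) v}) / real (card (V n))) \<longlonglongrightarrow> 1"
      using compV[OF g h] by simp
  next
    fix g assume g: "g \<in> carrier G" and g1: "g \<noteq> \<one>\<^bsub>G\<^esub>"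
    show "(\<lambda>n. real (card {v \<in> V n. \<sigma> n g v \<noteq> v}) / real (card (V n))) \<longlonglongrightarrow> 1"
    proof (rule tendsto_sandwich[OF _ _ freeV[OF g g1] tendsto_const])
      show "eventually (\<lambda>n. real (card {v \<in> V' n. \<sigma>' n g v \<noteq> v}) / real (card (V' n)) \<le>
          real (card {v \<in> V n. \<sigma> n g v \<noteq> v}) / real (card (V n))) sequentially"
        unfolding V_def \<sigma>_def using percons2.ratio_free(1)[OF pc g] by simp
      show "eventually (\<lambda>n. real (card {v \<in> V n. \<sigma> n g v \<noteq> v}) / real (card (V n)) \<le> 1) sequentially"
        unfolding V_def \<sigma>_def using percons2.ratio_free(2)[OF pc g] by simp
    qed
  qed
  have Mprob: "\<forall>n. prob_space (M n) \<and> sets (M n) = sets (PiM (V n) (\<lambda>_. count_space A))"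
    unfolding M_def V_def using percons2.Mc_prob[OF pc] by simp
  have evU: "eventually (\<lambda>k. nu k \<in> U) sequentially" if U: "wstar_nbhd G A \<mu> U" for U
    by (rule wstar_conv[OF mp ms nu(2) fA Ane cG conv U])
  have evV: "eventually (\<lambda>k. V' k \<noteq> {}) sequentially"
  proof -
    have "eventually (\<lambda>n. 0 < real (card {v \<in> V' n. \<sigma>' n \<one>\<^bsub>G\<^esub> (\<sigma>' n \<one>\<^bsub>G\<^esub> v) = \<sigma>' n (\<one>\<^bsub>G\<^esub> \<otimes>\<^bsub>G\<^esub> \<one>\<^bsub>G\<^esub>) v}) / real (card (V' n))) sequentially"
      by (rule order_tendstoD(1)[OF compV[OF one_c one_c]]) simp
    then show ?thesis by (rule eventually_mono) auto
  qed
  have sm: "sofic_model G A V \<sigma> M \<mu>"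
    unfolding sofic_model_def
  proof (intro conjI saV Mprob allI impI)
    fix U assume U: "wstar_nbhd G A \<mu> U"
    show "(\<lambda>n. real (card {v \<in> V n. distr (M n) (shift_space G A) (Pi_at G (\<sigma> n) v) \<in> U}) / real (card (V n))) \<longlonglongrightarrow> 1"
    proof (rule tendsto_eventually)
      show "eventually (\<lambda>n. real (card {v \<in> V n. distr (M n) (shift_space G A) (Pi_at G (\<sigma> n) v) \<in> U}) / real (card (V n)) = 1) sequentially"
        using evU[OF U] evV
      proof (rule eventually_elim2)
        fix k assume k: "nu k \<in> U" "V' k \<noteq> {}"
        have "{v \<in> V k. distr (M k) (shift_space G A) (Pi_at G (\<sigma> k) v) \<in> U} = V k"
          unfolding V_def M_def \<sigma>_def using percons2.local_law[OF pc] k(1) by auto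
        moreover have "card (V k) > 0"
          unfolding V_def using percons2.V_card[OF pc] percons.m_pos[OF percons.intro[OF G cG fA nuper]]
            k(2) finV[of k] by (simp add: card_gt_0_iff)
        ultimately show "real (card {v \<in> V k. distr (M k) (shift_space G A) (Pi_at G (\<sigma> k) v) \<in> U}) / real (card (V k)) = 1"
          by simp
      qed
    qed
  qed
  have "S \<subseteq> ergodic_meas G A \<longrightarrow> ergodic_sofic_model G A V \<sigma> M \<mu>"
  proof
    assume SE: "S \<subseteq> ergodic_meas G A"
    have pce: "percons2e G A (nu k) (V' k) (\<sigma>' k)" for k
      by (rule percons2e.intro[OF pc percons_erg.intro[OF percons.intro[OF G cG fA nuper] percons_erg_axioms.intro]])
        (use nu(1) SE in blast)
    show "ergodic_sofic_model G A V \<sigma> M \<mu>"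
      unfolding ergodic_sofic_model_def
    proof (intro conjI sm allI impI)
      fix U assume U: "wstar_nbhd G A \<mu> U"
      show "(\<lambda>n. measure (M n) {\<rho> \<in> space (M n). empirical G A (V n) (\<sigma> n) \<rho> \<in> U}) \<longlonglongrightarrow> 1"
      proof (rule tendsto_eventually)
        show "eventually (\<lambda>n. measure (M n) {\<rho> \<in> space (M n). empirical G A (V n) (\<sigma> n) \<rho> \<in> U} = 1) sequentially"
          using evU[OF U] evV
        proof (rule eventually_elim2)
          fix k assume k: "nu k \<in> U" "V' k \<noteq> {}"
          show "measure (M k) {\<rho> \<in> space (M k). empirical G A (V k) (\<sigma> k) \<rho> \<in> U} = 1"
            unfolding M_def V_def \<sigma>_def by (rule percons2e.emp_measure[OF pce k(2) k(1)])
        qed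
      qed
    qed
  qed
  then show ?thesis using sm unfolding has_sofic_model_def has_ergodic_sofic_model_def by blast
qed


theorem mainTheorem9:
  fixes G :: "'g monoid" and Q :: "'q monoid" and A :: "'a set" and \<pi> :: "'g \<Rightarrow> 'q"
  assumes "group G" and "group Q" and "fin_gen G" and "sofic G" and "finite A"
    and "\<pi> \<in> hom G Q" and "\<pi> ` carrier G = carrier Q"
  shows
    "(PA Q \<longrightarrow>
        Phi_push G A \<pi> ` InvProb Q A \<subseteq> wstar_closure G A (periodic_meas G A) \<and>
        (\<forall>\<mu> \<in> Phi_push G A \<pi> ` InvProb Q A. has_sofic_model G A \<mu>)) \<and>
     (EPA Q \<longrightarrow>
        Phi_push G A \<pi> ` InvProb Q A
          \<subseteq> wstar_closure G A (periodic_meas G A \<inter> ergodic_meas G A) \<and>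
        (\<forall>\<mu> \<in> Phi_push G A \<pi> ` InvProb Q A. has_ergodic_sofic_model G A \<mu>)) \<and>
     (kernel G Q \<pi> = residual G \<longrightarrow>
        (PA Q \<longrightarrow> Phi_push G A \<pi> ` InvProb Q A = wstar_closure G A (periodic_meas G A)) \<and>
        (EPA Q \<longrightarrow> Phi_push G A \<pi> ` InvProb Q A
                     = wstar_closure G A (periodic_meas G A \<inter> ergodic_meas G A)))"
proof -
  note G = assms(1) and Q = assms(2) and fg = assms(3) and sof = assms(4) and fA = assms(5)
    and hom = assms(6) and surj = assms(7)
  have cG: "countable (carrier G)" by (rule countable_carrier[OF G fg])
  have cQ: "countable (carrier Q)" using cG surj[symmetric] by (metis countable_image)
  have oneQ: "\<one>\<^bsub>Q\<^esub> \<in> carrier Q" using Q by (simp add: group.is_monoid monoid.one_closed)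
  have oneG: "\<one>\<^bsub>G\<^esub> \<in> carrier G" using G by (simp add: group.is_monoid monoid.one_closed)
  have cl_sub: "wstar_closure G A T \<subseteq> wstar_closure G A T'" if "T \<subseteq> T'" for T T'
    by (rule closure_mono[OF that])
  show ?thesis
  proof (cases "A = {}")
    case True
    have e1: "InvProb Q A = {}"
    proof (rule ccontr)
      assume "InvProb Q A \<noteq> {}"
      then obtain \<mu> where "\<mu> \<in> InvProb Q A" by blast
      then have "prob_space \<mu>" "sets \<mu> = sets (shift_space Q A)" by (auto simp: InvProb_def Prob_meas_def)
      then show False using prob_space.not_empty space_eq_shift oneQ True by (metis PiE_eq_empty_iff)
    qed
    have e2: "wstar_closure G A T = {}" for T
    proof (rule ccontr)
      assume "wstar_closure G A T \<noteq> {}"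
      then obtain \<mu> where "\<mu> \<in> wstar_closure G A T" by blast
      then have "prob_space \<mu>" "sets \<mu> = sets (shift_space G A)" by (auto simp: wstar_closure_def Prob_meas_def)
      then show False using prob_space.not_empty space_eq_shift oneG True by (metis PiE_eq_empty_iff)
    qed
    show ?thesis by (simp add: e1 e2)
  next
    case False
    define e where "e = to_nat_on A"
    define A' where "A' = e ` A"
    define d2 where "d2 = from_nat_into A"
    have cA: "countable A" using fA by (rule countable_finite)
    have fA': "finite A'" using fA by (simp add: A'_def)
    have cA': "countable A'" using fA' by (rule countable_finite)
    have eA: "e \<in> A \<rightarrow> A'" by (auto simp: A'_def)
    have dA: "d2 \<in> A' \<rightarrow> A" using from_nat_into[OF False] by (auto simp: d2_def)
    have de: "\<And>a. a \<in> A \<Longrightarrow> d2 (e a) = a" unfolding d2_def e_def by (rule from_nat_into_to_nat_on[OF cA])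
    have idhom: "(\<lambda>x. x) \<in> hom Q Q" by (simp add: hom_def)
    interpret t1: transfer Q Q "\<lambda>x. x" e A A' by (rule transfer.intro[OF Q Q idhom eA])
    interpret t2: transfer G Q \<pi> d2 A' A by (rule transfer.intro[OF G Q hom dA])
    have key: "Phi_push G A \<pi> \<mu>0 = Tpush G A \<pi> d2 (Tpush Q A' (\<lambda>x. x) e \<mu>0)"
      "Tpush Q A' (\<lambda>x. x) e \<mu>0 \<in> InvProb Q A'" if m0: "\<mu>0 \<in> InvProb Q A" for \<mu>0
    proof -
      have "\<mu>0 \<in> Prob_meas Q A" using m0 by (simp add: InvProb_def)
      then show "Phi_push G A \<pi> \<mu>0 = Tpush G A \<pi> d2 (Tpush Q A' (\<lambda>x. x) e \<mu>0)"
        by (rule Tpush_comp[OF _ Q G hom eA dA de, symmetric])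
      show "Tpush Q A' (\<lambda>x. x) e \<mu>0 \<in> InvProb Q A'" by (rule t1.Tpush_Inv[OF m0])
    qed
    have perT: "Tpush G A \<pi> d2 ` periodic_meas Q A' \<subseteq> periodic_meas G A"
      using t2.Tpush_periodic[OF cQ cA'] by blast
    have perergT: "Tpush G A \<pi> d2 ` (periodic_meas Q A' \<inter> ergodic_meas Q A') \<subseteq> periodic_meas G A \<inter> ergodic_meas G A"
      using t2.Tpush_periodic[OF cQ cA'] t2.Tpush_ergodic[OF surj] by blast
    have P1: "Phi_push G A \<pi> ` InvProb Q A \<subseteq> wstar_closure G A (periodic_meas G A)" if PA: "PA Q"
    proof
      fix \<mu> assume "\<mu> \<in> Phi_push G A \<pi> ` InvProb Q A"
      then obtain \<mu>0 where m0: "\<mu>0 \<in> InvProb Q A" and mu: "\<mu> = Phi_push G A \<pi> \<mu>0" by blast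
      have "Tpush Q A' (\<lambda>x. x) e \<mu>0 \<in> wstar_closure Q A' (periodic_meas Q A')"
        using PA fA' key(2)[OF m0] unfolding PA_def by blast
      then have "Tpush G A \<pi> d2 (Tpush Q A' (\<lambda>x. x) e \<mu>0) \<in> wstar_closure G A (Tpush G A \<pi> d2 ` periodic_meas Q A')"
        by (rule t2.Tpush_closure[OF cG fA])
      then show "\<mu> \<in> wstar_closure G A (periodic_meas G A)"
        using cl_sub[OF perT] key(1)[OF m0] mu by auto
    qed
    have P2: "Phi_push G A \<pi> ` InvProb Q A \<subseteq> wstar_closure G A (periodic_meas G A \<inter> ergodic_meas G A)" if EPA: "EPA Q"
    proof
      fix \<mu> assume "\<mu> \<in> Phi_push G A \<pi> ` InvProb Q A"
      then obtain \<mu>0 where m0: "\<mu>0 \<in> InvProb Q A" and mu: "\<mu> = Phi_push G A \<pi> \<mu>0" by blast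
      have "Tpush Q A' (\<lambda>x. x) e \<mu>0 \<in> wstar_closure Q A' (periodic_meas Q A' \<inter> ergodic_meas Q A')"
        using EPA fA' key(2)[OF m0] unfolding EPA_def by blast
      then have "Tpush G A \<pi> d2 (Tpush Q A' (\<lambda>x. x) e \<mu>0) \<in> wstar_closure G A (Tpush G A \<pi> d2 ` (periodic_meas Q A' \<inter> ergodic_meas Q A'))"
        by (rule t2.Tpush_closure[OF cG fA])
      then show "\<mu> \<in> wstar_closure G A (periodic_meas G A \<inter> ergodic_meas G A)"
        using cl_sub[OF perergT] key(1)[OF m0] mu by auto
    qed
    have S1: "has_sofic_model G A \<mu>" if "\<mu> \<in> wstar_closure G A (periodic_meas G A)" for \<mu>
      using sofic_from_closure[OF G cG fA sof that order_refl] by blast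
    have S2: "has_ergodic_sofic_model G A \<mu>" if "\<mu> \<in> wstar_closure G A (periodic_meas G A \<inter> ergodic_meas G A)" for \<mu>
      using sofic_from_closure[OF G cG fA sof that] by blast
    have R: "wstar_closure G A (periodic_meas G A) \<subseteq> Phi_push G A \<pi> ` InvProb Q A" if ker: "kernel G Q \<pi> = residual G"
      using closure_periodic_image[OF G Q hom surj ker cG fA] by blast
    have R2: "wstar_closure G A (periodic_meas G A \<inter> ergodic_meas G A) \<subseteq> wstar_closure G A (periodic_meas G A)"
      by (rule cl_sub) blast
    show ?thesis
    proof (intro conjI impI)
      assume "PA Q" then show "Phi_push G A \<pi> ` InvProb Q A \<subseteq> wstar_closure G A (periodic_meas G A)" by (rule P1)
    next
      assume "PA Q" then show "\<forall>\<mu>\<in>Phi_push G A \<pi> ` InvProb Q A. has_sofic_model G A \<mu>" using P1 S1 by blast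
    next
      assume "EPA Q" then show "Phi_push G A \<pi> ` InvProb Q A \<subseteq> wstar_closure G A (periodic_meas G A \<inter> ergodic_meas G A)" by (rule P2)
    next
      assume "EPA Q" then show "\<forall>\<mu>\<in>Phi_push G A \<pi> ` InvProb Q A. has_ergodic_sofic_model G A \<mu>" using P2 S2 by blast
    next
      assume "kernel G Q \<pi> = residual G" "PA Q"
      then show "Phi_push G A \<pi> ` InvProb Q A = wstar_closure G A (periodic_meas G A)" using P1 R by blast
    next
      assume "kernel G Q \<pi> = residual G" "EPA Q"
      then show "Phi_push G A \<pi> ` InvProb Q A = wstar_closure G A (periodic_meas G A \<inter> ergodic_meas G A)"
        using P2 R R2 by blast
    qed
  qed
qed


end
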